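(* Let $\mathcal H$ be an infinite-dimensional complex Hilbert space and $\mathcal{SA}(\mathcal H)$ the set of all positive self-adjoint operators on $\mathcal H$. For $A,B\in\mathcal{SA}(\mathcal H)$ write $A=A_{s_1}$, $B=A_{s_2}$ with $s_1,s_2$ the closed positive forms associated with $A,B$, and define $A\,\dot\oplus\, B$ to be defined if and only if $s_1\oplus s_2$ is defined, in which case $A\,\dot\oplus\,B=A_{s_1+s_2}$ (the positive self-adjoint operator associated with the closed form $s_1+s_2$). Then $(\mathcal{SA}(\mathcal H);\dot\oplus,O)$ is a generalized effect algebra.
   Context: Bilinear forms $t$ on $\mathcal H$ are sesquilinear maps $D(t)\times D(t)\to\mathbb C$ on a dense linear subspace $D(t)$ (linear in the first argument); $t$ is positive if $t(x,x)\ge0$, bounded if $\sup\{t(x,x)\mid x\in D(t),\|x\|=1\}<\infty$. Sum $t+s$ has domain $D(t)\cap D(s)$. For positive forms, $t\oplus s$ is defined iff $t$ or $s$ is bounded or $D(t)=D(s)$, and then equals $t+s$ (bounded forms in the relevant class have domain $\mathcal H$). A positive form $t$ is closed if $D(t)$ is a Hilbert space under $(x,y)_t=t(x,y)+(1+m_t)(x,y)$, $m_t=\inf\{t(x,x)\mid x\in D(t),\|x\|=1\}$. Standard fact used for the definitions: for every closed positive densely defined form $t$ there is a unique positive self-adjoint operator $A_t$ with $D(A_t)\subseteq D(t)$ and $t(x,y)=(A_tx,y)$ for $x,y\in D(A_t)$ (the operator associated with $t$), and $t\mapsto A_t$ is a bijection between closed positive densely defined forms and positive self-adjoint operators. $O$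 is the zero operator. A generalized effect algebra is a structure $(E;\oplus,0)$ with a partial operation that is commutative and associative (when one side is defined), has $x\oplus0=x$, is cancellative, and satisfies $x\oplus y=0\Rightarrow x=y=0$. *)

theory Defs
  imports Complex_Main
begin

text \<open>A complex Hilbert space is modelled by a type 'h with addition, together with
  a complex scalar multiplication sc and an inner product ip (linear in the first
  argument), subject to the axioms below.\<close>

definition nrm :: "('h \<Rightarrow> 'h \<Rightarrow> complex) \<Rightarrow> 'h \<Rightarrow> real" where
  "nrm ip x = sqrt (Re (ip x x))"

definition complex_hilbert_space ::
  "(complex \<Rightarrow> 'h::ab_group_add \<Rightarrow> 'h) \<Rightarrow> ('h \<Rightarrow> 'h \<Rightarrow> complex) \<Rightarrow> bool" where
  "complex_hilbert_space sc ip \<longleftrightarrow>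
     (\<forall>a x y. sc a (x + y) = sc a x + sc a y) \<and>
     (\<forall>a b x. sc (a + b) x = sc a x + sc b x) \<and>
     (\<forall>a b x. sc (a * b) x = sc a (sc b x)) \<and>
     (\<forall>x. sc 1 x = x) \<and>
     (\<forall>x y z. ip (x + y) z = ip x z + ip y z) \<and>
     (\<forall>a x y. ip (sc a x) y = a * ip x y) \<and>
     (\<forall>x y. ip y x = cnj (ip x y)) \<and>
     (\<forall>x. Re (ip x x) \<ge> 0) \<and>
     (\<forall>x. ip x x = 0 \<longrightarrow> x = 0) \<and>
     (\<forall>X :: nat \<Rightarrow> 'h.
        (\<forall>e>0. \<exists>N. \<forall>m\<ge>N. \<forall>n\<ge>N. nrm ip (X m - X n) < e) \<longrightarrow>
        (\<exists>l. \<forall>e>0. \<exists>N. \<forall>n\<ge>N. nrm ip (X n - l) < e))"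

definition infinite_dimensional ::
  "(complex \<Rightarrow> 'h::ab_group_add \<Rightarrow> 'h) \<Rightarrow> bool" where
  "infinite_dimensional sc \<longleftrightarrow>
     (\<forall>F. finite F \<longrightarrow> (\<exists>x. \<forall>c. x \<noteq> (\<Sum>v\<in>F. sc (c v) v)))"

definition dense_subspace ::
  "(complex \<Rightarrow> 'h::ab_group_add \<Rightarrow> 'h) \<Rightarrow> ('h \<Rightarrow> 'h \<Rightarrow> complex) \<Rightarrow> 'h set \<Rightarrow> bool" where
  "dense_subspace sc ip D \<longleftrightarrow>
     0 \<in> D \<and> (\<forall>x\<in>D. \<forall>y\<in>D. x + y \<in> D) \<and> (\<forall>a. \<forall>x\<in>D. sc a x \<in> D) \<and>
     (\<forall>x. \<forall>e>0. \<exists>y\<in>D. nrm ip (x - y) < e)"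

text \<open>Forms: a pair (domain, sesquilinear map), normalised to be 0 off the domain.\<close>
type_synonym 'h form = "'h set \<times> ('h \<Rightarrow> 'h \<Rightarrow> complex)"

definition dd_form ::
  "(complex \<Rightarrow> 'h::ab_group_add \<Rightarrow> 'h) \<Rightarrow> ('h \<Rightarrow> 'h \<Rightarrow> complex) \<Rightarrow> 'h form \<Rightarrow> bool" where
  "dd_form sc ip T \<longleftrightarrow> (case T of (D, t) \<Rightarrow>
     dense_subspace sc ip D \<and>
     (\<forall>x\<in>D. \<forall>y\<in>D. \<forall>z\<in>D. t (x + y) z = t x z + t y z) \<and>
     (\<forall>a. \<forall>x\<in>D. \<forall>y\<in>D. t (sc a x) y = a * t x y) \<and>
     (\<forall>x\<in>D. \<forall>y\<in>D. \<forall>z\<in>D. t x (y + z) = t x y + t x z) \<and>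
     (\<forall>a. \<forall>x\<in>D. \<forall>y\<in>D. t x (sc a y) = cnj a * t x y) \<and>
     (\<forall>x y. x \<notin> D \<or> y \<notin> D \<longrightarrow> t x y = 0))"

definition positive_form :: "'h form \<Rightarrow> bool" where
  "positive_form T \<longleftrightarrow> (\<forall>x\<in>fst T. Im (snd T x x) = 0 \<and> Re (snd T x x) \<ge> 0)"

definition bounded_form :: "('h \<Rightarrow> 'h \<Rightarrow> complex) \<Rightarrow> 'h form \<Rightarrow> bool" where
  "bounded_form ip T \<longleftrightarrow> (\<exists>C. \<forall>x\<in>fst T. nrm ip x = 1 \<longrightarrow> Re (snd T x x) \<le> C)"

definition form_lb :: "('h \<Rightarrow> 'h \<Rightarrow> complex) \<Rightarrow> 'h form \<Rightarrow> real" where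
  "form_lb ip T = Inf {Re (snd T x x) | x. x \<in> fst T \<and> nrm ip x = 1}"

text \<open>Norm of the form inner product (x,y)_t = t(x,y) + (1 + m_t)(x,y).\<close>
definition form_norm :: "('h \<Rightarrow> 'h \<Rightarrow> complex) \<Rightarrow> 'h form \<Rightarrow> 'h \<Rightarrow> real" where
  "form_norm ip T x = sqrt (Re (snd T x x) + (1 + form_lb ip T) * Re (ip x x))"

definition closed_pos_form ::
  "(complex \<Rightarrow> 'h::ab_group_add \<Rightarrow> 'h) \<Rightarrow> ('h \<Rightarrow> 'h \<Rightarrow> complex) \<Rightarrow> 'h form \<Rightarrow> bool" where
  "closed_pos_form sc ip T \<longleftrightarrow> dd_form sc ip T \<and> positive_form T \<and>
     (\<forall>X :: nat \<Rightarrow> 'h. (\<forall>n. X n \<in> fst T) \<longrightarrow>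
        (\<forall>e>0. \<exists>N. \<forall>m\<ge>N. \<forall>n\<ge>N. form_norm ip T (X m - X n) < e) \<longrightarrow>
        (\<exists>l\<in>fst T. \<forall>e>0. \<exists>N. \<forall>n\<ge>N. form_norm ip T (X n - l) < e))"

definition form_sum :: "'h form \<Rightarrow> 'h form \<Rightarrow> 'h form" where
  "form_sum T S = (fst T \<inter> fst S,
     \<lambda>x y. if x \<in> fst T \<inter> fst S \<and> y \<in> fst T \<inter> fst S then snd T x y + snd S x y else 0)"

definition form_oplus_defined :: "('h \<Rightarrow> 'h \<Rightarrow> complex) \<Rightarrow> 'h form \<Rightarrow> 'h form \<Rightarrow> bool" where
  "form_oplus_defined ip T S \<longleftrightarrow> bounded_form ip T \<or> bounded_form ip S \<or> fst T = fst S"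

text \<open>Operators: a pair (domain, map), normalised to be 0 off the domain.\<close>
type_synonym 'h op = "'h set \<times> ('h \<Rightarrow> 'h)"

definition pos_sa_op ::
  "(complex \<Rightarrow> 'h::ab_group_add \<Rightarrow> 'h) \<Rightarrow> ('h \<Rightarrow> 'h \<Rightarrow> complex) \<Rightarrow> 'h op \<Rightarrow> bool" where
  "pos_sa_op sc ip A \<longleftrightarrow> (case A of (D, f) \<Rightarrow>
     dense_subspace sc ip D \<and>
     (\<forall>x\<in>D. \<forall>y\<in>D. f (x + y) = f x + f y) \<and>
     (\<forall>a. \<forall>x\<in>D. f (sc a x) = sc a (f x)) \<and>
     (\<forall>x. x \<notin> D \<longrightarrow> f x = 0) \<and>
     \<comment> \<open>self-adjoint: D(A*) = D(A) and A* = A\<close>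
     {y. \<exists>z. \<forall>x\<in>D. ip (f x) y = ip x z} = D \<and>
     (\<forall>x\<in>D. \<forall>y\<in>D. ip (f x) y = ip x (f y)) \<and>
     \<comment> \<open>positive\<close>
     (\<forall>x\<in>D. Re (ip (f x) x) \<ge> 0))"

definition zero_op :: "'h::ab_group_add op" where
  "zero_op = (UNIV, \<lambda>_. 0)"

text \<open>The operator associated with a closed positive form (first representation theorem).\<close>
definition assoc_op ::
  "(complex \<Rightarrow> 'h::ab_group_add \<Rightarrow> 'h) \<Rightarrow> ('h \<Rightarrow> 'h \<Rightarrow> complex) \<Rightarrow> 'h form \<Rightarrow> 'h op" where
  "assoc_op sc ip T = (THE A. pos_sa_op sc ip A \<and> fst A \<subseteq> fst T \<and>
      (\<forall>x\<in>fst A. \<forall>y\<in>fst T. snd T x y = ip (snd A x) y))"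

definition form_of ::
  "(complex \<Rightarrow> 'h::ab_group_add \<Rightarrow> 'h) \<Rightarrow> ('h \<Rightarrow> 'h \<Rightarrow> complex) \<Rightarrow> 'h op \<Rightarrow> 'h form" where
  "form_of sc ip A = (THE T. closed_pos_form sc ip T \<and> assoc_op sc ip T = A)"

definition SA :: "(complex \<Rightarrow> 'h::ab_group_add \<Rightarrow> 'h) \<Rightarrow> ('h \<Rightarrow> 'h \<Rightarrow> complex) \<Rightarrow> 'h op set" where
  "SA sc ip = {A. pos_sa_op sc ip A}"

definition sa_oplus ::
  "(complex \<Rightarrow> 'h::ab_group_add \<Rightarrow> 'h) \<Rightarrow> ('h \<Rightarrow> 'h \<Rightarrow> complex) \<Rightarrow> 'h op \<Rightarrow> 'h op \<Rightarrow> 'h op option" where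
  "sa_oplus sc ip A B =
     (if form_oplus_defined ip (form_of sc ip A) (form_of sc ip B)
      then Some (assoc_op sc ip (form_sum (form_of sc ip A) (form_of sc ip B)))
      else None)"

text \<open>Generalized effect algebra on a carrier E with partial operation (as option).\<close>
definition gen_effect_algebra :: "'a set \<Rightarrow> ('a \<Rightarrow> 'a \<Rightarrow> 'a option) \<Rightarrow> 'a \<Rightarrow> bool" where
  "gen_effect_algebra E opl z \<longleftrightarrow>
     z \<in> E \<and>
     (\<forall>x\<in>E. \<forall>y\<in>E. \<forall>w. opl x y = Some w \<longrightarrow> w \<in> E) \<and>
     (\<forall>x\<in>E. \<forall>y\<in>E. opl x y = opl y x) \<and>
     (\<forall>x\<in>E. \<forall>y\<in>E. \<forall>u\<in>E.
        Option.bind (opl x y) (\<lambda>v. opl v u) = Option.bind (opl y u) (\<lambda>v. opl x v)) \<and>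
     (\<forall>x\<in>E. opl x z = Some x) \<and>
     (\<forall>x\<in>E. \<forall>y\<in>E. \<forall>w\<in>E. opl x y \<noteq> None \<and> opl x y = opl x w \<longrightarrow> y = w) \<and>
     (\<forall>x\<in>E. \<forall>y\<in>E. opl x y = Some z \<longrightarrow> x = z \<and> y = z)"

end

theory Submission
  imports Defs
begin

lemma null_cmp:
  fixes f :: "nat \<Rightarrow> 'a::real_normed_vector"
  assumes "\<And>n. norm (f n) \<le> g n" "g \<longlonglongrightarrow> 0"
  shows "f \<longlonglongrightarrow> 0"
proof -
  have "(\<lambda>n. norm (f n)) \<longlonglongrightarrow> 0"
    by (rule real_tendsto_sandwich[of "\<lambda>n. 0" _ _ g]) (use assms in auto)
  then show ?thesis by (rule tendsto_norm_zero_cancel)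
qed

locale hsp =
  fixes sc :: "complex \<Rightarrow> 'h::ab_group_add \<Rightarrow> 'h" and ip :: "'h \<Rightarrow> 'h \<Rightarrow> complex"
  assumes H: "complex_hilbert_space sc ip"
    and nontriv: "\<exists>x::'h. x \<noteq> 0"
begin

lemma sc_add: "sc a (x + y) = sc a x + sc a y" using H[unfolded complex_hilbert_space_def, THEN conjunct1] by blast
lemma sc_add_left: "sc (a + b) x = sc a x + sc b x" using H[unfolded complex_hilbert_space_def, THEN conjunct2, THEN conjunct1] by blast
lemma sc_mult: "sc (a * b) x = sc a (sc b x)" using H[unfolded complex_hilbert_space_def, THEN conjunct2, THEN conjunct2, THEN conjunct1] by blast
lemma sc_one[simp]: "sc 1 x = x" using H[unfolded complex_hilbert_space_def, THEN conjunct2, THEN conjunct2, THEN conjunct2, THEN conjunct1] by blast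
lemma ip_add: "ip (x + y) z = ip x z + ip y z" using H[unfolded complex_hilbert_space_def, THEN conjunct2, THEN conjunct2, THEN conjunct2, THEN conjunct2, THEN conjunct1] by blast
lemma ip_sc: "ip (sc a x) y = a * ip x y" using H[unfolded complex_hilbert_space_def, THEN conjunct2, THEN conjunct2, THEN conjunct2, THEN conjunct2, THEN conjunct2, THEN conjunct1] by blast
lemma ip_cnj: "ip y x = cnj (ip x y)" using H[unfolded complex_hilbert_space_def, THEN conjunct2, THEN conjunct2, THEN conjunct2, THEN conjunct2, THEN conjunct2, THEN conjunct2, THEN conjunct1] by blast
lemma ip_pos: "Re (ip x x) \<ge> 0" using H[unfolded complex_hilbert_space_def, THEN conjunct2, THEN conjunct2, THEN conjunct2, THEN conjunct2, THEN conjunct2, THEN conjunct2, THEN conjunct2, THEN conjunct1] by blast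
lemma ip_def0: "ip x x = 0 \<Longrightarrow> x = 0" using H[unfolded complex_hilbert_space_def, THEN conjunct2, THEN conjunct2, THEN conjunct2, THEN conjunct2, THEN conjunct2, THEN conjunct2, THEN conjunct2, THEN conjunct2, THEN conjunct1] by blast
lemma H_complete: fixes X :: "nat \<Rightarrow> 'h" shows "(\<forall>e>0. \<exists>N. \<forall>m\<ge>N. \<forall>n\<ge>N. nrm ip (X m - X n) < e) \<longrightarrow>
        (\<exists>l. \<forall>e>0. \<exists>N. \<forall>n\<ge>N. nrm ip (X n - l) < e)"
  using H[unfolded complex_hilbert_space_def, THEN conjunct2, THEN conjunct2, THEN conjunct2, THEN conjunct2, THEN conjunct2, THEN conjunct2, THEN conjunct2, THEN conjunct2, THEN conjunct2, THEN spec[where x=X]] .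

lemma sc_zero_left[simp]: "sc 0 x = 0"
  using sc_add_left[of 0 0 x] by simp
lemma sc_zero[simp]: "sc a 0 = 0"
  using sc_add[of a 0 0] by simp
lemma sc_minus: "sc a (- x) = - sc a x"
proof -
  have "sc a x + sc a (- x) = 0" using sc_add[of a x "-x"] by simp
  then show ?thesis by (metis minus_unique)
qed
lemma sc_minus_left: "sc (- a) x = - sc a x"
proof -
  have "sc a x + sc (- a) x = 0" using sc_add_left[of a "-a" x] by simp
  then show ?thesis by (metis minus_unique)
qed
lemma sc_diff: "sc a (x - y) = sc a x - sc a y"
  by (simp only: diff_conv_add_uminus sc_add sc_minus)
lemma sc_diff_left: "sc (a - b) x = sc a x - sc b x"
  by (simp only: diff_conv_add_uminus sc_add_left sc_minus_left)
lemma sc_m1: "sc (-1) x = - x" by (simp add: sc_minus_left)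

end

locale ips = hsp +
  fixes V :: "'h::ab_group_add set" and q :: "'h \<Rightarrow> 'h \<Rightarrow> complex"
  assumes V0: "0 \<in> V" and Vadd: "x \<in> V \<Longrightarrow> y \<in> V \<Longrightarrow> x + y \<in> V"
    and Vsc: "x \<in> V \<Longrightarrow> sc a x \<in> V"
    and q_add: "x \<in> V \<Longrightarrow> y \<in> V \<Longrightarrow> z \<in> V \<Longrightarrow> q (x + y) z = q x z + q y z"
    and q_sc: "x \<in> V \<Longrightarrow> y \<in> V \<Longrightarrow> q (sc a x) y = a * q x y"
    and q_herm: "x \<in> V \<Longrightarrow> y \<in> V \<Longrightarrow> q y x = cnj (q x y)"
    and q_pos: "x \<in> V \<Longrightarrow> 0 \<le> Re (q x x)"
    and q_def: "x \<in> V \<Longrightarrow> q x x = 0 \<Longrightarrow> x = 0"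
begin

lemma Vminus: "x \<in> V \<Longrightarrow> - x \<in> V"
  using Vsc[of x "-1"] by (simp add: sc_m1)
lemma Vdiff: "x \<in> V \<Longrightarrow> y \<in> V \<Longrightarrow> x - y \<in> V"
  unfolding diff_conv_add_uminus by (intro Vadd Vminus)

lemma q_add_right: "x \<in> V \<Longrightarrow> y \<in> V \<Longrightarrow> z \<in> V \<Longrightarrow> q x (y + z) = q x y + q x z"
  by (metis Vadd complex_cnj_add q_add q_herm)
lemma q_sc_right: "x \<in> V \<Longrightarrow> y \<in> V \<Longrightarrow> q x (sc a y) = cnj a * q x y"
  by (metis Vsc complex_cnj_cnj complex_cnj_mult q_herm q_sc)
lemma q_zero_left[simp]: "y \<in> V \<Longrightarrow> q 0 y = 0"
  using q_sc[of 0 y 0] V0 by simp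
lemma q_zero_right[simp]: "x \<in> V \<Longrightarrow> q x 0 = 0"
  using q_sc_right[of x 0 0] V0 by simp
lemma q_minus_left: "x \<in> V \<Longrightarrow> y \<in> V \<Longrightarrow> q (- x) y = - q x y"
  using q_sc[of x y "-1"] by (simp add: sc_m1)
lemma q_minus_right: "x \<in> V \<Longrightarrow> y \<in> V \<Longrightarrow> q x (- y) = - q x y"
  using q_sc_right[of x y "-1"] by (simp add: sc_m1)
lemma q_diff_left: "x \<in> V \<Longrightarrow> y \<in> V \<Longrightarrow> z \<in> V \<Longrightarrow> q (x - y) z = q x z - q y z"
  using q_add[of x "-y" z] q_minus_left[of y z] Vminus[of y] by simp
lemma q_diff_right: "x \<in> V \<Longrightarrow> y \<in> V \<Longrightarrow> z \<in> V \<Longrightarrow> q x (y - z) = q x y - q x z"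
  using q_add_right[of x y "-z"] q_minus_right[of x z] Vminus[of z] by simp

definition Q :: "'h \<Rightarrow> real" where "Q x = Re (q x x)"

lemma Q_nonneg: "x \<in> V \<Longrightarrow> 0 \<le> Q x" by (simp add: Q_def q_pos)
lemma q_real: "x \<in> V \<Longrightarrow> q x x = complex_of_real (Q x)"
proof -
  assume "x \<in> V"
  then have "q x x = cnj (q x x)" using q_herm by blast
  then have "Im (q x x) = 0" by (metis cnj.sel(2) equal_neg_zero)
  then show ?thesis unfolding Q_def by (simp add: complex_eq_iff)
qed
lemma Q_eq0: "x \<in> V \<Longrightarrow> Q x = 0 \<longleftrightarrow> x = 0"
  using q_real q_def by (metis V0 Q_def q_zero_left of_real_0 zero_complex.sel(1))
lemma Q_zero[simp]: "Q 0 = 0" using Q_eq0 V0 by blast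

lemma Q_add_sc: assumes "x \<in> V" "y \<in> V"
  shows "Q (x + sc m y) = Q x + (cmod m)^2 * Q y + 2 * Re (cnj m * q x y)"
proof -
  have sy: "sc m y \<in> V" using assms Vsc by auto
  have xy: "x + sc m y \<in> V" using assms sy Vadd by blast
  have "q (x + sc m y) (x + sc m y) = q x (x + sc m y) + q (sc m y) (x + sc m y)"
    using q_add[OF assms(1) sy xy] .
  also have "q x (x + sc m y) = q x x + cnj m * q x y"
    using q_add_right[OF assms(1) assms(1) sy] q_sc_right[OF assms] by simp
  also have "q (sc m y) (x + sc m y) = m * (q y x + cnj m * q y y)"
    using q_sc[OF assms(2) xy] q_add_right[OF assms(2) assms(1) sy] q_sc_right[OF assms(2) assms(2)] by simp
  finally have "q (x + sc m y) (x + sc m y) = q x x + cnj m * q x y + m * q y x + m * cnj m * q y y"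
    by (simp add: algebra_simps)
  moreover have "Re (m * q y x) = Re (cnj m * q x y)"
    using q_herm[OF assms] by (metis complex_cnj_cnj complex_cnj_mult cnj.sel(1))
  moreover have "m * cnj m = complex_of_real ((cmod m)^2)"
    by (rule complex_norm_square[symmetric])
  ultimately have "Q (x + sc m y) = Re (q x x) + Re (cnj m * q x y) + Re (cnj m * q x y) + Re (complex_of_real ((cmod m)^2) * q y y)"
    unfolding Q_def by (simp add: mult.assoc)
  also have "Re (complex_of_real ((cmod m)^2) * q y y) = (cmod m)^2 * Q y"
    unfolding Q_def by simp
  finally show ?thesis unfolding Q_def by simp
qed

lemma Q_add: assumes "x \<in> V" "y \<in> V"
  shows "Q (x + y) = Q x + Q y + 2 * Re (q x y)"
  using Q_add_sc[OF assms, of 1] by simp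

lemma Q_sc: assumes "x \<in> V" shows "Q (sc m x) = (cmod m)^2 * Q x"
  using Q_add_sc[OF V0 assms, of m] V0 assms by simp

lemma Q_minus: "x \<in> V \<Longrightarrow> Q (- x) = Q x"
  using Q_sc[of x "-1"] by (simp add: sc_m1)

lemma Q_diff: assumes "x \<in> V" "y \<in> V"
  shows "Q (x - y) = Q x + Q y - 2 * Re (q x y)"
  using Q_add[OF assms(1) Vminus[OF assms(2)]] assms
  by (simp add: Q_minus q_minus_right)

lemma Q_paral: assumes "x \<in> V" "y \<in> V"
  shows "Q (x + y) + Q (x - y) = 2 * Q x + 2 * Q y"
  using Q_add[OF assms] Q_diff[OF assms] by simp

lemma Q_add_le: assumes "x \<in> V" "y \<in> V"
  shows "Q (x + y) \<le> 2 * Q x + 2 * Q y"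
  using Q_paral[OF assms] Q_nonneg[OF Vdiff[OF assms]] by simp

lemma Q_diff_le: assumes "x \<in> V" "y \<in> V"
  shows "Q (x - y) \<le> 2 * Q x + 2 * Q y"
  using Q_add_le[OF assms(1) Vminus[OF assms(2)]] assms by (simp add: Q_minus)

lemma CS2: assumes "x \<in> V" "y \<in> V"
  shows "(cmod (q x y))^2 \<le> Q x * Q y"
proof -
  define c where "c = q x y"
  have key: "0 \<le> Q x + s^2 * (cmod c)^2 * Q y - 2 * s * (cmod c)^2" for s :: real
  proof -
    have "0 \<le> Q (x + sc (- (of_real s * c)) y)" using assms Vadd Vsc Q_nonneg by blast
    also have "\<dots> = Q x + (cmod (of_real s * c))^2 * Q y + 2 * Re (cnj (- (of_real s * c)) * c)"
      using Q_add_sc[OF assms] c_def by simp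
    also have "cnj (- (of_real s * c)) * c = - of_real s * of_real ((cmod c)^2)"
    proof -
      have cc: "complex_of_real ((cmod c)^2) = c * cnj c" by (rule complex_norm_square)
      show ?thesis by (simp only: cc) (simp add: algebra_simps)
    qed
    also have "(cmod (of_real s * c))^2 = s^2 * (cmod c)^2"
      by (simp add: norm_mult power_mult_distrib)
    finally show ?thesis by simp
  qed
  show ?thesis
  proof (cases "Q y = 0")
    case True
    have "(cmod c)^2 = 0"
    proof (rule ccontr)
      assume ne: "(cmod c)^2 \<noteq> 0"
      then have pos: "(cmod c)^2 > 0" by simp
      have "0 \<le> Q x - 2 * ((Q x + 1) / (2 * (cmod c)^2)) * (cmod c)^2"
        using key[of "(Q x + 1) / (2 * (cmod c)^2)"] True by simp
      also have "\<dots> = -1" using ne by (simp add: field_simps)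
      finally show False by simp
    qed
    then show ?thesis using True c_def by simp
  next
    case False
    then have yp: "Q y > 0" using Q_nonneg[OF assms(2)] by simp
    have "0 \<le> Q x + (1 / Q y)^2 * (cmod c)^2 * Q y - 2 * (1 / Q y) * (cmod c)^2"
      using key by blast
    also have "\<dots> = Q x - (cmod c)^2 / Q y" using yp by (simp add: field_simps power2_eq_square)
    finally have "(cmod c)^2 / Q y \<le> Q x" by simp
    then show ?thesis using yp c_def by (simp add: divide_le_eq mult.commute)
  qed
qed

lemma CS: assumes "x \<in> V" "y \<in> V"
  shows "cmod (q x y) \<le> sqrt (Q x) * sqrt (Q y)"
  using CS2[OF assms] by (metis norm_ge_zero real_sqrt_le_mono real_sqrt_mult real_sqrt_pow2_iff power2_eq_square real_sqrt_abs abs_norm_cancel)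

end

lemma LIMSEQ_0_D: "(f::nat\<Rightarrow>real) \<longlonglongrightarrow> 0 \<Longrightarrow> e > 0 \<Longrightarrow> \<exists>N. \<forall>n\<ge>N. \<bar>f n\<bar> < e"
  unfolding LIMSEQ_iff by simp

lemma sandwich0:
  fixes f g :: "nat \<Rightarrow> real"
  assumes "\<And>n. 0 \<le> f n" "\<And>n. f n \<le> g n" "g \<longlonglongrightarrow> 0"
  shows "f \<longlonglongrightarrow> 0"
proof (rule real_tendsto_sandwich[of "\<lambda>n. 0" f sequentially g])
  show "\<forall>\<^sub>F n in sequentially. 0 \<le> f n" using assms(1) by simp
  show "\<forall>\<^sub>F n in sequentially. f n \<le> g n" using assms(2) by simp
qed (use assms(3) in auto)

context ips begin

definition cauchy :: "(nat \<Rightarrow> 'h) \<Rightarrow> bool" where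
  "cauchy X \<longleftrightarrow> (\<forall>n. X n \<in> V) \<and> (\<forall>e>0. \<exists>N. \<forall>m\<ge>N. \<forall>n\<ge>N. Q (X m - X n) < e)"
definition conv :: "(nat \<Rightarrow> 'h) \<Rightarrow> 'h \<Rightarrow> bool" where
  "conv X l \<longleftrightarrow> (\<forall>n. X n \<in> V) \<and> l \<in> V \<and> (\<lambda>n. Q (X n - l)) \<longlonglongrightarrow> 0"

lemma conv_in: "conv X l \<Longrightarrow> X n \<in> V" "conv X l \<Longrightarrow> l \<in> V"
  unfolding conv_def by auto

lemma conv_const: "l \<in> V \<Longrightarrow> conv (\<lambda>n. l) l"
  unfolding conv_def by simp

lemma conv_add: assumes "conv X l" "conv Y m" shows "conv (\<lambda>n. X n + Y n) (l + m)"
proof -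
  have in1: "\<And>n. X n \<in> V" "l \<in> V" "\<And>n. Y n \<in> V" "m \<in> V" using assms unfolding conv_def by auto
  have eq: "(X n + Y n) - (l + m) = (X n - l) + (Y n - m)" for n by simp
  have le: "Q ((X n + Y n) - (l + m)) \<le> 2 * Q (X n - l) + 2 * Q (Y n - m)" for n
    unfolding eq by (rule Q_add_le) (use in1 Vdiff in auto)
  have "(\<lambda>n. 2 * Q (X n - l) + 2 * Q (Y n - m)) \<longlonglongrightarrow> 2 * 0 + 2 * 0"
    using assms unfolding conv_def by (intro tendsto_intros) auto
  then have g: "(\<lambda>n. 2 * Q (X n - l) + 2 * Q (Y n - m)) \<longlonglongrightarrow> 0" by simp
  have "(\<lambda>n. Q ((X n + Y n) - (l + m))) \<longlonglongrightarrow> 0"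
    by (rule sandwich0[OF _ le g]) (use in1 Vdiff Q_nonneg Vadd in auto)
  then show ?thesis using in1 Vadd unfolding conv_def by auto
qed

lemma conv_sc: assumes "conv X l" shows "conv (\<lambda>n. sc a (X n)) (sc a l)"
proof -
  have in1: "\<And>n. X n \<in> V" "l \<in> V" using assms unfolding conv_def by auto
  have eq: "Q (sc a (X n) - sc a l) = (cmod a)^2 * Q (X n - l)" for n
    by (simp add: sc_diff[symmetric] Q_sc Vdiff in1)
  have "(\<lambda>n. (cmod a)^2 * Q (X n - l)) \<longlonglongrightarrow> (cmod a)^2 * 0"
    using assms unfolding conv_def by (intro tendsto_intros) auto
  then show ?thesis using in1 Vsc unfolding conv_def eq by auto
qed

lemma conv_diff: assumes "conv X l" "conv Y m" shows "conv (\<lambda>n. X n - Y n) (l - m)"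
proof -
  have "conv (\<lambda>n. X n + sc (-1) (Y n)) (l + sc (-1) m)"
    by (rule conv_add[OF assms(1) conv_sc[OF assms(2)]])
  then show ?thesis by (simp add: sc_m1)
qed

lemma conv_cauchy: assumes "conv X l" shows "cauchy X"
proof -
  have in1: "\<And>n. X n \<in> V" "l \<in> V" using assms unfolding conv_def by auto
  have lim: "(\<lambda>n. Q (X n - l)) \<longlonglongrightarrow> 0" using assms unfolding conv_def by auto
  have "\<exists>N. \<forall>m\<ge>N. \<forall>n\<ge>N. Q (X m - X n) < e" if e: "e > 0" for e
  proof -
    obtain N where N: "\<And>n. n \<ge> N \<Longrightarrow> \<bar>Q (X n - l)\<bar> < e / 4"
      using LIMSEQ_0_D[OF lim, of "e/4"] e by auto
    have "Q (X m - X n) < e" if "m \<ge> N" "n \<ge> N" for m n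
    proof -
      have "X m - X n = (X m - l) - (X n - l)" by (simp add: algebra_simps)
      then have "Q (X m - X n) \<le> 2 * Q (X m - l) + 2 * Q (X n - l)"
        using Q_diff_le[of "X m - l" "X n - l"] in1 Vdiff by auto
      also have "\<dots> < e" using N[OF that(1)] N[OF that(2)] by auto
      finally show ?thesis .
    qed
    then show ?thesis by blast
  qed
  then show ?thesis unfolding cauchy_def using in1 by auto
qed

lemma conv_unique: assumes "conv X l" "conv X m" shows "l = m"
proof -
  have in1: "\<And>n. X n \<in> V" "l \<in> V" "m \<in> V" using assms unfolding conv_def by auto
  have le: "Q (l - m) \<le> 2 * Q (X n - l) + 2 * Q (X n - m)" for n
  proof -
    have "l - m = (X n - m) - (X n - l)" by (simp add: algebra_simps)
    then show ?thesis using Q_diff_le[of "X n - m" "X n - l"] in1 Vdiff by auto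
  qed
  have "(\<lambda>n. 2 * Q (X n - l) + 2 * Q (X n - m)) \<longlonglongrightarrow> 2 * 0 + 2 * 0"
    using assms unfolding conv_def by (intro tendsto_intros) auto
  then have "Q (l - m) \<le> 2 * 0 + 2 * 0"
    by (rule LIMSEQ_le_const) (use le in auto)
  then have "Q (l - m) = 0" using Q_nonneg[of "l - m"] Vdiff in1 by auto
  then show ?thesis using Q_eq0[of "l - m"] Vdiff in1 by auto
qed

lemma qnull: assumes "\<And>n. A n \<in> V" "\<And>n. B n \<in> V" "(\<lambda>n. Q (A n)) \<longlonglongrightarrow> 0" "(\<lambda>n. Q (B n)) \<longlonglongrightarrow> b"
  shows "(\<lambda>n. q (A n) (B n)) \<longlonglongrightarrow> 0"
proof (rule null_cmp)
  show "norm (q (A n) (B n)) \<le> sqrt (Q (A n)) * sqrt (Q (B n))" for n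
    using CS assms by auto
  have "(\<lambda>n. sqrt (Q (A n)) * sqrt (Q (B n))) \<longlonglongrightarrow> sqrt 0 * sqrt b"
    using assms by (intro tendsto_intros) auto
  then show "(\<lambda>n. sqrt (Q (A n)) * sqrt (Q (B n))) \<longlonglongrightarrow> 0" by simp
qed

lemma conv_q: assumes "conv X l" "conv Y m" shows "(\<lambda>n. q (X n) (Y n)) \<longlonglongrightarrow> q l m"
proof -
  have in1: "\<And>n. X n \<in> V" "l \<in> V" "\<And>n. Y n \<in> V" "m \<in> V" using assms unfolding conv_def by auto
  have lx: "(\<lambda>n. Q (X n - l)) \<longlonglongrightarrow> 0" and ly: "(\<lambda>n. Q (Y n - m)) \<longlonglongrightarrow> 0"
    using assms unfolding conv_def by auto
  have dec: "q (X n) (Y n) = q (X n - l) (Y n - m) + q (X n - l) m + cnj (q (Y n - m) l) + q l m" for n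
  proof -
    define a where "a = X n - l"
    define b where "b = Y n - m"
    have a: "a \<in> V" "b \<in> V" using in1 Vdiff a_def b_def by auto
    have xa: "X n = a + l" "Y n = b + m" using a_def b_def by simp_all
    have "q (X n) (Y n) = q (a + l) (b + m)" by (simp only: xa)
    also have "\<dots> = q a (b + m) + q l (b + m)" using q_add[of a l "b + m"] a in1 Vadd by blast
    also have "\<dots> = q a b + q a m + (q l b + q l m)"
      using q_add_right[of a b m] q_add_right[of l b m] a in1 by simp
    also have "q l b = cnj (q b l)" using q_herm[of b l] a in1 by blast
    finally show ?thesis unfolding a_def b_def by simp
  qed
  have t1: "(\<lambda>n. q (X n - l) (Y n - m)) \<longlonglongrightarrow> 0"
    by (rule qnull[OF _ _ lx ly]) (use in1 Vdiff in auto)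
  have t2: "(\<lambda>n. q (X n - l) m) \<longlonglongrightarrow> 0"
    by (rule qnull[OF _ _ lx tendsto_const]) (use in1 Vdiff in auto)
  have t3: "(\<lambda>n. q (Y n - m) l) \<longlonglongrightarrow> 0"
    by (rule qnull[OF _ _ ly tendsto_const]) (use in1 Vdiff in auto)
  have "(\<lambda>n. q (X n - l) (Y n - m) + q (X n - l) m + cnj (q (Y n - m) l) + q l m) \<longlonglongrightarrow> 0 + 0 + cnj 0 + q l m"
    by (intro tendsto_intros t1 t2 t3)
  then show ?thesis unfolding dec by simp
qed

lemma conv_Q: assumes "conv X l" shows "(\<lambda>n. Q (X n)) \<longlonglongrightarrow> Q l"
  unfolding Q_def by (intro tendsto_intros conv_q assms)

lemma cauchy_D: assumes "cauchy X" "e > 0" shows "\<exists>N. \<forall>m\<ge>N. \<forall>n\<ge>N. Q (X m - X n) < e"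
  using assms unfolding cauchy_def by auto

end

locale cips = ips +
  assumes complete: "cauchy X \<Longrightarrow> \<exists>l. conv X l"

lemma inv_Suc_lim: "(\<lambda>n. 1 / (real n + 1)) \<longlonglongrightarrow> 0"
proof -
  have "(\<lambda>n. inverse (real (Suc n))) \<longlonglongrightarrow> 0" by (rule LIMSEQ_inverse_real_of_nat)
  moreover have "(\<lambda>n. inverse (real (Suc n))) = (\<lambda>n. 1 / (real n + 1))"
    by (simp add: inverse_eq_divide add.commute)
  ultimately show ?thesis by simp
qed

lemma arch_small: assumes "(e::real) > 0" shows "\<exists>N::nat. \<forall>n\<ge>N. c / (real n + 1) < e \<or> c \<le> 0"
proof -
  obtain N :: nat where N: "c / e < real N" using reals_Archimedean2 by blast
  have "c / (real n + 1) < e \<or> c \<le> 0" if "n \<ge> N" for n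
  proof (cases "c \<le> 0")
    case False
    have "c / e < real n + 1" using N that by linarith
    then have "c < e * (real n + 1)" using assms by (simp add: divide_less_eq mult.commute)
    then show ?thesis by (simp add: divide_less_eq mult.commute)
  qed simp
  then show ?thesis by blast
qed

context hsp begin
lemma sc_two: "sc 2 x = x + x"
  using sc_add_left[of 1 1 x] by simp
lemma sc_half2: "sc 2 (sc (1/2) y) = y"
  using sc_mult[of 2 "1/2" y] by simp
end

context ips begin

lemma orth_from_min:
  assumes w: "w \<in> V" and s: "s \<in> V" and min: "\<And>m. Q w \<le> Q (w + sc m s)"
  shows "q w s = 0"
proof -
  define c where "c = q w s"
  define b where "b = Q s"
  define \<epsilon> where "\<epsilon> = 1 / (b + 1)"
  have b0: "b \<ge> 0" using Q_nonneg s b_def by auto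
  have ep: "\<epsilon> > 0" "\<epsilon> * b < 1" using b0 by (auto simp: \<epsilon>_def field_simps)
  have "Q w \<le> Q (w + sc (- (of_real \<epsilon> * c)) s)" by (rule min)
  also have "\<dots> = Q w + (cmod (of_real \<epsilon> * c))^2 * b + 2 * Re (cnj (- (of_real \<epsilon> * c)) * c)"
    using Q_add_sc[OF w s] b_def c_def by simp
  also have "cnj (- (of_real \<epsilon> * c)) * c = - of_real \<epsilon> * of_real ((cmod c)^2)"
  proof -
    have cc: "complex_of_real ((cmod c)^2) = c * cnj c" by (rule complex_norm_square)
    show ?thesis by (simp only: cc) (simp add: algebra_simps)
  qed
  also have "(cmod (of_real \<epsilon> * c))^2 = \<epsilon>^2 * (cmod c)^2"
    by (simp add: norm_mult power_mult_distrib)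
  finally have "0 \<le> \<epsilon> * (cmod c)^2 * (\<epsilon> * b - 2)" by (simp add: algebra_simps power2_eq_square)
  moreover have "\<epsilon> * b - 2 < 0" using ep by simp
  ultimately have "\<not> (\<epsilon> * (cmod c)^2 > 0)" using mult_pos_neg[of "\<epsilon> * (cmod c)^2" "\<epsilon> * b - 2"] by linarith
  have "(cmod c)^2 \<le> 0"
  proof (rule ccontr)
    assume "\<not> (cmod c)^2 \<le> 0"
    then have "(cmod c)^2 > 0" by simp
    then have "\<epsilon> * (cmod c)^2 > 0" using ep by simp
    then show False using \<open>\<not> (\<epsilon> * (cmod c)^2 > 0)\<close> by simp
  qed
  then show ?thesis unfolding c_def by simp
qed

end

context cips begin

lemma proj:
  assumes S: "S \<subseteq> V" "0 \<in> S" "\<And>x y. x \<in> S \<Longrightarrow> y \<in> S \<Longrightarrow> x + y \<in> S" "\<And>a x. x \<in> S \<Longrightarrow> sc a x \<in> S"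
    and x: "x \<in> V"
  shows "\<exists>p X. conv X p \<and> (\<forall>n. X n \<in> S) \<and> (\<forall>s\<in>S. q (x - p) s = 0)"
proof -
  define D where "D = Inf ((\<lambda>s. Q (x - s)) ` S)"
  have ne: "(\<lambda>s. Q (x - s)) ` S \<noteq> {}" using S by auto
  have bdd: "bdd_below ((\<lambda>s. Q (x - s)) ` S)"
    using Q_nonneg Vdiff x S by (auto intro!: bdd_belowI[of _ 0])
  have D_le: "D \<le> Q (x - s)" if "s \<in> S" for s
    unfolding D_def by (rule cInf_lower[OF _ bdd]) (use that in auto)
  have "\<forall>n. \<exists>s. s \<in> S \<and> Q (x - s) < D + 1 / (real n + 1)"
  proof
    fix n
    have "Inf ((\<lambda>s. Q (x - s)) ` S) < D + 1 / (real n + 1)" unfolding D_def by simp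
    from cInf_lessD[OF ne this] show "\<exists>s. s \<in> S \<and> Q (x - s) < D + 1 / (real n + 1)" by auto
  qed
  then obtain s where s: "\<And>n. s n \<in> S" "\<And>n. Q (x - s n) < D + 1 / (real n + 1)"
    using choice[of "\<lambda>n s. s \<in> S \<and> Q (x - s) < D + 1 / (real n + 1)"] by blast
  have sV: "s n \<in> V" for n using s S by auto
  have halfS: "sc (1/2) (s n + s m) \<in> S" for n m using S s by auto
  have cb: "Q (s m - s n) \<le> 2 / (real n + 1) + 2 / (real m + 1)" for m n
  proof -
    define a where "a = x - s n"
    define b where "b = x - s m"
    have ab: "a \<in> V" "b \<in> V" using a_def b_def x sV Vdiff by auto
    have "sc 2 (x - sc (1/2) (s n + s m)) = sc 2 x - sc 2 (sc (1/2) (s n + s m))" by (rule sc_diff)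
    also have "\<dots> = sc 2 x - (s n + s m)" by (simp only: sc_half2)
    also have "\<dots> = (x + x) - (s n + s m)" by (simp only: sc_two)
    finally have e1: "sc 2 (x - sc (1/2) (s n + s m)) = (x + x) - (s n + s m)" .
    have "a + b = (x + x) - (s n + s m)" unfolding a_def b_def by (simp add: algebra_simps)
    then have ab2: "a + b = sc 2 (x - sc (1/2) (s n + s m))" using e1 by simp
    then have "Q (a + b) = 4 * Q (x - sc (1/2) (s n + s m))"
    proof -
      have hV: "sc (1/2) (s n + s m) \<in> V" using halfS S(1) by blast
      show ?thesis using Q_sc[OF Vdiff[OF x hV], of 2] ab2 by simp
    qed
    also have "\<dots> \<ge> 4 * D" using D_le[OF halfS] by simp
    finally have 1: "Q (a + b) \<ge> 4 * D" .
    have "a - b = s m - s n" unfolding a_def b_def by simp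
    then have "Q (s m - s n) = 2 * Q a + 2 * Q b - Q (a + b)" using Q_paral[OF ab] by simp
    also have "\<dots> \<le> 2 * (D + 1 / (real n + 1)) + 2 * (D + 1 / (real m + 1)) - 4 * D"
      using s(2)[of n] s(2)[of m] 1 unfolding a_def b_def by simp
    finally show ?thesis by simp
  qed
  have "cauchy s"
    unfolding cauchy_def
  proof (intro conjI allI impI)
    show "s n \<in> V" for n by (rule sV)
    fix e :: real assume e: "e > 0"
    obtain N where N: "\<And>n. n \<ge> N \<Longrightarrow> 4 / (real n + 1) < e \<or> (4::real) \<le> 0"
      using arch_small[OF e, of 4] by blast
    have "Q (s m - s n) < e" if "m \<ge> N" "n \<ge> N" for m n
    proof -
      have "2 / (real n + 1) \<le> 2 / (real N + 1)" "2 / (real m + 1) \<le> 2 / (real N + 1)"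
        using that by (auto intro!: divide_left_mono)
      then have "Q (s m - s n) \<le> 4 / (real N + 1)" using cb[of m n] by simp
      also have "\<dots> < e" using N[of N] by simp
      finally show ?thesis .
    qed
    then show "\<exists>N. \<forall>m\<ge>N. \<forall>n\<ge>N. Q (s m - s n) < e" by blast
  qed
  then obtain p where p: "conv s p" using complete by blast
  have pV: "p \<in> V" using p conv_in by auto
  have cx: "conv (\<lambda>n. x - s n) (x - p)" by (rule conv_diff[OF conv_const[OF x] p])
  have "(\<lambda>n. Q (x - s n)) \<longlonglongrightarrow> Q (x - p)" using conv_Q[OF cx] by simp
  moreover have "(\<lambda>n. D + 1 / (real n + 1)) \<longlonglongrightarrow> D + 0"
    by (intro tendsto_intros inv_Suc_lim)
  ultimately have Qp: "Q (x - p) \<le> D"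
    using LIMSEQ_le[of "\<lambda>n. Q (x - s n)" "Q (x - p)" "\<lambda>n. D + 1 / (real n + 1)" "D + 0"] s(2)
    by (simp add: less_imp_le)
  have orth: "q (x - p) t = 0" if t: "t \<in> S" for t
  proof (rule orth_from_min)
    show "x - p \<in> V" using x pV Vdiff by auto
    show "t \<in> V" using t S by auto
    fix m
    have tS: "s n - sc m t \<in> S" for n
    proof -
      have "s n + sc (-1) (sc m t) \<in> S" using S s t by auto
      then show ?thesis by (simp add: sc_m1)
    qed
    have c2: "conv (\<lambda>n. x - (s n - sc m t)) (x - (p - sc m t))"
      by (rule conv_diff[OF conv_const[OF x] conv_diff[OF p conv_const]]) (use t S Vsc in auto)
    have "D \<le> Q (x - (p - sc m t))"
      by (rule LIMSEQ_le_const[OF conv_Q[OF c2]]) (use D_le tS in auto)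
    moreover have "x - (p - sc m t) = (x - p) + sc m t" by simp
    ultimately show "Q (x - p) \<le> Q (x - p + sc m t)" using Qp by simp
  qed
  show ?thesis using p s(1) orth by blast
qed

lemma riesz:
  assumes add: "\<And>x y. x \<in> V \<Longrightarrow> y \<in> V \<Longrightarrow> \<phi> (x + y) = \<phi> x + \<phi> y"
    and scl: "\<And>a x. x \<in> V \<Longrightarrow> \<phi> (sc a x) = a * \<phi> x"
    and bnd: "\<And>x. x \<in> V \<Longrightarrow> cmod (\<phi> x) \<le> C * sqrt (Q x)"
  shows "\<exists>g\<in>V. \<forall>y\<in>V. \<phi> y = q y g"
proof (cases "\<forall>y\<in>V. \<phi> y = 0")
  case True
  then have "\<forall>y\<in>V. \<phi> y = q y 0" by simp
  then show ?thesis using V0 by blast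
next
  case False
  then obtain x where x: "x \<in> V" "\<phi> x \<noteq> 0" by blast
  have phi0: "\<phi> 0 = 0" using scl[of 0 0] V0 by simp
  have phidiff: "\<phi> (u - v) = \<phi> u - \<phi> v" if "u \<in> V" "v \<in> V" for u v
  proof -
    have "\<phi> (u + sc (-1) v) = \<phi> u + (-1) * \<phi> v" using add scl that Vsc by auto
    then show ?thesis by (simp add: sc_m1)
  qed
  define N where "N = {y \<in> V. \<phi> y = 0}"
  have NS: "N \<subseteq> V" "0 \<in> N" "\<And>x y. x \<in> N \<Longrightarrow> y \<in> N \<Longrightarrow> x + y \<in> N" "\<And>a x. x \<in> N \<Longrightarrow> sc a x \<in> N"
    unfolding N_def using V0 phi0 Vadd add Vsc scl by auto
  obtain p X where pX: "conv X p" "\<And>n. X n \<in> N" "\<And>s. s \<in> N \<Longrightarrow> q (x - p) s = 0"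
    using proj[OF NS x(1)] by blast
  have pV: "p \<in> V" using pX conv_in by auto
  have XV: "X n \<in> V" for n using pX NS by auto
  have "cmod (\<phi> p) \<le> C * sqrt (Q (X n - p))" for n
  proof -
    have "\<phi> (X n - p) = - \<phi> p" using phidiff[OF XV pV] pX(2)[of n] unfolding N_def by simp
    then show ?thesis using bnd[of "X n - p"] XV pV Vdiff by simp
  qed
  moreover have "(\<lambda>n. C * sqrt (Q (X n - p))) \<longlonglongrightarrow> C * sqrt 0"
    using pX(1) unfolding conv_def by (intro tendsto_intros) auto
  ultimately have "cmod (\<phi> p) \<le> C * sqrt 0"
    by (intro LIMSEQ_le_const[where X="\<lambda>n. C * sqrt (Q (X n - p))"]) auto
  then have php: "\<phi> p = 0" by simp
  define z where "z = x - p"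
  have zV: "z \<in> V" using z_def x pV Vdiff by auto
  have phz: "\<phi> z = \<phi> x" using phidiff[OF x(1) pV] php z_def by simp
  have zne: "z \<noteq> 0" using phz x phi0 by auto
  have qzz: "q z z \<noteq> 0" using q_def zV zne by blast
  have key: "\<phi> y * q z z = \<phi> z * q y z" if y: "y \<in> V" for y
  proof -
    define u where "u = sc (\<phi> y) z - sc (\<phi> z) y"
    have uV: "u \<in> V" using u_def zV y Vsc Vdiff by auto
    have "\<phi> u = \<phi> y * \<phi> z - \<phi> z * \<phi> y" unfolding u_def
      using phidiff[of "sc (\<phi> y) z" "sc (\<phi> z) y"] zV y Vsc scl by auto
    then have "u \<in> N" using uV unfolding N_def by simp
    then have "q z u = 0" using pX(3) z_def by simp
    then have "q u z = 0" using q_herm[OF zV uV] by simp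
    moreover have "q u z = \<phi> y * q z z - \<phi> z * q y z"
      unfolding u_def using q_diff_left[of "sc (\<phi> y) z" "sc (\<phi> z) y" z] q_sc zV y Vsc by auto
    ultimately show ?thesis by simp
  qed
  define g where "g = sc (cnj (\<phi> z / q z z)) z"
  have gV: "g \<in> V" using g_def zV Vsc by auto
  have "\<phi> y = q y g" if y: "y \<in> V" for y
  proof -
    have "q y g = \<phi> z / q z z * q y z" unfolding g_def using q_sc_right[OF y zV] by simp
    also have "\<dots> = \<phi> y" using key[OF y] qzz by (simp add: field_simps)
    finally show ?thesis by simp
  qed
  then show ?thesis using gV by blast
qed

end

context ips begin
lemma tri: assumes "x \<in> V" "y \<in> V" shows "sqrt (Q (x + y)) \<le> sqrt (Q x) + sqrt (Q y)"
proof -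
  have "Q (x + y) = Q x + Q y + 2 * Re (q x y)" using Q_add[OF assms] .
  also have "Re (q x y) \<le> sqrt (Q x) * sqrt (Q y)"
    using CS[OF assms] complex_Re_le_cmod[of "q x y"] by linarith
  finally have "Q (x + y) \<le> (sqrt (Q x) + sqrt (Q y))^2"
    using Q_nonneg assms by (simp add: power2_eq_square algebra_simps)
  then have "sqrt (Q (x + y)) \<le> sqrt ((sqrt (Q x) + sqrt (Q y))^2)" by (rule real_sqrt_le_mono)
  also have "\<dots> = sqrt (Q x) + sqrt (Q y)" using Q_nonneg assms by simp
  finally show ?thesis .
qed
end

sublocale hsp \<subseteq> Hs: cips sc ip UNIV ip
proof -
  interpret I: ips sc ip UNIV ip
    by unfold_locales (auto simp: ip_add ip_sc ip_pos intro: ip_def0 ip_cnj)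
  show "cips sc ip UNIV ip"
  proof unfold_locales
    fix X :: "nat \<Rightarrow> 'h" assume c: "I.cauchy X"
    have "\<forall>e>0. \<exists>N. \<forall>m\<ge>N. \<forall>n\<ge>N. nrm ip (X m - X n) < e"
    proof (intro allI impI)
      fix e :: real assume e: "e > 0"
      obtain N where N: "\<And>m n. m \<ge> N \<Longrightarrow> n \<ge> N \<Longrightarrow> I.Q (X m - X n) < e^2"
        using I.cauchy_D[OF c, of "e^2"] e by auto
      have "nrm ip (X m - X n) < e" if "m \<ge> N" "n \<ge> N" for m n
      proof -
        have "nrm ip (X m - X n) = sqrt (I.Q (X m - X n))" unfolding nrm_def I.Q_def by simp
        also have "\<dots> < sqrt (e^2)" using N[OF that] by (simp only: real_sqrt_less_iff)
        finally show ?thesis using e by simp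
      qed
      then show "\<exists>N. \<forall>m\<ge>N. \<forall>n\<ge>N. nrm ip (X m - X n) < e" by blast
    qed
    then obtain l where l: "\<And>e. e > 0 \<Longrightarrow> \<exists>N. \<forall>n\<ge>N. nrm ip (X n - l) < e"
      using H_complete[of X] by blast
    have "(\<lambda>n. I.Q (X n - l)) \<longlonglongrightarrow> 0"
      unfolding LIMSEQ_iff
    proof (intro allI impI)
      fix r :: real assume r: "r > 0"
      obtain N where N: "\<And>n. n \<ge> N \<Longrightarrow> nrm ip (X n - l) < sqrt r" using l[of "sqrt r"] r by auto
      have "norm (I.Q (X n - l) - 0) < r" if "n \<ge> N" for n
      proof -
        have q0: "I.Q (X n - l) \<ge> 0" by (rule I.Q_nonneg) simp
        have "sqrt (I.Q (X n - l)) < sqrt r" using N[OF that] unfolding nrm_def I.Q_def by simp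
        then have "I.Q (X n - l) < r" using q0 r by (simp only: real_sqrt_less_iff)
        then show ?thesis using q0 by simp
      qed
      then show "\<exists>N. \<forall>n\<ge>N. norm (I.Q (X n - l) - 0) < r" by blast
    qed
    then show "\<exists>l. I.conv X l" unfolding I.conv_def by auto
  qed
qed

context hsp begin

lemma nrm_Q: "nrm ip x = sqrt (Hs.Q x)" unfolding nrm_def Hs.Q_def by simp

definition kf :: "'h form \<Rightarrow> real" where "kf T = 1 + form_lb ip T"
definition qf :: "'h form \<Rightarrow> 'h \<Rightarrow> 'h \<Rightarrow> complex" where
  "qf T x y = snd T x y + complex_of_real (kf T) * ip x y"

lemma dd_D: assumes "dd_form sc ip T"
  shows "dense_subspace sc ip (fst T)"
    "\<And>x y z. x \<in> fst T \<Longrightarrow> y \<in> fst T \<Longrightarrow> z \<in> fst T \<Longrightarrow> snd T (x + y) z = snd T x z + snd T y z"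
    "\<And>a x y. x \<in> fst T \<Longrightarrow> y \<in> fst T \<Longrightarrow> snd T (sc a x) y = a * snd T x y"
    "\<And>x y z. x \<in> fst T \<Longrightarrow> y \<in> fst T \<Longrightarrow> z \<in> fst T \<Longrightarrow> snd T x (y + z) = snd T x y + snd T x z"
    "\<And>a x y. x \<in> fst T \<Longrightarrow> y \<in> fst T \<Longrightarrow> snd T x (sc a y) = cnj a * snd T x y"
    "\<And>x y. x \<notin> fst T \<or> y \<notin> fst T \<Longrightarrow> snd T x y = 0"
  using assms unfolding dd_form_def by (auto simp: case_prod_beta)

lemma ds_D: assumes "dense_subspace sc ip D"
  shows "0 \<in> D" "\<And>x y. x \<in> D \<Longrightarrow> y \<in> D \<Longrightarrow> x + y \<in> D" "\<And>a x. x \<in> D \<Longrightarrow> sc a x \<in> D"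
    "\<And>x e. e > 0 \<Longrightarrow> \<exists>y\<in>D. nrm ip (x - y) < e"
  using assms unfolding dense_subspace_def by auto

lemma form_herm:
  assumes dd: "dd_form sc ip T" and pos: "positive_form T" and x: "x \<in> fst T" and y: "y \<in> fst T"
  shows "snd T y x = cnj (snd T x y)"
proof -
  let ?t = "snd T"
  note d = dd_D[OF dd]
  note s = ds_D[OF d(1)]
  have im0: "Im (?t z z) = 0" if "z \<in> fst T" for z using pos that unfolding positive_form_def by auto
  have xy: "x + y \<in> fst T" using s x y by auto
  have iy: "sc \<i> y \<in> fst T" using s y by auto
  have xiy: "x + sc \<i> y \<in> fst T" using s x iy by auto
  have e1: "?t (x + y) (x + y) = ?t x x + ?t x y + ?t y x + ?t y y"
    using d(2)[OF x y xy] d(4)[OF x x y] d(4)[OF y x y] by simp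
  have e2: "?t (x + sc \<i> y) (x + sc \<i> y) = ?t x x - \<i> * ?t x y + \<i> * ?t y x + ?t y y"
    using d(2)[OF x iy xiy] d(4)[OF x x iy] d(4)[OF iy x iy] d(5)[OF x y, of \<i>] d(3)[OF y x, of \<i>]
      d(3)[OF y iy, of \<i>] d(5)[OF y y, of \<i>] by (simp add: algebra_simps)
  have "Im (?t x y) + Im (?t y x) = 0" using im0[OF xy] im0[OF x] im0[OF y] e1 by simp
  moreover have "Re (?t y x) - Re (?t x y) = 0" using im0[OF xiy] im0[OF x] im0[OF y] e2 by simp
  ultimately show ?thesis by (simp add: complex_eq_iff)
qed

lemma unit_vec: assumes "dense_subspace sc ip D" shows "\<exists>x\<in>D. nrm ip x = 1"
proof -
  note s = ds_D[OF assms]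
  obtain v :: 'h where v: "v \<noteq> 0" using nontriv by blast
  have qv: "Hs.Q v > 0" using Hs.Q_eq0[of v] Hs.Q_nonneg[of v] v by auto
  obtain y where y: "y \<in> D" "nrm ip (v - y) < nrm ip v" using s(4)[of "nrm ip v" v] qv nrm_Q by auto
  have yne: "y \<noteq> 0" using y by auto
  have qy: "Hs.Q y > 0" using Hs.Q_eq0[of y] Hs.Q_nonneg[of y] yne by auto
  define z where "z = sc (complex_of_real (1 / sqrt (Hs.Q y))) y"
  have "Hs.Q z = (1 / sqrt (Hs.Q y))^2 * Hs.Q y" unfolding z_def using Hs.Q_sc[of y] Hs.Q_nonneg[of y] by (simp add: norm_divide)
  also have "\<dots> = 1" using qy by (simp add: power_divide)
  finally have "nrm ip z = 1" using nrm_Q by simp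
  then show ?thesis using s(3) y z_def by blast
qed

lemma form_lb_nonneg: assumes dd: "dd_form sc ip T" and pos: "positive_form T"
  shows "0 \<le> form_lb ip T"
proof -
  have ne: "{Re (snd T x x) |x. x \<in> fst T \<and> nrm ip x = 1} \<noteq> {}"
    using unit_vec[OF dd_D(1)[OF dd]] by auto
  show ?thesis unfolding form_lb_def
    by (rule cInf_greatest[OF ne]) (use pos in \<open>auto simp: positive_form_def\<close>)
qed

lemma kf_ge1: "dd_form sc ip T \<Longrightarrow> positive_form T \<Longrightarrow> kf T \<ge> 1"
  using form_lb_nonneg kf_def by auto

lemma form_ips: assumes dd: "dd_form sc ip T" and pos: "positive_form T"
  shows "ips sc ip (fst T) (qf T)"
proof -
  note d = dd_D[OF dd]
  note s = ds_D[OF d(1)]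
  have k: "kf T \<ge> 1" using kf_ge1[OF dd pos] .
  show ?thesis
  proof (unfold_locales)
    show "0 \<in> fst T" using s by auto
    show "\<And>x y. x \<in> fst T \<Longrightarrow> y \<in> fst T \<Longrightarrow> x + y \<in> fst T" using s by auto
    show "\<And>x a. x \<in> fst T \<Longrightarrow> sc a x \<in> fst T" using s by auto
    show "\<And>x y z. x \<in> fst T \<Longrightarrow> y \<in> fst T \<Longrightarrow> z \<in> fst T \<Longrightarrow> qf T (x + y) z = qf T x z + qf T y z"
      unfolding qf_def using d by (simp add: ip_add algebra_simps)
    show "\<And>x y a. x \<in> fst T \<Longrightarrow> y \<in> fst T \<Longrightarrow> qf T (sc a x) y = a * qf T x y"
      unfolding qf_def using d by (simp add: ip_sc algebra_simps)
    show "qf T y x = cnj (qf T x y)" if "x \<in> fst T" "y \<in> fst T" for x y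
      unfolding qf_def using form_herm[OF dd pos that] ip_cnj[of x y] by simp
    show "\<And>x. x \<in> fst T \<Longrightarrow> 0 \<le> Re (qf T x x)"
      unfolding qf_def using pos k ip_pos unfolding positive_form_def by simp
    show "x = 0" if x: "x \<in> fst T" and q0: "qf T x x = 0" for x
    proof -
      have "Re (qf T x x) = Re (snd T x x) + kf T * Re (ip x x)" unfolding qf_def by simp
      then have "Re (snd T x x) + kf T * Re (ip x x) = 0" using q0 by simp
      moreover have "Re (snd T x x) \<ge> 0" using pos x unfolding positive_form_def by auto
      moreover have "Re (ip x x) \<ge> 0" by (rule ip_pos)
      ultimately have "Re (ip x x) = 0" using k by (smt (verit) mult_pos_pos)
      then have "Hs.Q x = 0" unfolding Hs.Q_def .
      then show "x = 0" using Hs.Q_eq0 by simp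
    qed
  qed
qed

end

locale dform = hsp +
  fixes T
  assumes dd: "dd_form sc ip T" and pos: "positive_form T"

sublocale dform \<subseteq> F: ips sc ip "fst T" "qf T"
  by (rule form_ips[OF dd pos])

context dform begin

lemma k1: "kf T \<ge> 1" using kf_ge1[OF dd pos] .

lemma FQ: "F.Q x = Re (snd T x x) + kf T * Hs.Q x"
  unfolding F.Q_def Hs.Q_def qf_def by simp

lemma fn_FQ: "form_norm ip T x = sqrt (F.Q x)"
  unfolding form_norm_def FQ kf_def Hs.Q_def by simp

lemma tpos: "x \<in> fst T \<Longrightarrow> Re (snd T x x) \<ge> 0"
  using pos unfolding positive_form_def by auto

lemma HQ_le: "x \<in> fst T \<Longrightarrow> Hs.Q x \<le> F.Q x"
proof -
  assume x: "x \<in> fst T"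
  have "Hs.Q x \<le> kf T * Hs.Q x" using k1 Hs.Q_nonneg[of x] by (simp add: mult_le_cancel_right1)
  then show ?thesis using tpos[OF x] FQ by simp
qed

lemma conv_H: assumes "F.conv X l" shows "Hs.conv X l"
proof -
  have in1: "\<And>n. X n \<in> fst T" "l \<in> fst T" using assms F.conv_in by auto
  have "(\<lambda>n. Hs.Q (X n - l)) \<longlonglongrightarrow> 0"
    by (rule sandwich0[of _ "\<lambda>n. F.Q (X n - l)"])
      (use assms in1 HQ_le F.Vdiff Hs.Q_nonneg in \<open>auto simp: F.conv_def\<close>)
  then show ?thesis unfolding Hs.conv_def by simp
qed

lemma cauchy_H: assumes "F.cauchy X" shows "Hs.cauchy X"
  unfolding Hs.cauchy_def
proof (intro conjI allI impI)
  fix e :: real assume "e > 0"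
  then obtain N where N: "\<And>m n. m \<ge> N \<Longrightarrow> n \<ge> N \<Longrightarrow> F.Q (X m - X n) < e"
    using F.cauchy_D[OF assms] by blast
  have "X m - X n \<in> fst T" for m n using assms F.Vdiff unfolding F.cauchy_def by auto
  then show "\<exists>N. \<forall>m\<ge>N. \<forall>n\<ge>N. Hs.Q (X m - X n) < e"
    using N HQ_le by (meson le_less_trans)
qed simp

lemma closed_iff: "closed_pos_form sc ip T \<longleftrightarrow> (\<forall>X. F.cauchy X \<longrightarrow> (\<exists>l. F.conv X l))"
proof -
  have c1: "F.cauchy X \<longleftrightarrow> (\<forall>n. X n \<in> fst T) \<and> (\<forall>e>0. \<exists>N. \<forall>m\<ge>N. \<forall>n\<ge>N. form_norm ip T (X m - X n) < e)" for X
  proof -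
    have "(\<forall>e>0. \<exists>N. \<forall>m\<ge>N. \<forall>n\<ge>N. form_norm ip T (X m - X n) < e) \<longleftrightarrow>
          (\<forall>e>0. \<exists>N. \<forall>m\<ge>N. \<forall>n\<ge>N. F.Q (X m - X n) < e)" if X: "\<forall>n. X n \<in> fst T"
    proof
      assume a: "\<forall>e>0. \<exists>N. \<forall>m\<ge>N. \<forall>n\<ge>N. form_norm ip T (X m - X n) < e"
      show "\<forall>e>0. \<exists>N. \<forall>m\<ge>N. \<forall>n\<ge>N. F.Q (X m - X n) < e"
      proof (intro allI impI)
        fix e :: real assume e: "e > 0"
        obtain N where N: "\<And>m n. m \<ge> N \<Longrightarrow> n \<ge> N \<Longrightarrow> form_norm ip T (X m - X n) < sqrt e"
          using a e by (meson real_sqrt_gt_zero)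
        have "F.Q (X m - X n) < e" if "m \<ge> N" "n \<ge> N" for m n
          using N[OF that] unfolding fn_FQ using F.Q_nonneg[of "X m - X n"] X F.Vdiff e
          by (simp only: real_sqrt_less_iff)
        then show "\<exists>N. \<forall>m\<ge>N. \<forall>n\<ge>N. F.Q (X m - X n) < e" by blast
      qed
    next
      assume a: "\<forall>e>0. \<exists>N. \<forall>m\<ge>N. \<forall>n\<ge>N. F.Q (X m - X n) < e"
      show "\<forall>e>0. \<exists>N. \<forall>m\<ge>N. \<forall>n\<ge>N. form_norm ip T (X m - X n) < e"
      proof (intro allI impI)
        fix e :: real assume e: "e > 0"
        obtain N where N: "\<And>m n. m \<ge> N \<Longrightarrow> n \<ge> N \<Longrightarrow> F.Q (X m - X n) < e^2"
          using a e by (meson zero_less_power)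
        have "form_norm ip T (X m - X n) < e" if "m \<ge> N" "n \<ge> N" for m n
        proof -
          have "sqrt (F.Q (X m - X n)) < sqrt (e^2)" using N[OF that] by (simp only: real_sqrt_less_iff)
          then show ?thesis unfolding fn_FQ using e by simp
        qed
        then show "\<exists>N. \<forall>m\<ge>N. \<forall>n\<ge>N. form_norm ip T (X m - X n) < e" by blast
      qed
    qed
    then show ?thesis unfolding F.cauchy_def by blast
  qed
  have c2: "(\<exists>l. F.conv X l) \<longleftrightarrow> (\<exists>l\<in>fst T. \<forall>e>0. \<exists>N. \<forall>n\<ge>N. form_norm ip T (X n - l) < e)"
    if X: "\<forall>n. X n \<in> fst T" for X
  proof -
    have "(\<lambda>n. F.Q (X n - l)) \<longlonglongrightarrow> 0 \<longleftrightarrow> (\<forall>e>0. \<exists>N. \<forall>n\<ge>N. form_norm ip T (X n - l) < e)"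
      if l: "l \<in> fst T" for l
    proof -
      have nn: "F.Q (X n - l) \<ge> 0" for n using F.Q_nonneg F.Vdiff X l by auto
      have "(\<lambda>n. F.Q (X n - l)) \<longlonglongrightarrow> 0 \<longleftrightarrow> (\<forall>r>0. \<exists>N. \<forall>n\<ge>N. F.Q (X n - l) < r)"
        unfolding LIMSEQ_iff using nn by simp
      also have "\<dots> \<longleftrightarrow> (\<forall>e>0. \<exists>N. \<forall>n\<ge>N. form_norm ip T (X n - l) < e)"
      proof
        assume a: "\<forall>r>0. \<exists>N. \<forall>n\<ge>N. F.Q (X n - l) < r"
        show "\<forall>e>0. \<exists>N. \<forall>n\<ge>N. form_norm ip T (X n - l) < e"
        proof (intro allI impI)
          fix e :: real assume e: "e > 0"
          obtain N where N: "\<And>n. n \<ge> N \<Longrightarrow> F.Q (X n - l) < e^2" using a e by (meson zero_less_power)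
          have "form_norm ip T (X n - l) < e" if "n \<ge> N" for n
          proof -
            have "sqrt (F.Q (X n - l)) < sqrt (e^2)" using N[OF that] by (simp only: real_sqrt_less_iff)
            then show ?thesis unfolding fn_FQ using e by simp
          qed
          then show "\<exists>N. \<forall>n\<ge>N. form_norm ip T (X n - l) < e" by blast
        qed
      next
        assume a: "\<forall>e>0. \<exists>N. \<forall>n\<ge>N. form_norm ip T (X n - l) < e"
        show "\<forall>r>0. \<exists>N. \<forall>n\<ge>N. F.Q (X n - l) < r"
        proof (intro allI impI)
          fix r :: real assume r: "r > 0"
          obtain N where N: "\<And>n. n \<ge> N \<Longrightarrow> form_norm ip T (X n - l) < sqrt r"
            using a r by (meson real_sqrt_gt_zero)
          have "F.Q (X n - l) < r" if "n \<ge> N" for n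
            using N[OF that] nn[of n] r unfolding fn_FQ by (simp only: real_sqrt_less_iff)
          then show "\<exists>N. \<forall>n\<ge>N. F.Q (X n - l) < r" by blast
        qed
      qed
      finally show ?thesis .
    qed
    then show ?thesis unfolding F.conv_def using X by blast
  qed
  have "(\<forall>X::nat \<Rightarrow> _. (\<forall>n. X n \<in> fst T) \<longrightarrow>
        (\<forall>e>0. \<exists>N. \<forall>m\<ge>N. \<forall>n\<ge>N. form_norm ip T (X m - X n) < e) \<longrightarrow>
        (\<exists>l\<in>fst T. \<forall>e>0. \<exists>N. \<forall>n\<ge>N. form_norm ip T (X n - l) < e))
     \<longleftrightarrow> (\<forall>X. F.cauchy X \<longrightarrow> (\<exists>l. F.conv X l))"
  proof (intro iffI allI impI)
    fix X :: "nat \<Rightarrow> _" assume a: "\<forall>X::nat \<Rightarrow> _. (\<forall>n. X n \<in> fst T) \<longrightarrow>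
        (\<forall>e>0. \<exists>N. \<forall>m\<ge>N. \<forall>n\<ge>N. form_norm ip T (X m - X n) < e) \<longrightarrow>
        (\<exists>l\<in>fst T. \<forall>e>0. \<exists>N. \<forall>n\<ge>N. form_norm ip T (X n - l) < e)"
      and c: "F.cauchy X"
    have X: "\<forall>n. X n \<in> fst T" using c1[THEN iffD1, OF c] by (rule conjunct1)
    have cf: "\<forall>e>0. \<exists>N. \<forall>m\<ge>N. \<forall>n\<ge>N. form_norm ip T (X m - X n) < e" using c1[THEN iffD1, OF c] by (rule conjunct2)
    have X': "\<And>n. X n \<in> fst T" using X by blast
    have cf': "\<And>e. 0 < e \<Longrightarrow> \<exists>N. \<forall>m\<ge>N. \<forall>n\<ge>N. form_norm ip T (X m - X n) < e" using cf by blast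
    from a[rule_format, OF X' cf'] show "\<exists>l. F.conv X l" by (rule c2[OF X, THEN iffD2])
  next
    fix X :: "nat \<Rightarrow> _" assume b: "\<forall>X. F.cauchy X \<longrightarrow> (\<exists>l. F.conv X l)" and X: "\<forall>n. X n \<in> fst T"
      and cf: "\<forall>e>0. \<exists>N. \<forall>m\<ge>N. \<forall>n\<ge>N. form_norm ip T (X m - X n) < e"
    have "F.cauchy X" using c1[THEN iffD2, OF conjI[OF X cf]] .
    then have "\<exists>l. F.conv X l" using b by blast
    then show "\<exists>l\<in>fst T. \<forall>e>0. \<exists>N. \<forall>n\<ge>N. form_norm ip T (X n - l) < e" by (rule c2[OF X, THEN iffD1])
  qed
  then show ?thesis
    unfolding closed_pos_form_def using dd pos by simp
qed

lemma t_eq: "x \<in> fst T \<Longrightarrow> y \<in> fst T \<Longrightarrow> snd T x y = qf T x y - complex_of_real (kf T) * ip x y"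
  unfolding qf_def by simp

lemma t_conv: assumes "F.conv X l" "F.conv Y m"
  shows "(\<lambda>n. snd T (X n) (Y n)) \<longlonglongrightarrow> snd T l m"
proof -
  have in1: "\<And>n. X n \<in> fst T" "l \<in> fst T" "\<And>n. Y n \<in> fst T" "m \<in> fst T"
    using assms F.conv_in by auto
  have "(\<lambda>n. qf T (X n) (Y n) - complex_of_real (kf T) * ip (X n) (Y n)) \<longlonglongrightarrow>
        qf T l m - complex_of_real (kf T) * ip l m"
    by (intro tendsto_intros F.conv_q assms Hs.conv_q conv_H)
  then show ?thesis using t_eq in1 by simp
qed

end

locale cform = dform +
  assumes closed: "closed_pos_form sc ip T"

sublocale cform \<subseteq> F: cips sc ip "fst T" "qf T"
  by unfold_locales (use closed closed_iff in blast)

context hsp begin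

lemma dense_seq: assumes "dense_subspace sc ip D" shows "\<exists>Y. (\<forall>n. Y n \<in> D) \<and> Hs.conv Y x"
proof -
  note s = ds_D[OF assms]
  have "\<forall>n. \<exists>y. y \<in> D \<and> nrm ip (x - y) < 1 / (real n + 1)"
  proof
    fix n
    have "(0::real) < 1 / (real n + 1)" by simp
    from s(4)[OF this, of x] show "\<exists>y. y \<in> D \<and> nrm ip (x - y) < 1 / (real n + 1)" by blast
  qed
  then obtain Y where Y: "\<And>n. Y n \<in> D" "\<And>n. nrm ip (x - Y n) < 1 / (real n + 1)"
    using choice[of "\<lambda>n y. y \<in> D \<and> nrm ip (x - y) < 1 / (real n + 1)"] by blast
  have le: "Hs.Q (Y n - x) \<le> 1 / (real n + 1)" for n
  proof -
    have "Hs.Q (Y n - x) = Hs.Q (x - Y n)" using Hs.Q_minus[of "x - Y n"] by simp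
    also have "\<dots> = (nrm ip (x - Y n))^2" using nrm_Q Hs.Q_nonneg by simp
    also have "\<dots> \<le> (1 / (real n + 1))^2"
      using Y(2)[of n] by (intro power_mono) (auto simp: nrm_def ip_pos)
    also have "\<dots> \<le> 1 / (real n + 1)"
    proof -
      have "1 \<le> real n + 1" by simp
      then have "1 / ((real n + 1) * (real n + 1)) \<le> 1 / (real n + 1)"
        by (intro divide_left_mono) (auto intro: mult_mono)
      then show ?thesis by (simp add: power2_eq_square)
    qed
    finally show ?thesis .
  qed
  have "(\<lambda>n. Hs.Q (Y n - x)) \<longlonglongrightarrow> 0"
    by (rule sandwich0[OF _ le inv_Suc_lim]) (simp add: Hs.Q_nonneg)
  then show ?thesis using Y unfolding Hs.conv_def by auto
qed

lemma dense_zero: assumes "dense_subspace sc ip D" "\<And>y. y \<in> D \<Longrightarrow> ip f y = 0" shows "f = 0"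
proof -
  obtain Y where Y: "\<And>n. Y n \<in> D" "Hs.conv Y f" using dense_seq[OF assms(1)] by blast
  have "(\<lambda>n. ip f (Y n)) \<longlonglongrightarrow> ip f f" by (rule Hs.conv_q[OF Hs.conv_const Y(2)]) simp
  moreover have "(\<lambda>n. ip f (Y n)) = (\<lambda>n. 0)" using assms(2) Y(1) by auto
  ultimately have "(\<lambda>n. 0) \<longlonglongrightarrow> ip f f" by simp
  then have "ip f f = 0" using LIMSEQ_unique[OF _ tendsto_const] by blast
  then show ?thesis by (rule ip_def0)
qed

end

definition assoc_prop where
  "assoc_prop sc ip T A \<longleftrightarrow> pos_sa_op sc ip A \<and> fst A \<subseteq> fst T \<and>
      (\<forall>x\<in>fst A. \<forall>y\<in>fst T. snd T x y = ip (snd A x) y)"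

lemma pos_sa_D: assumes "pos_sa_op sc ip A"
  shows "dense_subspace sc ip (fst A)"
    "\<And>x y. x \<in> fst A \<Longrightarrow> y \<in> fst A \<Longrightarrow> snd A (x + y) = snd A x + snd A y"
    "\<And>a x. x \<in> fst A \<Longrightarrow> snd A (sc a x) = sc a (snd A x)"
    "\<And>x. x \<notin> fst A \<Longrightarrow> snd A x = 0"
    "{y. \<exists>z. \<forall>x\<in>fst A. ip (snd A x) y = ip x z} = fst A"
    "\<And>x y. x \<in> fst A \<Longrightarrow> y \<in> fst A \<Longrightarrow> ip (snd A x) y = ip x (snd A y)"
    "\<And>x. x \<in> fst A \<Longrightarrow> Re (ip (snd A x) x) \<ge> 0"
  using assms unfolding pos_sa_op_def by (auto simp: case_prod_beta)

context dform begin

lemma assoc_uniq: assumes a1: "assoc_prop sc ip T A1" and a2: "assoc_prop sc ip T A2" shows "A1 = A2"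
proof -
  have p1: "pos_sa_op sc ip A1" and s1: "fst A1 \<subseteq> fst T" and r1: "\<And>x y. x \<in> fst A1 \<Longrightarrow> y \<in> fst T \<Longrightarrow> snd T x y = ip (snd A1 x) y"
    using a1 unfolding assoc_prop_def by auto
  have p2: "pos_sa_op sc ip A2" and s2: "fst A2 \<subseteq> fst T" and r2: "\<And>x y. x \<in> fst A2 \<Longrightarrow> y \<in> fst T \<Longrightarrow> snd T x y = ip (snd A2 x) y"
    using a2 unfolding assoc_prop_def by auto
  have cross: "ip (snd A1 x) y = ip x (snd A2 y)" if x: "x \<in> fst A1" and y: "y \<in> fst A2" for x y
  proof -
    have xT: "x \<in> fst T" and yT: "y \<in> fst T" using x y s1 s2 by auto
    have "ip (snd A1 x) y = snd T x y" using r1[OF x yT] by simp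
    also have "\<dots> = cnj (snd T y x)" using form_herm[OF dd pos yT xT] by simp
    also have "\<dots> = cnj (ip (snd A2 y) x)" using r2[OF y xT] by simp
    also have "\<dots> = ip x (snd A2 y)" using ip_cnj[of x "snd A2 y"] by simp
    finally show ?thesis .
  qed
  have "fst A2 \<subseteq> fst A1"
  proof
    fix y assume y: "y \<in> fst A2"
    have "y \<in> {y. \<exists>z. \<forall>x\<in>fst A1. ip (snd A1 x) y = ip x z}" using cross y by blast
    then show "y \<in> fst A1" using pos_sa_D(5)[OF p1] by simp
  qed
  moreover have "fst A1 \<subseteq> fst A2"
  proof
    fix y assume y: "y \<in> fst A1"
    have "ip (snd A2 x) y = ip x (snd A1 y)" if x: "x \<in> fst A2" for x
    proof -
      have "ip (snd A2 x) y = cnj (ip y (snd A2 x))" by (rule ip_cnj)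
      also have "ip y (snd A2 x) = ip (snd A1 y) x" using cross[OF y x] by simp
      also have "cnj (ip (snd A1 y) x) = ip x (snd A1 y)" using ip_cnj[of x "snd A1 y"] by simp
      finally show ?thesis .
    qed
    then have "y \<in> {y. \<exists>z. \<forall>x\<in>fst A2. ip (snd A2 x) y = ip x z}" by blast
    then show "y \<in> fst A2" using pos_sa_D(5)[OF p2] by simp
  qed
  ultimately have deq: "fst A1 = fst A2" by blast
  have "snd A1 x = snd A2 x" for x
  proof (cases "x \<in> fst A1")
    case True
    have "ip (snd A1 x - snd A2 x) y = 0" if y: "y \<in> fst A1" for y
    proof -
      have yT: "y \<in> fst T" using y s1 by auto
      have "ip (snd A1 x - snd A2 x) y = ip (snd A1 x) y - ip (snd A2 x) y" by (rule Hs.q_diff_left) auto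
      also have "\<dots> = snd T x y - snd T x y" using r1[OF True yT] r2[of x y] True deq yT by simp
      finally show ?thesis by simp
    qed
    then have "snd A1 x - snd A2 x = 0" by (rule dense_zero[OF pos_sa_D(1)[OF p1]])
    then show ?thesis by simp
  next
    case False
    then show ?thesis using pos_sa_D(4)[OF p1] pos_sa_D(4)[OF p2] deq by auto
  qed
  then have "snd A1 = snd A2" by blast
  then show ?thesis using deq by (simp add: prod_eq_iff)
qed

end

context cform begin

lemma G_ex: "\<exists>g. g \<in> fst T \<and> (\<forall>y\<in>fst T. qf T g y = ip f y)"
proof -
  have "\<exists>g\<in>fst T. \<forall>y\<in>fst T. (\<lambda>y. ip y f) y = qf T y g"
  proof (rule F.riesz[where C = "sqrt (Hs.Q f)"])
    show "ip (x + y) f = ip x f + ip y f" for x y by (simp add: ip_add)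
    show "ip (sc a x) f = a * ip x f" for a x by (simp add: ip_sc)
    show "cmod (ip x f) \<le> sqrt (Hs.Q f) * sqrt (F.Q x)" if x: "x \<in> fst T" for x
    proof -
      have "cmod (ip x f) \<le> sqrt (Hs.Q x) * sqrt (Hs.Q f)" by (rule Hs.CS) auto
      also have "\<dots> \<le> sqrt (F.Q x) * sqrt (Hs.Q f)"
        using HQ_le[OF x] Hs.Q_nonneg[of f] by (intro mult_right_mono real_sqrt_le_mono) auto
      finally show ?thesis by (simp add: mult.commute)
    qed
  qed
  then obtain g where g: "g \<in> fst T" "\<And>y. y \<in> fst T \<Longrightarrow> ip y f = qf T y g" by blast
  have "qf T g y = ip f y" if y: "y \<in> fst T" for y
  proof -
    have "qf T g y = cnj (qf T y g)" using F.q_herm[OF y g(1)] .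
    also have "\<dots> = cnj (ip y f)" using g(2)[OF y] by simp
    also have "\<dots> = ip f y" using ip_cnj[of f y] by simp
    finally show ?thesis .
  qed
  then show ?thesis using g(1) by blast
qed

definition G :: "'a \<Rightarrow> 'a" where "G f = (SOME g. g \<in> fst T \<and> (\<forall>y\<in>fst T. qf T g y = ip f y))"

lemma G_in: "G f \<in> fst T" and G_rep: "y \<in> fst T \<Longrightarrow> qf T (G f) y = ip f y"
  using someI_ex[OF G_ex[of f]] unfolding G_def by auto

lemma G_uniq: assumes g: "g \<in> fst T" and r: "\<And>y. y \<in> fst T \<Longrightarrow> qf T g y = ip f y" shows "g = G f"
proof -
  have d: "g - G f \<in> fst T" using g G_in F.Vdiff by auto
  have "qf T (g - G f) (g - G f) = qf T g (g - G f) - qf T (G f) (g - G f)"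
    by (rule F.q_diff_left) (use g G_in d in auto)
  also have "\<dots> = 0" using r[OF d] G_rep[OF d] by simp
  finally have "g - G f = 0" using F.q_def d by blast
  then show ?thesis by simp
qed

lemma G_add: "G (f + f') = G f + G f'"
proof -
  have "G f + G f' = G (f + f')"
  proof (rule G_uniq)
    show "G f + G f' \<in> fst T" using G_in F.Vadd by auto
    show "qf T (G f + G f') y = ip (f + f') y" if y: "y \<in> fst T" for y
      using F.q_add[OF G_in G_in y] G_rep[OF y] by (simp add: ip_add)
  qed
  then show ?thesis by simp
qed

lemma G_sc: "G (sc a f) = sc a (G f)"
proof -
  have "sc a (G f) = G (sc a f)"
  proof (rule G_uniq)
    show "sc a (G f) \<in> fst T" using G_in F.Vsc by auto
    show "qf T (sc a (G f)) y = ip (sc a f) y" if y: "y \<in> fst T" for y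
      using F.q_sc[OF G_in y] G_rep[OF y] by (simp add: ip_sc)
  qed
  then show ?thesis by simp
qed

lemma G_0: "G 0 = 0"
  using G_sc[of 0 0] by simp

lemma G_inj: "inj G"
proof (rule injI)
  fix f f' assume e: "G f = G f'"
  have "ip (f - f') y = 0" if y: "y \<in> fst T" for y
  proof -
    have "ip (f - f') y = ip f y - ip f' y" by (rule Hs.q_diff_left) auto
    also have "\<dots> = 0" using G_rep[OF y, of f] G_rep[OF y, of f'] e by simp
    finally show ?thesis .
  qed
  then have "f - f' = 0" by (rule dense_zero[OF dd_D(1)[OF dd]])
  then show "f = f'" by simp
qed

lemma core: assumes y: "y \<in> fst T" shows "\<exists>X. (\<forall>n. X n \<in> range G) \<and> F.conv X y"
proof -
  have S: "range G \<subseteq> fst T" "0 \<in> range G" "\<And>x y. x \<in> range G \<Longrightarrow> y \<in> range G \<Longrightarrow> x + y \<in> range G"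
      "\<And>a x. x \<in> range G \<Longrightarrow> sc a x \<in> range G"
    using G_in G_0[symmetric] G_add[symmetric] G_sc[symmetric] by (auto simp: image_iff)
  obtain p X where pX: "F.conv X p" "\<And>n. X n \<in> range G" "\<And>s. s \<in> range G \<Longrightarrow> qf T (y - p) s = 0"
    using F.proj[OF S y] by blast
  have p: "p \<in> fst T" using pX(1) F.conv_in by auto
  have d: "y - p \<in> fst T" using y p F.Vdiff by auto
  have "ip (y - p) (y - p) = qf T (G (y - p)) (y - p)" using G_rep[OF d] by simp
  also have "\<dots> = cnj (qf T (y - p) (G (y - p)))" using F.q_herm[OF d G_in] .
  also have "\<dots> = 0" using pX(3)[of "G (y - p)"] by simp
  finally have "y - p = 0" by (rule ip_def0)
  then show ?thesis using pX by auto
qed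

definition Af :: "'a \<Rightarrow> 'a" where
  "Af x = (if x \<in> range G then inv G x - sc (complex_of_real (kf T)) x else 0)"

lemma Af_G: "Af (G f) = f - sc (complex_of_real (kf T)) (G f)"
  unfolding Af_def using inv_f_f[OF G_inj] by simp

lemma rep: assumes y: "y \<in> fst T" shows "snd T (G f) y = ip (Af (G f)) y"
proof -
  have "snd T (G f) y = qf T (G f) y - complex_of_real (kf T) * ip (G f) y" using t_eq[OF G_in y] .
  also have "\<dots> = ip f y - complex_of_real (kf T) * ip (G f) y" using G_rep[OF y] by simp
  also have "\<dots> = ip (f - sc (complex_of_real (kf T)) (G f)) y"
    using Hs.q_diff_left[of f "sc (complex_of_real (kf T)) (G f)" y] by (simp add: ip_sc)
  finally show ?thesis using Af_G by simp
qed

lemma rangeG_dense: "dense_subspace sc ip (range G)"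
  unfolding dense_subspace_def
proof (intro conjI ballI allI impI)
  show "0 \<in> range G" using G_0 by (metis rangeI)
  show "x + y \<in> range G" if xy: "x \<in> range G" "y \<in> range G" for x y
  proof -
    obtain a b where ab: "x = G a" "y = G b" using xy by blast
    then have "x + y = G (a + b)" by (simp add: G_add)
    then show ?thesis by simp
  qed
  show "sc a x \<in> range G" if xr: "x \<in> range G" for a x
  proof -
    obtain b where b: "x = G b" using xr by blast
    then have "sc a x = G (sc a b)" by (simp add: G_sc)
    then show ?thesis by simp
  qed
  fix x :: 'a and e :: real assume e: "e > 0"
  obtain y where y: "y \<in> fst T" "nrm ip (x - y) < e / 2"
    using ds_D(4)[OF dd_D(1)[OF dd], of "e/2" x] e by auto
  obtain X where X: "\<And>n. X n \<in> range G" "F.conv X y" using core[OF y(1)] by blast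
  have lim: "(\<lambda>n. Hs.Q (X n - y)) \<longlonglongrightarrow> 0" using conv_H[OF X(2)] unfolding Hs.conv_def by simp
  have "\<exists>N. \<forall>n\<ge>N. \<bar>Hs.Q (X n - y)\<bar> < (e/2)^2" by (rule LIMSEQ_0_D[OF lim]) (use e in simp)
  then obtain N where N: "\<bar>Hs.Q (X N - y)\<bar> < (e/2)^2" by blast
  have "nrm ip (y - X N) = sqrt (Hs.Q (X N - y))"
    using nrm_Q Hs.Q_minus[of "X N - y"] by simp
  also have "\<dots> < sqrt ((e/2)^2)" using N Hs.Q_nonneg[of "X N - y"] by (simp only: real_sqrt_less_iff)
  also have "\<dots> = e / 2" using e by simp
  finally have a: "nrm ip (y - X N) < e / 2" .
  have "nrm ip (x - X N) \<le> nrm ip (x - y) + nrm ip (y - X N)"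
    using Hs.tri[of "x - y" "y - X N"] nrm_Q by simp
  then have "nrm ip (x - X N) < e" using a y(2) by simp
  then show "\<exists>y\<in>range G. nrm ip (x - y) < e" using X(1) by blast
qed

definition Aop :: "'a op" where "Aop = (range G, Af)"

lemma Aop_pos_sa: "pos_sa_op sc ip Aop"
  unfolding pos_sa_op_def Aop_def case_prod_conv
proof (intro conjI ballI allI impI)
  show "dense_subspace sc ip (range G)" by (rule rangeG_dense)
  show "Af (x + y) = Af x + Af y" if xy: "x \<in> range G" "y \<in> range G" for x y
  proof -
    obtain a b where ab: "x = G a" "y = G b" using xy by blast
    have "Af (x + y) = Af (G (a + b))" using ab G_add by simp
    also have "\<dots> = (a + b) - sc (complex_of_real (kf T)) (G a + G b)" unfolding Af_G by (simp only: G_add)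
    also have "\<dots> = Af x + Af y" using ab Af_G by (simp add: sc_add algebra_simps)
    finally show ?thesis .
  qed
  show "Af (sc a x) = sc a (Af x)" if xr: "x \<in> range G" for a x
  proof -
    obtain b where b: "x = G b" using xr by blast
    have "Af (sc a x) = Af (G (sc a b))" using b G_sc by simp
    also have "\<dots> = sc a b - sc (complex_of_real (kf T)) (sc a (G b))" unfolding Af_G by (simp only: G_sc)
    also have "sc (complex_of_real (kf T)) (sc a (G b)) = sc a (sc (complex_of_real (kf T)) (G b))"
      by (simp add: sc_mult[symmetric] mult.commute)
    also have "sc a b - sc a (sc (complex_of_real (kf T)) (G b)) = sc a (Af x)"
      using b Af_G by (simp add: sc_diff)
    finally show ?thesis .
  qed
  show "Af x = 0" if "x \<notin> range G" for x using that unfolding Af_def by simp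
  show sym: "ip (Af x) y = ip x (Af y)" if x: "x \<in> range G" and y: "y \<in> range G" for x y
  proof -
    obtain a b where ab: "x = G a" "y = G b" using x y by blast
    have "ip (Af x) y = snd T x y" using rep[OF G_in, of a b] ab by simp
    also have "\<dots> = cnj (snd T y x)" using form_herm[OF dd pos G_in G_in, of a b] ab by simp
    also have "snd T y x = ip (Af y) x" using rep[OF G_in, of b a] ab by simp
    also have "cnj (ip (Af y) x) = ip x (Af y)" using ip_cnj[of x "Af y"] by simp
    finally show ?thesis .
  qed
  show "0 \<le> Re (ip (Af x) x)" if x: "x \<in> range G" for x
  proof -
    obtain a where a: "x = G a" using x by blast
    have "ip (Af x) x = snd T x x" using rep[OF G_in, of a a] a by simp
    then show ?thesis using tpos[OF G_in, of a] a by simp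
  qed
  show "{y. \<exists>z. \<forall>x\<in>range G. ip (Af x) y = ip x z} = range G"
  proof
    show "range G \<subseteq> {y. \<exists>z. \<forall>x\<in>range G. ip (Af x) y = ip x z}"
      using sym by blast
    show "{y. \<exists>z. \<forall>x\<in>range G. ip (Af x) y = ip x z} \<subseteq> range G"
    proof
      fix y assume "y \<in> {y. \<exists>z. \<forall>x\<in>range G. ip (Af x) y = ip x z}"
      then obtain z where z: "\<And>x. x \<in> range G \<Longrightarrow> ip (Af x) y = ip x z" by blast
      define k where "k = complex_of_real (kf T)"
      define w where "w = z + sc k y"
      have "ip f y = ip f (G w)" for f
      proof -
        have "ip (Af (G f)) y = ip (G f) z" using z by blast
        moreover have "ip (Af (G f)) y = ip f y - k * ip (G f) y"
          unfolding Af_G k_def using Hs.q_diff_left[of f "sc (complex_of_real (kf T)) (G f)" y]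
          by (simp add: ip_sc)
        ultimately have "ip f y = ip (G f) z + k * ip (G f) y" by (simp add: algebra_simps)
        also have "\<dots> = ip (G f) w"
          unfolding w_def using Hs.q_add_right[of "G f" z "sc k y"] Hs.q_sc_right[of "G f" y k]
          by (simp add: k_def)
        also have "ip (G f) w = cnj (ip w (G f))" by (rule ip_cnj)
        also have "ip w (G f) = qf T (G w) (G f)" using G_rep[OF G_in] by simp
        also have "cnj (qf T (G w) (G f)) = qf T (G f) (G w)" using F.q_herm[OF G_in G_in, of w f] by simp
        also have "\<dots> = ip f (G w)" using G_rep[OF G_in] by simp
        finally show ?thesis .
      qed
      then have "ip (y - G w) (y - G w) = 0"
        using Hs.q_diff_right[of "y - G w" y "G w"] by simp
      then have "y - G w = 0" by (rule ip_def0)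
      then have "y = G w" by simp
      then show "y \<in> range G" by simp
    qed
  qed
qed

lemma Aop_assoc: "assoc_prop sc ip T Aop"
  unfolding assoc_prop_def
proof (intro conjI)
  show "pos_sa_op sc ip Aop" by (rule Aop_pos_sa)
  show "fst Aop \<subseteq> fst T" unfolding Aop_def using G_in by auto
  show "\<forall>x\<in>fst Aop. \<forall>y\<in>fst T. snd T x y = ip (snd Aop x) y"
    unfolding Aop_def using rep by auto
qed

lemma assoc_op_eq: "assoc_op sc ip T = Aop"
  unfolding assoc_op_def
  using assoc_uniq Aop_assoc unfolding assoc_prop_def by (intro the_equality) blast+

lemma assoc_op_prop: "assoc_prop sc ip T (assoc_op sc ip T)"
  using Aop_assoc assoc_op_eq by simp

lemma assoc_core: assumes "y \<in> fst T" shows "\<exists>X. (\<forall>n. X n \<in> fst (assoc_op sc ip T)) \<and> F.conv X y"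
  using core[OF assms] assoc_op_eq unfolding Aop_def by simp

end

locale two = hsp +
  fixes T S
  assumes cT: "closed_pos_form sc ip T" and cS: "closed_pos_form sc ip S"
    and eq: "assoc_op sc ip T = assoc_op sc ip S"

sublocale two \<subseteq> A: cform sc ip T
proof unfold_locales
  show "dd_form sc ip T" using cT unfolding closed_pos_form_def by auto
  show "positive_form T" using cT unfolding closed_pos_form_def by auto
  show "closed_pos_form sc ip T" by (rule cT)
qed

sublocale two \<subseteq> B: cform sc ip S
proof unfold_locales
  show "dd_form sc ip S" using cS unfolding closed_pos_form_def by auto
  show "positive_form S" using cS unfolding closed_pos_form_def by auto
  show "closed_pos_form sc ip S" by (rule cS)
qed

context two begin

lemma ops: "pos_sa_op sc ip (assoc_op sc ip T)" "fst (assoc_op sc ip T) \<subseteq> fst T" "fst (assoc_op sc ip T) \<subseteq> fst S"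
  "\<And>x y. x \<in> fst (assoc_op sc ip T) \<Longrightarrow> y \<in> fst T \<Longrightarrow> snd T x y = ip (snd (assoc_op sc ip T) x) y"
  "\<And>x y. x \<in> fst (assoc_op sc ip T) \<Longrightarrow> y \<in> fst S \<Longrightarrow> snd S x y = ip (snd (assoc_op sc ip T) x) y"
  using A.assoc_op_prop B.assoc_op_prop eq unfolding assoc_prop_def by auto

lemma BQ_le: assumes v: "v \<in> fst (assoc_op sc ip T)" shows "B.F.Q v \<le> kf S * A.F.Q v"
proof -
  have vT: "v \<in> fst T" and vS: "v \<in> fst S" using v ops by auto
  have st: "snd S v v = snd T v v" using ops(4)[OF v vT] ops(5)[OF v vS] by simp
  have t0: "Re (snd T v v) \<ge> 0" using A.tpos[OF vT] .
  have h0: "Hs.Q v \<ge> 0" by (rule Hs.Q_nonneg) simp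
  have "B.F.Q v = Re (snd T v v) + kf S * Hs.Q v" using B.FQ st by simp
  also have "\<dots> \<le> kf S * Re (snd T v v) + kf S * (kf T * Hs.Q v)"
    using B.k1 A.k1 t0 h0 by (intro add_mono) (auto intro: mult_le_cancel_right1[THEN iffD2] simp: mult_le_cancel_left1 mult_left_mono)
  also have "\<dots> = kf S * A.F.Q v" using A.FQ by (simp add: algebra_simps)
  finally show ?thesis .
qed

lemma transfer: assumes y: "y \<in> fst T"
  shows "y \<in> fst S \<and> (\<exists>X. (\<forall>n. X n \<in> fst (assoc_op sc ip T)) \<and> A.F.conv X y \<and> B.F.conv X y)"
proof -
  obtain X where X: "\<And>n. X n \<in> fst (assoc_op sc ip T)" "A.F.conv X y" using A.assoc_core[OF y] by blast
  have ds: "dense_subspace sc ip (fst (assoc_op sc ip T))" using pos_sa_D(1)[OF ops(1)] .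
  have diffin: "X m - X n \<in> fst (assoc_op sc ip T)" for m n
  proof -
    have "X m + sc (-1) (X n) \<in> fst (assoc_op sc ip T)" using ds_D[OF ds] X(1) by auto
    then show ?thesis by (simp add: sc_m1)
  qed
  have ca: "A.F.cauchy X" using A.F.conv_cauchy[OF X(2)] .
  have cb: "B.F.cauchy X" unfolding B.F.cauchy_def
  proof (intro conjI allI impI)
    show "X n \<in> fst S" for n using X(1) ops(3) by auto
    fix e :: real assume e: "e > 0"
    have kp: "kf S > 0" using B.k1 by simp
    obtain N where N: "\<And>m n. m \<ge> N \<Longrightarrow> n \<ge> N \<Longrightarrow> A.F.Q (X m - X n) < e / kf S"
      using A.F.cauchy_D[OF ca, of "e / kf S"] e kp by auto
    have "B.F.Q (X m - X n) < e" if "m \<ge> N" "n \<ge> N" for m n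
    proof -
      have "B.F.Q (X m - X n) \<le> kf S * A.F.Q (X m - X n)" using BQ_le[OF diffin] .
      also have "\<dots> < kf S * (e / kf S)" by (rule mult_strict_left_mono[OF N[OF that] kp])
      also have "\<dots> = e" using kp by simp
      finally show ?thesis .
    qed
    then show "\<exists>N. \<forall>m\<ge>N. \<forall>n\<ge>N. B.F.Q (X m - X n) < e" by blast
  qed
  obtain y' where y': "B.F.conv X y'" using B.F.complete[OF cb] by blast
  have "y = y'" using Hs.conv_unique[OF A.conv_H[OF X(2)] B.conv_H[OF y']] .
  then show ?thesis using y' X B.F.conv_in by auto
qed

end

context hsp begin

lemma form_inj:
  assumes cT: "closed_pos_form sc ip T" and cS: "closed_pos_form sc ip S"
    and eq: "assoc_op sc ip T = assoc_op sc ip S"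
  shows "T = S"
proof -
  interpret two sc ip T S by unfold_locales (use cT cS eq in auto)
  interpret U: two sc ip S T by unfold_locales (use cT cS eq in auto)
  have dom: "fst T = fst S" using transfer U.transfer by blast
  have vals: "snd T y z = snd S y z" for y z
  proof (cases "y \<in> fst T \<and> z \<in> fst T")
    case True
    obtain X where X: "\<And>n. X n \<in> fst (assoc_op sc ip T)" "A.F.conv X y" "B.F.conv X y"
      using transfer True by blast
    obtain W where W: "\<And>n. W n \<in> fst (assoc_op sc ip T)" "A.F.conv W z" "B.F.conv W z"
      using transfer True by blast
    have l1: "(\<lambda>n. snd T (X n) (W n)) \<longlonglongrightarrow> snd T y z" by (rule A.t_conv[OF X(2) W(2)])
    have l2: "(\<lambda>n. snd S (X n) (W n)) \<longlonglongrightarrow> snd S y z" by (rule B.t_conv[OF X(3) W(3)])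
    have "snd T (X n) (W n) = snd S (X n) (W n)" for n
    proof -
      have "W n \<in> fst T" "W n \<in> fst S" using W(1) ops by auto
      then show ?thesis using ops(4)[OF X(1)] ops(5)[OF X(1)] by simp
    qed
    then have "(\<lambda>n. snd S (X n) (W n)) \<longlonglongrightarrow> snd T y z" using l1 by simp
    then show ?thesis using LIMSEQ_unique[OF _ l2] by blast
  next
    case False
    then show ?thesis using dd_D(6)[OF A.dd] dd_D(6)[OF B.dd] dom by auto
  qed
  have "snd T = snd S" using vals by (intro ext)
  then show ?thesis using dom by (simp add: prod_eq_iff)
qed

end

context ips begin

lemma cauchy_in: "cauchy X \<Longrightarrow> X n \<in> V" unfolding cauchy_def by auto

lemma cauchy_bdd: assumes c: "cauchy X" shows "\<exists>M. \<forall>n. Q (X n) \<le> M"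
proof -
  obtain N where N: "\<And>m n. m \<ge> N \<Longrightarrow> n \<ge> N \<Longrightarrow> Q (X m - X n) < 1" using cauchy_D[OF c, of 1] by auto
  have XV: "X n \<in> V" for n using c cauchy_in by auto
  define M where "M = (\<Sum>i\<le>N. Q (X i)) + 2 + 2 * Q (X N)"
  have s0: "(\<Sum>i\<le>N. Q (X i)) \<ge> 0" by (intro sum_nonneg) (simp add: Q_nonneg XV)
  have qN: "Q (X N) \<ge> 0" using Q_nonneg XV by auto
  have "Q (X n) \<le> M" for n
  proof (cases "n \<le> N")
    case True
    have "Q (X n) \<le> (\<Sum>i\<le>N. Q (X i))"
      by (rule member_le_sum) (use True Q_nonneg XV in auto)
    then show ?thesis unfolding M_def using qN by simp
  next
    case False
    have "X n = (X n - X N) + X N" by simp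
    then have "Q (X n) \<le> 2 * Q (X n - X N) + 2 * Q (X N)"
      using Q_add_le[of "X n - X N" "X N"] XV Vdiff by metis
    also have "\<dots> \<le> 2 + 2 * Q (X N)" using N[of n N] False by simp
    finally show ?thesis unfolding M_def using s0 by simp
  qed
  then show ?thesis by blast
qed

lemma cauchy_add: assumes "cauchy X" "cauchy Y" shows "cauchy (\<lambda>n. X n + Y n)"
  unfolding cauchy_def
proof (intro conjI allI impI)
  show "X n + Y n \<in> V" for n using assms cauchy_in Vadd by auto
  fix e :: real assume e: "e > 0"
  obtain N1 where N1: "\<And>m n. m \<ge> N1 \<Longrightarrow> n \<ge> N1 \<Longrightarrow> Q (X m - X n) < e / 4" using cauchy_D[OF assms(1), of "e/4"] e by auto
  obtain N2 where N2: "\<And>m n. m \<ge> N2 \<Longrightarrow> n \<ge> N2 \<Longrightarrow> Q (Y m - Y n) < e / 4" using cauchy_D[OF assms(2), of "e/4"] e by auto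
  have "Q ((X m + Y m) - (X n + Y n)) < e" if "m \<ge> max N1 N2" "n \<ge> max N1 N2" for m n
  proof -
    have "(X m + Y m) - (X n + Y n) = (X m - X n) + (Y m - Y n)" by simp
    then have "Q ((X m + Y m) - (X n + Y n)) \<le> 2 * Q (X m - X n) + 2 * Q (Y m - Y n)"
      using Q_add_le[of "X m - X n" "Y m - Y n"] assms cauchy_in Vdiff by metis
    also have "\<dots> < e" using N1[of m n] N2[of m n] that by simp
    finally show ?thesis .
  qed
  then show "\<exists>N. \<forall>m\<ge>N. \<forall>n\<ge>N. Q ((X m + Y m) - (X n + Y n)) < e" by blast
qed

lemma cauchy_sc: assumes "cauchy X" shows "cauchy (\<lambda>n. sc a (X n))"
  unfolding cauchy_def
proof (intro conjI allI impI)
  show "sc a (X n) \<in> V" for n using assms cauchy_in Vsc by auto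
  fix e :: real assume e: "e > 0"
  have p: "(cmod a)^2 + 1 > 0" by (simp add: add_nonneg_pos)
  obtain N where N: "\<And>m n. m \<ge> N \<Longrightarrow> n \<ge> N \<Longrightarrow> Q (X m - X n) < e / ((cmod a)^2 + 1)"
    using cauchy_D[OF assms, of "e / ((cmod a)^2 + 1)"] e p by auto
  have "Q (sc a (X m) - sc a (X n)) < e" if "m \<ge> N" "n \<ge> N" for m n
  proof -
    have q0: "Q (X m - X n) \<ge> 0" using Q_nonneg assms cauchy_in Vdiff by auto
    have "Q (sc a (X m) - sc a (X n)) = (cmod a)^2 * Q (X m - X n)"
      using Q_sc[of "X m - X n" a] assms cauchy_in Vdiff by (simp add: sc_diff)
    also have "\<dots> \<le> ((cmod a)^2 + 1) * Q (X m - X n)" using q0 by (simp add: mult_right_mono)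
    also have "\<dots> < ((cmod a)^2 + 1) * (e / ((cmod a)^2 + 1))" by (rule mult_strict_left_mono[OF N[OF that] p])
    also have "\<dots> = e" using p by simp
    finally show ?thesis .
  qed
  then show "\<exists>N. \<forall>m\<ge>N. \<forall>n\<ge>N. Q (sc a (X m) - sc a (X n)) < e" by blast
qed

lemma cauchy_diff: assumes "cauchy X" "cauchy Y" shows "cauchy (\<lambda>n. X n - Y n)"
  using cauchy_add[OF assms(1) cauchy_sc[OF assms(2), of "-1"]] by (simp add: sc_m1)

lemma cauchy_const: "x \<in> V \<Longrightarrow> cauchy (\<lambda>n. x)"
  unfolding cauchy_def by (simp add: V0)

lemma qnull_bdd: assumes "\<And>n. A n \<in> V" "\<And>n. B n \<in> V" "(\<lambda>n. Q (A n)) \<longlonglongrightarrow> 0" "\<And>n. Q (B n) \<le> M"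
  shows "(\<lambda>n. q (A n) (B n)) \<longlonglongrightarrow> 0"
proof (rule null_cmp)
  show "norm (q (A n) (B n)) \<le> sqrt (Q (A n)) * sqrt M" for n
  proof -
    have "norm (q (A n) (B n)) \<le> sqrt (Q (A n)) * sqrt (Q (B n))" using CS assms by auto
    also have "\<dots> \<le> sqrt (Q (A n)) * sqrt M" using assms(4) Q_nonneg[OF assms(1)] by (intro mult_left_mono real_sqrt_le_mono) auto
    finally show ?thesis .
  qed
  have "(\<lambda>n. sqrt (Q (A n)) * sqrt M) \<longlonglongrightarrow> sqrt 0 * sqrt M"
    using assms by (intro tendsto_intros) auto
  then show "(\<lambda>n. sqrt (Q (A n)) * sqrt M) \<longlonglongrightarrow> 0" by simp
qed

lemma q_split: assumes "a \<in> V" "b \<in> V" "c \<in> V" "d \<in> V"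
  shows "q a b - q c d = q (a - c) b + q c (b - d)"
  using q_diff_left[of a c b] q_diff_right[of c b d] assms by simp

lemma prod_diff_null:
  assumes X: "cauchy X" and W: "cauchy W" and X': "cauchy X'" and W': "cauchy W'"
    and dX: "(\<lambda>n. Q (X n - X' n)) \<longlonglongrightarrow> 0" and dW: "(\<lambda>n. Q (W n - W' n)) \<longlonglongrightarrow> 0"
  shows "(\<lambda>n. q (X n) (W n) - q (X' n) (W' n)) \<longlonglongrightarrow> 0"
proof -
  have in1: "\<And>n. X n \<in> V" "\<And>n. W n \<in> V" "\<And>n. X' n \<in> V" "\<And>n. W' n \<in> V"
    using assms cauchy_in by auto
  obtain MW where MW: "\<And>n. Q (W n) \<le> MW" using cauchy_bdd[OF W] by blast
  obtain MX where MX: "\<And>n. Q (X' n) \<le> MX" using cauchy_bdd[OF X'] by blast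
  have t1: "(\<lambda>n. q (X n - X' n) (W n)) \<longlonglongrightarrow> 0"
    by (rule qnull_bdd[OF _ _ dX MW]) (use in1 Vdiff in auto)
  have t2: "(\<lambda>n. q (W n - W' n) (X' n)) \<longlonglongrightarrow> 0"
    by (rule qnull_bdd[OF _ _ dW MX]) (use in1 Vdiff in auto)
  have "(\<lambda>n. q (X n - X' n) (W n) + cnj (q (W n - W' n) (X' n))) \<longlonglongrightarrow> 0 + cnj 0"
    by (intro tendsto_intros t1 t2)
  moreover have "q (X n) (W n) - q (X' n) (W' n) = q (X n - X' n) (W n) + cnj (q (W n - W' n) (X' n))" for n
  proof -
    have "q (X' n) (W n - W' n) = cnj (q (W n - W' n) (X' n))" using q_herm[of "W n - W' n" "X' n"] in1 Vdiff by auto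
    then show ?thesis using q_split[OF in1(1) in1(2) in1(3) in1(4)] by simp
  qed
  ultimately show ?thesis by simp
qed

lemma prod_conv: assumes X: "cauchy X" and W: "cauchy W" shows "convergent (\<lambda>n. q (X n) (W n))"
proof -
  have in1: "\<And>n. X n \<in> V" "\<And>n. W n \<in> V" using assms cauchy_in by auto
  obtain MW where MW: "\<And>n. Q (W n) \<le> MW" using cauchy_bdd[OF W] by blast
  obtain MX where MX: "\<And>n. Q (X n) \<le> MX" using cauchy_bdd[OF X] by blast
  have MW0: "MW \<ge> 0" using MW[of 0] Q_nonneg in1 by (meson order_trans)
  have MX0: "MX \<ge> 0" using MX[of 0] Q_nonneg in1 by (meson order_trans)
  define S where "S = sqrt MW + sqrt MX + 1"
  have S0: "S > 0" unfolding S_def using MW0 MX0 by (simp add: add_nonneg_pos)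
  have "Cauchy (\<lambda>n. q (X n) (W n))"
  proof (rule CauchyI)
    fix e :: real assume e: "e > 0"
    define d where "d = (e / S)^2"
    have d0: "d > 0" unfolding d_def using e S0 by simp
    have sd: "sqrt d = e / S" unfolding d_def using e S0 by simp
    obtain N1 where N1: "\<And>m n. m \<ge> N1 \<Longrightarrow> n \<ge> N1 \<Longrightarrow> Q (X m - X n) < d" using cauchy_D[OF X d0] by auto
    obtain N2 where N2: "\<And>m n. m \<ge> N2 \<Longrightarrow> n \<ge> N2 \<Longrightarrow> Q (W m - W n) < d" using cauchy_D[OF W d0] by auto
    have "norm (q (X m) (W m) - q (X n) (W n)) < e" if "m \<ge> max N1 N2" "n \<ge> max N1 N2" for m n
    proof -
      have "norm (q (X m) (W m) - q (X n) (W n)) = norm (q (X m - X n) (W m) + q (X n) (W m - W n))"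
        using q_split[OF in1(1) in1(2) in1(1) in1(2)] by simp
      also have "\<dots> \<le> norm (q (X m - X n) (W m)) + norm (q (X n) (W m - W n))" by (rule norm_triangle_ineq)
      also have "norm (q (X m - X n) (W m)) \<le> sqrt (Q (X m - X n)) * sqrt (Q (W m))"
        using CS in1 Vdiff by auto
      also have "\<dots> \<le> sqrt d * sqrt MW"
        using N1[of m n] that MW[of m] Q_nonneg in1 Vdiff d0
        by (intro mult_mono real_sqrt_le_mono) auto
      also have "norm (q (X n) (W m - W n)) \<le> sqrt (Q (X n)) * sqrt (Q (W m - W n))"
        using CS in1 Vdiff by auto
      also have "\<dots> \<le> sqrt MX * sqrt d"
        using N2[of m n] that MX[of n] Q_nonneg in1 Vdiff d0 MX0
        by (intro mult_mono real_sqrt_le_mono) auto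
      also have "sqrt d * sqrt MW + sqrt MX * sqrt d = sqrt d * (S - 1)" unfolding S_def by (simp add: algebra_simps)
      also have "\<dots> < sqrt d * S" using d0 by simp
      also have "\<dots> = e" using sd S0 by simp
      finally show ?thesis by simp
    qed
    then show "\<exists>M. \<forall>m\<ge>M. \<forall>n\<ge>M. norm (q (X m) (W m) - q (X n) (W n)) < e" by blast
  qed
  then show ?thesis by (rule Cauchy_convergent)
qed

end

definition q1 :: "('h::ab_group_add \<Rightarrow> 'h \<Rightarrow> complex) \<Rightarrow> 'h op \<Rightarrow> 'h \<Rightarrow> 'h \<Rightarrow> complex" where "q1 ip A x y = ip (snd A x + x) y"

lemma q1_ips: assumes h: "hsp sc ip" and psa: "pos_sa_op sc ip A"
  shows "ips sc ip (fst A) (q1 ip A)"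
proof -
  interpret hsp sc ip by (rule h)
  note p = pos_sa_D[OF psa]
  note s = ds_D[OF p(1)]
  show ?thesis
  proof unfold_locales
    show "0 \<in> fst A" using s by auto
    show "\<And>x y. x \<in> fst A \<Longrightarrow> y \<in> fst A \<Longrightarrow> x + y \<in> fst A" using s by auto
    show "\<And>x a. x \<in> fst A \<Longrightarrow> sc a x \<in> fst A" using s by auto
    show "q1 ip A (x + y) z = q1 ip A x z + q1 ip A y z" if "x \<in> fst A" "y \<in> fst A" "z \<in> fst A" for x y z
      unfolding q1_def using p(2)[OF that(1,2)] by (simp add: ip_add algebra_simps)
    show "q1 ip A (sc a x) y = a * q1 ip A x y" if "x \<in> fst A" "y \<in> fst A" for x y a
      unfolding q1_def using p(3)[OF that(1)] by (simp add: ip_sc sc_add[symmetric])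
    show "q1 ip A y x = cnj (q1 ip A x y)" if x: "x \<in> fst A" and y: "y \<in> fst A" for x y
    proof -
      have "q1 ip A y x = ip (snd A y) x + ip y x" unfolding q1_def by (simp add: ip_add)
      also have "ip (snd A y) x = cnj (ip x (snd A y))" by (rule ip_cnj)
      also have "ip x (snd A y) = ip (snd A x) y" using p(6)[OF x y] by simp
      also have "ip y x = cnj (ip x y)" by (rule ip_cnj)
      finally show ?thesis unfolding q1_def by (simp add: ip_add)
    qed
    show "0 \<le> Re (q1 ip A x x)" if x: "x \<in> fst A" for x
      unfolding q1_def using p(7)[OF x] ip_pos[of x] by (simp add: ip_add)
    show "x = 0" if x: "x \<in> fst A" and q0: "q1 ip A x x = 0" for x
    proof -
      have "ip (snd A x) x + ip x x = 0" using q0 unfolding q1_def by (simp add: ip_add)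
      then have "Re (ip (snd A x) x + ip x x) = 0" by simp
      then have "Re (ip (snd A x) x) + Re (ip x x) = 0" by simp
      then have "Re (ip x x) = 0" using p(7)[OF x] ip_pos[of x] by simp
      then have "Hs.Q x = 0" unfolding Hs.Q_def .
      then show ?thesis using Hs.Q_eq0 by simp
    qed
  qed
qed

locale sop = hsp +
  fixes A
  assumes psa: "pos_sa_op sc ip A"

sublocale sop \<subseteq> E: ips sc ip "fst A" "q1 ip A"
  by (rule q1_ips[OF _ psa]) unfold_locales

context sop begin

lemma EQ: "E.Q x = Re (ip (snd A x) x) + Hs.Q x"
  unfolding E.Q_def Hs.Q_def q1_def by (simp add: ip_add)

lemma HQ_le_E: "x \<in> fst A \<Longrightarrow> Hs.Q x \<le> E.Q x"
  using EQ pos_sa_D(7)[OF psa] by simp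

lemma E_cauchy_H: assumes "E.cauchy X" shows "Hs.cauchy X"
  unfolding Hs.cauchy_def
proof (intro conjI allI impI)
  fix e :: real assume "e > 0"
  then obtain N where N: "\<And>m n. m \<ge> N \<Longrightarrow> n \<ge> N \<Longrightarrow> E.Q (X m - X n) < e"
    using E.cauchy_D[OF assms] by blast
  have "X m - X n \<in> fst A" for m n using assms E.cauchy_in E.Vdiff by auto
  then show "\<exists>N. \<forall>m\<ge>N. \<forall>n\<ge>N. Hs.Q (X m - X n) < e"
    using N HQ_le_E by (meson le_less_trans)
qed simp

lemma closable: assumes c: "E.cauchy X" and h: "Hs.conv X 0" shows "(\<lambda>n. E.Q (X n)) \<longlonglongrightarrow> 0"
  unfolding LIMSEQ_iff
proof (intro allI impI)
  fix r :: real assume r: "r > 0"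
  have XA: "X n \<in> fst A" for n using c E.cauchy_in by auto
  obtain N where N: "\<And>m n. m \<ge> N \<Longrightarrow> n \<ge> N \<Longrightarrow> E.Q (X m - X n) < r / 2"
    using E.cauchy_D[OF c, of "r/2"] r by auto
  have "E.Q (X n) \<le> r / 2" if n: "n \<ge> N" for n
  proof -
    define c0 where "c0 = X n"
    have c0A: "c0 \<in> fst A" using XA c0_def by simp
    have l1: "(\<lambda>m. q1 ip A c0 (X m)) \<longlonglongrightarrow> 0"
    proof -
      have "(\<lambda>m. ip (snd A c0 + c0) (X m)) \<longlonglongrightarrow> ip (snd A c0 + c0) 0"
        by (rule Hs.conv_q[OF Hs.conv_const h]) simp
      then show ?thesis unfolding q1_def by simp
    qed
    have l2: "(\<lambda>m. cmod (q1 ip A c0 c0 - q1 ip A c0 (X m))) \<longlonglongrightarrow> cmod (q1 ip A c0 c0 - 0)"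
      by (intro tendsto_intros l1)
    have qc: "q1 ip A c0 c0 = complex_of_real (E.Q c0)" using E.q_real[OF c0A] .
    have Q0: "E.Q c0 \<ge> 0" using E.Q_nonneg[OF c0A] .
    have bnd: "cmod (q1 ip A c0 c0 - q1 ip A c0 (X m)) \<le> sqrt (E.Q c0) * sqrt (r / 2)" if m: "m \<ge> N" for m
    proof -
      have "q1 ip A c0 c0 - q1 ip A c0 (X m) = q1 ip A c0 (c0 - X m)"
        using E.q_diff_right[OF c0A c0A XA] by simp
      then have "cmod (q1 ip A c0 c0 - q1 ip A c0 (X m)) \<le> sqrt (E.Q c0) * sqrt (E.Q (c0 - X m))"
        using E.CS[OF c0A E.Vdiff[OF c0A XA]] by simp
      also have "\<dots> \<le> sqrt (E.Q c0) * sqrt (r / 2)"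
        using N[OF n m] c0_def Q0 by (intro mult_left_mono real_sqrt_le_mono) auto
      finally show ?thesis .
    qed
    have "cmod (q1 ip A c0 c0 - 0) \<le> sqrt (E.Q c0) * sqrt (r / 2)"
      by (rule LIMSEQ_le_const2[OF l2]) (use bnd in auto)
    then have le: "E.Q c0 \<le> sqrt (E.Q c0) * sqrt (r / 2)" using qc Q0 by simp
    have "sqrt (E.Q c0) \<le> sqrt (r / 2)"
    proof (cases "E.Q c0 = 0")
      case True then show ?thesis using r by simp
    next
      case False
      then have sp: "sqrt (E.Q c0) > 0" using Q0 by simp
      have e: "sqrt (E.Q c0) * sqrt (E.Q c0) = E.Q c0" using Q0 by simp
      have "sqrt (E.Q c0) * sqrt (E.Q c0) \<le> sqrt (E.Q c0) * sqrt (r / 2)"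
        unfolding e by (rule le)
      then show ?thesis using mult_le_cancel_left_pos[OF sp] by blast
    qed
    then have "E.Q c0 \<le> r / 2" using Q0 r by simp
    then show ?thesis using c0_def by simp
  qed
  then have "norm (E.Q (X n) - 0) < r" if "n \<ge> N" for n
    using that E.Q_nonneg[OF XA] r by fastforce
  then show "\<exists>N. \<forall>n\<ge>N. norm (E.Q (X n) - 0) < r" by blast
qed

definition approx :: "'a \<Rightarrow> (nat \<Rightarrow> 'a) \<Rightarrow> bool" where
  "approx y X \<longleftrightarrow> E.cauchy X \<and> Hs.conv X y"

definition Dom :: "'a set" where "Dom = {y. \<exists>X. approx y X}"

definition sx :: "'a \<Rightarrow> nat \<Rightarrow> 'a" where "sx y = (SOME X. approx y X)"

definition tv :: "'a \<Rightarrow> 'a \<Rightarrow> complex" where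
  "tv y z = (if y \<in> Dom \<and> z \<in> Dom then lim (\<lambda>n. q1 ip A (sx y n) (sx z n)) - ip y z else 0)"

lemma sx: assumes "y \<in> Dom" shows "approx y (sx y)"
proof -
  from assms obtain X where "approx y X" unfolding Dom_def by auto
  then show ?thesis unfolding sx_def by (rule someI[of "approx y" X])
qed

lemma approx_diff0: assumes "approx y X" "approx y X'" shows "(\<lambda>n. E.Q (X n - X' n)) \<longlonglongrightarrow> 0"
proof (rule closable)
  show "E.cauchy (\<lambda>n. X n - X' n)" using assms E.cauchy_diff unfolding approx_def by blast
  show "Hs.conv (\<lambda>n. X n - X' n) 0" using Hs.conv_diff[of X y X' y] assms unfolding approx_def by simp
qed

lemma tv_lim: assumes y: "approx y X" and z: "approx z W"
  shows "(\<lambda>n. q1 ip A (X n) (W n)) \<longlonglongrightarrow> tv y z + ip y z"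
proof -
  have yD: "y \<in> Dom" and zD: "z \<in> Dom" using y z unfolding Dom_def by auto
  have sy: "approx y (sx y)" and sz: "approx z (sx z)" using sx yD zD by auto
  have cv: "convergent (\<lambda>n. q1 ip A (sx y n) (sx z n))"
    by (rule E.prod_conv) (use sy sz in \<open>auto simp: approx_def\<close>)
  then have l0: "(\<lambda>n. q1 ip A (sx y n) (sx z n)) \<longlonglongrightarrow> tv y z + ip y z"
    unfolding tv_def using yD zD by (simp add: convergent_LIMSEQ_iff)
  have d: "(\<lambda>n. q1 ip A (X n) (W n) - q1 ip A (sx y n) (sx z n)) \<longlonglongrightarrow> 0"
    by (rule E.prod_diff_null) (use y z sy sz approx_diff0 in \<open>auto simp: approx_def\<close>)
  have "(\<lambda>n. (q1 ip A (X n) (W n) - q1 ip A (sx y n) (sx z n)) + q1 ip A (sx y n) (sx z n)) \<longlonglongrightarrow> 0 + (tv y z + ip y z)"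
    by (intro tendsto_intros d l0)
  then show ?thesis by simp
qed

end

context sop begin

lemma approx_const: "x \<in> fst A \<Longrightarrow> approx x (\<lambda>n. x)"
  unfolding approx_def using E.cauchy_const Hs.conv_const by auto

lemma approx_add: "approx y X \<Longrightarrow> approx y' X' \<Longrightarrow> approx (y + y') (\<lambda>n. X n + X' n)"
  unfolding approx_def using E.cauchy_add Hs.conv_add by auto

lemma approx_sc: "approx y X \<Longrightarrow> approx (sc a y) (\<lambda>n. sc a (X n))"
  unfolding approx_def using E.cauchy_sc Hs.conv_sc by auto

lemma approx_diff: "approx y X \<Longrightarrow> approx y' X' \<Longrightarrow> approx (y - y') (\<lambda>n. X n - X' n)"
  unfolding approx_def using E.cauchy_diff Hs.conv_diff by auto

lemma approx_in: "approx y X \<Longrightarrow> X n \<in> fst A"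
  unfolding approx_def using E.cauchy_in by auto

lemma A_sub_Dom: "fst A \<subseteq> Dom"
  unfolding Dom_def using approx_const by blast

lemma Dom_ds: "dense_subspace sc ip Dom"
proof -
  note s = ds_D[OF pos_sa_D(1)[OF psa]]
  show ?thesis unfolding dense_subspace_def
  proof (intro conjI ballI allI impI)
    show "0 \<in> Dom" using A_sub_Dom s by auto
    show "x + y \<in> Dom" if "x \<in> Dom" "y \<in> Dom" for x y
      using that approx_add unfolding Dom_def by blast
    show "sc a x \<in> Dom" if "x \<in> Dom" for a x
      using that approx_sc unfolding Dom_def by blast
    show "\<exists>y\<in>Dom. nrm ip (x - y) < e" if "e > 0" for x e
      using s(4)[OF that, of x] A_sub_Dom by blast
  qed
qed

lemma tv_E: assumes x: "x \<in> fst A" and z: "z \<in> Dom" shows "tv x z = ip (snd A x) z"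
proof -
  have sz: "approx z (sx z)" using sx[OF z] .
  have l1: "(\<lambda>n. q1 ip A x (sx z n)) \<longlonglongrightarrow> tv x z + ip x z" by (rule tv_lim[OF approx_const[OF x] sz])
  have "(\<lambda>n. ip (snd A x + x) (sx z n)) \<longlonglongrightarrow> ip (snd A x + x) z"
    by (rule Hs.conv_q[OF Hs.conv_const]) (use sz in \<open>auto simp: approx_def\<close>)
  then have l2: "(\<lambda>n. q1 ip A x (sx z n)) \<longlonglongrightarrow> ip (snd A x + x) z" unfolding q1_def .
  have "tv x z + ip x z = ip (snd A x + x) z" using LIMSEQ_unique[OF l1 l2] .
  then show ?thesis by (simp add: ip_add)
qed

definition T0 :: "'a form" where "T0 = (Dom, tv)"

lemma tv_off: "x \<notin> Dom \<or> y \<notin> Dom \<Longrightarrow> tv x y = 0" unfolding tv_def by auto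

lemma T0_dd: "dd_form sc ip T0"
  unfolding dd_form_def T0_def case_prod_conv
proof (intro conjI ballI allI impI)
  show "dense_subspace sc ip Dom" by (rule Dom_ds)
  show "tv x y = 0" if "x \<notin> Dom \<or> y \<notin> Dom" for x y using tv_off that .
  fix x y z a
  show "tv (x + y) z = tv x z + tv y z" if xyz: "x \<in> Dom" "y \<in> Dom" "z \<in> Dom"
  proof -
    have a: "approx x (sx x)" "approx y (sx y)" "approx z (sx z)" using sx xyz by auto
    have l1: "(\<lambda>n. q1 ip A (sx x n + sx y n) (sx z n)) \<longlonglongrightarrow> tv (x + y) z + ip (x + y) z"
      by (rule tv_lim[OF approx_add[OF a(1) a(2)] a(3)])
    have "(\<lambda>n. q1 ip A (sx x n) (sx z n) + q1 ip A (sx y n) (sx z n)) \<longlonglongrightarrow> (tv x z + ip x z) + (tv y z + ip y z)"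
      by (intro tendsto_intros tv_lim a)
    moreover have "q1 ip A (sx x n + sx y n) (sx z n) = q1 ip A (sx x n) (sx z n) + q1 ip A (sx y n) (sx z n)" for n
      by (rule E.q_add) (use a approx_in in auto)
    ultimately have l2: "(\<lambda>n. q1 ip A (sx x n + sx y n) (sx z n)) \<longlonglongrightarrow> (tv x z + ip x z) + (tv y z + ip y z)" by simp
    show ?thesis using LIMSEQ_unique[OF l1 l2] by (simp add: ip_add)
  qed
  show "tv (sc a x) y = a * tv x y" if xy: "x \<in> Dom" "y \<in> Dom"
  proof -
    have b: "approx x (sx x)" "approx y (sx y)" using sx xy by auto
    have l1: "(\<lambda>n. q1 ip A (sc a (sx x n)) (sx y n)) \<longlonglongrightarrow> tv (sc a x) y + ip (sc a x) y"
      by (rule tv_lim[OF approx_sc[OF b(1)] b(2)])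
    have "(\<lambda>n. a * q1 ip A (sx x n) (sx y n)) \<longlonglongrightarrow> a * (tv x y + ip x y)"
      by (intro tendsto_intros tv_lim b)
    moreover have "q1 ip A (sc a (sx x n)) (sx y n) = a * q1 ip A (sx x n) (sx y n)" for n
      by (rule E.q_sc) (use b approx_in in auto)
    ultimately have l2: "(\<lambda>n. q1 ip A (sc a (sx x n)) (sx y n)) \<longlonglongrightarrow> a * (tv x y + ip x y)" by simp
    show ?thesis using LIMSEQ_unique[OF l1 l2] by (simp add: ip_sc algebra_simps)
  qed
  show "tv x (y + z) = tv x y + tv x z" if xyz: "x \<in> Dom" "y \<in> Dom" "z \<in> Dom"
  proof -
    have a: "approx x (sx x)" "approx y (sx y)" "approx z (sx z)" using sx xyz by auto
    have l1: "(\<lambda>n. q1 ip A (sx x n) (sx y n + sx z n)) \<longlonglongrightarrow> tv x (y + z) + ip x (y + z)"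
      by (rule tv_lim[OF a(1) approx_add[OF a(2) a(3)]])
    have "(\<lambda>n. q1 ip A (sx x n) (sx y n) + q1 ip A (sx x n) (sx z n)) \<longlonglongrightarrow> (tv x y + ip x y) + (tv x z + ip x z)"
      by (intro tendsto_intros tv_lim a)
    moreover have "q1 ip A (sx x n) (sx y n + sx z n) = q1 ip A (sx x n) (sx y n) + q1 ip A (sx x n) (sx z n)" for n
      by (rule E.q_add_right) (use a approx_in in auto)
    ultimately have l2: "(\<lambda>n. q1 ip A (sx x n) (sx y n + sx z n)) \<longlonglongrightarrow> (tv x y + ip x y) + (tv x z + ip x z)" by simp
    have "ip x (y + z) = ip x y + ip x z" by (rule Hs.q_add_right) auto
    then show ?thesis using LIMSEQ_unique[OF l1 l2] by simp
  qed
  show "tv x (sc a y) = cnj a * tv x y" if xy: "x \<in> Dom" "y \<in> Dom"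
  proof -
    have b: "approx x (sx x)" "approx y (sx y)" using sx xy by auto
    have l1: "(\<lambda>n. q1 ip A (sx x n) (sc a (sx y n))) \<longlonglongrightarrow> tv x (sc a y) + ip x (sc a y)"
      by (rule tv_lim[OF b(1) approx_sc[OF b(2)]])
    have "(\<lambda>n. cnj a * q1 ip A (sx x n) (sx y n)) \<longlonglongrightarrow> cnj a * (tv x y + ip x y)"
      by (intro tendsto_intros tv_lim b)
    moreover have "q1 ip A (sx x n) (sc a (sx y n)) = cnj a * q1 ip A (sx x n) (sx y n)" for n
      by (rule E.q_sc_right) (use b approx_in in auto)
    ultimately have l2: "(\<lambda>n. q1 ip A (sx x n) (sc a (sx y n))) \<longlonglongrightarrow> cnj a * (tv x y + ip x y)" by simp
    have "ip x (sc a y) = cnj a * ip x y" by (rule Hs.q_sc_right) auto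
    then show ?thesis using LIMSEQ_unique[OF l1 l2] by (simp add: algebra_simps)
  qed
qed

lemma T0_pos: "positive_form T0"
  unfolding positive_form_def T0_def fst_conv snd_conv
proof
  fix y assume y: "y \<in> Dom"
  have b: "approx y (sx y)" using sx y by auto
  have l1: "(\<lambda>n. q1 ip A (sx y n) (sx y n)) \<longlonglongrightarrow> tv y y + ip y y" by (rule tv_lim[OF b b])
  have qr: "q1 ip A (sx y n) (sx y n) = complex_of_real (E.Q (sx y n))" for n
    by (rule E.q_real) (use b approx_in in auto)
  have ipr: "ip y y = complex_of_real (Hs.Q y)" by (rule Hs.q_real) simp
  have "(\<lambda>n. Im (q1 ip A (sx y n) (sx y n))) \<longlonglongrightarrow> Im (tv y y + ip y y)" by (intro tendsto_intros l1)
  then have "(\<lambda>n. 0) \<longlonglongrightarrow> Im (tv y y + ip y y)" using qr by simp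
  then have im: "Im (tv y y + ip y y) = 0" using LIMSEQ_unique[OF _ tendsto_const] by metis
  have l2: "(\<lambda>n. E.Q (sx y n)) \<longlonglongrightarrow> Re (tv y y + ip y y)"
    using tendsto_Re[OF l1] qr by simp
  have l3: "(\<lambda>n. Hs.Q (sx y n)) \<longlonglongrightarrow> Hs.Q y" using Hs.conv_Q b unfolding approx_def by blast
  have "Hs.Q y \<le> Re (tv y y + ip y y)"
    by (rule LIMSEQ_le[OF l3 l2]) (use HQ_le_E b approx_in in auto)
  then show "Im (tv y y) = 0 \<and> 0 \<le> Re (tv y y)" using im ipr by simp
qed

end

sublocale sop \<subseteq> D0: dform sc ip T0
  by unfold_locales (rule T0_dd, rule T0_pos)

context sop begin

lemma D0Q: "D0.F.Q v = Re (tv v v) + kf T0 * Hs.Q v"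
  using D0.FQ unfolding T0_def by simp

lemma approx_conv: assumes a: "approx y X" shows "D0.F.conv X y"
proof -
  have XA: "X n \<in> fst A" for n using a approx_in by auto
  have yD: "y \<in> Dom" using a unfolding Dom_def by auto
  have XD: "X n \<in> Dom" for n using XA A_sub_Dom by auto
  have c: "E.cauchy X" and h: "Hs.conv X y" using a unfolding approx_def by auto
  have k: "kf T0 \<ge> 1" using D0.k1 .
  have lim_n: "(\<lambda>m. E.Q (X n - X m)) \<longlonglongrightarrow> Re (tv (X n - y) (X n - y)) + Hs.Q (X n - y)" for n
  proof -
    have ap: "approx (X n - y) (\<lambda>m. X n - X m)" by (rule approx_diff[OF approx_const[OF XA] a])
    have "(\<lambda>m. q1 ip A (X n - X m) (X n - X m)) \<longlonglongrightarrow> tv (X n - y) (X n - y) + ip (X n - y) (X n - y)"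
      by (rule tv_lim[OF ap ap])
    then have "(\<lambda>m. Re (q1 ip A (X n - X m) (X n - X m))) \<longlonglongrightarrow> Re (tv (X n - y) (X n - y) + ip (X n - y) (X n - y))"
      by (intro tendsto_intros)
    then show ?thesis unfolding E.Q_def Hs.Q_def by simp
  qed
  have "(\<lambda>n. D0.F.Q (X n - y)) \<longlonglongrightarrow> 0"
    unfolding LIMSEQ_iff
  proof (intro allI impI)
    fix r :: real assume r: "r > 0"
    obtain N1 where N1: "\<And>m n. m \<ge> N1 \<Longrightarrow> n \<ge> N1 \<Longrightarrow> E.Q (X m - X n) < r / 2"
      using E.cauchy_D[OF c, of "r/2"] r by auto
    have hl: "(\<lambda>n. kf T0 * Hs.Q (X n - y)) \<longlonglongrightarrow> kf T0 * 0"
      using h unfolding Hs.conv_def by (intro tendsto_intros) auto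
    obtain N2 where N2: "\<And>n. n \<ge> N2 \<Longrightarrow> \<bar>kf T0 * Hs.Q (X n - y)\<bar> < r / 2"
      using LIMSEQ_0_D[of "\<lambda>n. kf T0 * Hs.Q (X n - y)" "r/2"] hl r by auto
    have "norm (D0.F.Q (X n - y) - 0) < r" if n: "n \<ge> max N1 N2" for n
    proof -
      have dv: "X n - y \<in> Dom" using XD yD D0.F.Vdiff T0_def by auto
      have "Re (tv (X n - y) (X n - y)) + Hs.Q (X n - y) \<le> r / 2"
        by (rule LIMSEQ_le_const2[OF lim_n]) (use N1 n in \<open>auto intro!: exI[of _ N1] less_imp_le\<close>)
      moreover have "Hs.Q (X n - y) \<ge> 0" by (rule Hs.Q_nonneg) simp
      moreover have "D0.F.Q (X n - y) \<ge> 0" using D0.F.Q_nonneg dv T0_def by auto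
      moreover have "kf T0 * Hs.Q (X n - y) < r / 2" using N2[of n] n by simp
      ultimately show ?thesis using D0Q[of "X n - y"] by simp
    qed
    then show "\<exists>N. \<forall>n\<ge>N. norm (D0.F.Q (X n - y) - 0) < r" by blast
  qed
  then show ?thesis unfolding D0.F.conv_def using XD yD T0_def by auto
qed

end

context sop begin

lemma EQ_le_D0: assumes v: "v \<in> fst A" shows "E.Q v \<le> D0.F.Q v"
proof -
  have vD: "v \<in> Dom" using v A_sub_Dom by auto
  have "D0.F.Q v = Re (ip (snd A v) v) + kf T0 * Hs.Q v" using D0Q tv_E[OF v vD] by simp
  moreover have "Hs.Q v \<le> kf T0 * Hs.Q v" using D0.k1 Hs.Q_nonneg[of v] by (simp add: mult_le_cancel_right1)
  ultimately show ?thesis using EQ by simp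
qed

lemma T0_closed: "closed_pos_form sc ip T0"
  unfolding D0.closed_iff
proof (intro allI impI)
  fix Y assume cY: "D0.F.cauchy Y"
  have YD: "Y n \<in> Dom" for n using cY D0.F.cauchy_in T0_def by auto
  have "\<forall>n. \<exists>e. e \<in> fst A \<and> D0.F.Q (e - Y n) < 1 / (real n + 1)"
  proof
    fix n
    have ap: "approx (Y n) (sx (Y n))" using sx YD by auto
    have cv: "D0.F.conv (sx (Y n)) (Y n)" by (rule approx_conv[OF ap])
    have "(\<lambda>m. D0.F.Q (sx (Y n) m - Y n)) \<longlonglongrightarrow> 0" using cv unfolding D0.F.conv_def by simp
    then obtain M where M: "\<And>m. m \<ge> M \<Longrightarrow> \<bar>D0.F.Q (sx (Y n) m - Y n)\<bar> < 1 / (real n + 1)"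
      using LIMSEQ_0_D[of "\<lambda>m. D0.F.Q (sx (Y n) m - Y n)" "1 / (real n + 1)"] by auto
    show "\<exists>e. e \<in> fst A \<and> D0.F.Q (e - Y n) < 1 / (real n + 1)"
      using M[of M] approx_in[OF ap, of M] by auto
  qed
  then obtain e where e: "\<And>n. e n \<in> fst A" "\<And>n. D0.F.Q (e n - Y n) < 1 / (real n + 1)"
    using choice[of "\<lambda>n e. e \<in> fst A \<and> D0.F.Q (e - Y n) < 1 / (real n + 1)"] by blast
  have eD: "e n \<in> Dom" for n using e A_sub_Dom by auto
  have VD: "fst T0 = Dom" unfolding T0_def by simp
  have Vd: "a \<in> Dom \<Longrightarrow> b \<in> Dom \<Longrightarrow> a - b \<in> Dom" for a b using D0.F.Vdiff VD by auto
  have Va: "a \<in> Dom \<Longrightarrow> b \<in> Dom \<Longrightarrow> a + b \<in> Dom" for a b using D0.F.Vadd VD by auto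
  have Q3: "D0.F.Q (e m - e n) \<le> 2 / (real m + 1) + 4 * D0.F.Q (Y m - Y n) + 4 / (real n + 1)" for m n
  proof -
    have eq: "e m - e n = (e m - Y m) + ((Y m - Y n) + (Y n - e n))" by simp
    have "D0.F.Q (e m - e n) \<le> 2 * D0.F.Q (e m - Y m) + 2 * D0.F.Q ((Y m - Y n) + (Y n - e n))"
      unfolding eq by (rule D0.F.Q_add_le) (use Vd Va eD YD VD in auto)
    also have "D0.F.Q ((Y m - Y n) + (Y n - e n)) \<le> 2 * D0.F.Q (Y m - Y n) + 2 * D0.F.Q (Y n - e n)"
      by (rule D0.F.Q_add_le) (use Vd eD YD VD in auto)
    also have "D0.F.Q (Y n - e n) = D0.F.Q (e n - Y n)"
      using D0.F.Q_minus[of "e n - Y n"] Vd eD YD VD by simp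
    finally have "D0.F.Q (e m - e n) \<le> 2 * D0.F.Q (e m - Y m) + 4 * D0.F.Q (Y m - Y n) + 4 * D0.F.Q (e n - Y n)"
      by simp
    also have "\<dots> \<le> 2 / (real m + 1) + 4 * D0.F.Q (Y m - Y n) + 4 / (real n + 1)"
      using e(2)[of m] e(2)[of n] by simp
    finally show ?thesis .
  qed
  have ce: "E.cauchy e"
    unfolding E.cauchy_def
  proof (intro conjI allI impI)
    show "e n \<in> fst A" for n by (rule e)
    fix r :: real assume r: "r > 0"
    obtain N1 where N1: "\<And>m n. m \<ge> N1 \<Longrightarrow> n \<ge> N1 \<Longrightarrow> D0.F.Q (Y m - Y n) < r / 16"
      using D0.F.cauchy_D[OF cY, of "r/16"] r by auto
    obtain N2 where N2: "\<And>n. n \<ge> N2 \<Longrightarrow> 1 / (real n + 1) < r / 16 \<or> (1::real) \<le> 0"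
      using arch_small[of "r/16" 1] r by auto
    have "E.Q (e m - e n) < r" if "m \<ge> max N1 N2" "n \<ge> max N1 N2" for m n
    proof -
      have em: "e m - e n \<in> fst A" using e E.Vdiff by auto
      have "E.Q (e m - e n) \<le> D0.F.Q (e m - e n)" by (rule EQ_le_D0[OF em])
      also have "\<dots> \<le> 2 / (real m + 1) + 4 * D0.F.Q (Y m - Y n) + 4 / (real n + 1)" by (rule Q3)
      also have "\<dots> < r"
      proof -
        have a: "1 / (real m + 1) < r / 16" using N2[of m] that by auto
        have b: "1 / (real n + 1) < r / 16" using N2[of n] that by auto
        have c: "D0.F.Q (Y m - Y n) < r / 16" using N1[of m n] that by auto
        have "2 / (real m + 1) = 2 * (1 / (real m + 1))" "4 / (real n + 1) = 4 * (1 / (real n + 1))" by simp_all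
        then show ?thesis using a b c r by linarith
      qed
      finally show ?thesis .
    qed
    then show "\<exists>N. \<forall>m\<ge>N. \<forall>n\<ge>N. E.Q (e m - e n) < r" by blast
  qed
  obtain l where l: "Hs.conv e l" using Hs.complete[OF E_cauchy_H[OF ce]] by blast
  have ap: "approx l e" unfolding approx_def using ce l by simp
  have cl: "D0.F.conv e l" by (rule approx_conv[OF ap])
  have lD: "l \<in> Dom" using ap unfolding Dom_def by auto
  have le: "D0.F.Q (Y n - l) \<le> 2 / (real n + 1) + 2 * D0.F.Q (e n - l)" for n
  proof -
    have eq: "Y n - l = (Y n - e n) + (e n - l)" by simp
    have "D0.F.Q (Y n - l) \<le> 2 * D0.F.Q (Y n - e n) + 2 * D0.F.Q (e n - l)"
      unfolding eq by (rule D0.F.Q_add_le) (use Vd eD YD lD VD in auto)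
    also have "D0.F.Q (Y n - e n) = D0.F.Q (e n - Y n)"
      using D0.F.Q_minus[of "e n - Y n"] Vd eD YD VD by simp
    finally show ?thesis using e(2)[of n] by simp
  qed
  have "(\<lambda>n. 2 * (1 / (real n + 1)) + 2 * D0.F.Q (e n - l)) \<longlonglongrightarrow> 2 * 0 + 2 * 0"
    using cl unfolding D0.F.conv_def by (intro tendsto_intros inv_Suc_lim) auto
  then have g: "(\<lambda>n. 2 / (real n + 1) + 2 * D0.F.Q (e n - l)) \<longlonglongrightarrow> 0" by simp
  have "(\<lambda>n. D0.F.Q (Y n - l)) \<longlonglongrightarrow> 0"
    by (rule sandwich0[OF _ le g]) (use D0.F.Q_nonneg Vd YD lD VD in auto)
  then show "\<exists>l. D0.F.conv Y l" unfolding D0.F.conv_def using YD lD VD by auto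
qed

end

sublocale sop \<subseteq> C0: cform sc ip T0
  by unfold_locales (rule T0_closed)

context sop begin

lemma T0_assoc: "assoc_op sc ip T0 = A"
proof -
  have "assoc_prop sc ip T0 A"
    unfolding assoc_prop_def T0_def fst_conv snd_conv
    using psa A_sub_Dom tv_E by auto
  then show ?thesis using D0.assoc_uniq[OF C0.assoc_op_prop] by simp
qed

end

context hsp begin

lemma form_surj: assumes "pos_sa_op sc ip A"
  shows "\<exists>T. closed_pos_form sc ip T \<and> assoc_op sc ip T = A"
proof -
  interpret sop sc ip A by unfold_locales (rule assms)
  show ?thesis using T0_closed T0_assoc by blast
qed

end

context cform begin

lemma t00: "snd T 0 0 = 0"
proof -
  have "snd T (sc 0 0) 0 = 0 * snd T 0 0" by (rule dd_D(3)[OF dd]) (use F.V0 in auto)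
  then show ?thesis by simp
qed

lemma bnd_Q: assumes b: "bounded_form ip T" shows "\<exists>C\<ge>0. \<forall>v\<in>fst T. Re (snd T v v) \<le> C * Hs.Q v"
proof -
  obtain C where C: "\<And>x. x \<in> fst T \<Longrightarrow> nrm ip x = 1 \<Longrightarrow> Re (snd T x x) \<le> C"
    using b unfolding bounded_form_def by blast
  define C0 where "C0 = max C 0"
  have "Re (snd T v v) \<le> C0 * Hs.Q v" if v: "v \<in> fst T" for v
  proof (cases "v = 0")
    case True then show ?thesis using t00 by simp
  next
    case False
    have qv: "Hs.Q v > 0" using Hs.Q_eq0[of v] Hs.Q_nonneg[of v] False by auto
    define r where "r = sqrt (Hs.Q v)"
    have r0: "r > 0" using qv r_def by simp
    define u where "u = sc (complex_of_real (1 / r)) v"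
    have uD: "u \<in> fst T" using u_def v F.Vsc by auto
    have "Hs.Q u = (1 / r)^2 * Hs.Q v" unfolding u_def using Hs.Q_sc[of v] by (simp add: norm_divide r0 abs_of_pos)
    also have "\<dots> = 1" unfolding r_def using qv by (simp add: power_divide)
    finally have nu: "nrm ip u = 1" using nrm_Q by simp
    define c where "c = complex_of_real (1 / r)"
    have e1: "snd T (sc c v) (sc c v) = c * snd T v (sc c v)" by (rule dd_D(3)[OF dd]) (use v F.Vsc in auto)
    have e2: "snd T v (sc c v) = cnj c * snd T v v" by (rule dd_D(5)[OF dd]) (use v in auto)
    have tu: "snd T u u = complex_of_real (1 / r) * (cnj (complex_of_real (1 / r)) * snd T v v)"
      unfolding u_def using e1 e2 c_def by simp
    have "Re (snd T u u) = (1 / r)^2 * Re (snd T v v)" using tu by (simp add: power2_eq_square)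
    then have "(1 / r)^2 * Re (snd T v v) \<le> C" using C[OF uD nu] by simp
    then have "Re (snd T v v) \<le> C * r^2" using r0 by (simp add: field_simps power2_eq_square)
    also have "\<dots> = C * Hs.Q v" unfolding r_def using Hs.Q_nonneg[of v] by simp
    also have "\<dots> \<le> C0 * Hs.Q v" unfolding C0_def using Hs.Q_nonneg[of v] by (simp add: mult_right_mono)
    finally show ?thesis .
  qed
  moreover have "C0 \<ge> 0" unfolding C0_def by simp
  ultimately show ?thesis by blast
qed

lemma bnd_FQ: assumes b: "bounded_form ip T" shows "\<exists>c>0. \<forall>v\<in>fst T. F.Q v \<le> c * Hs.Q v"
proof -
  obtain C where C: "C \<ge> 0" "\<And>v. v \<in> fst T \<Longrightarrow> Re (snd T v v) \<le> C * Hs.Q v" using bnd_Q[OF b] by blast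
  have "F.Q v \<le> (C + kf T) * Hs.Q v" if "v \<in> fst T" for v
    using FQ[of v] C(2)[OF that] by (simp add: algebra_simps)
  moreover have "C + kf T > 0" using C k1 by simp
  ultimately show ?thesis by blast
qed

lemma bnd_univ: assumes b: "bounded_form ip T" shows "fst T = UNIV"
proof -
  obtain c where c: "c > 0" "\<And>v. v \<in> fst T \<Longrightarrow> F.Q v \<le> c * Hs.Q v" using bnd_FQ[OF b] by blast
  have "y \<in> fst T" for y
  proof -
    obtain Y where Y: "\<And>n. Y n \<in> fst T" "Hs.conv Y y" using dense_seq[OF dd_D(1)[OF dd]] by blast
    have hc: "Hs.cauchy Y" using Hs.conv_cauchy[OF Y(2)] .
    have "F.cauchy Y" unfolding F.cauchy_def
    proof (intro conjI allI impI)
      show "Y n \<in> fst T" for n by (rule Y(1))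
      fix e :: real assume e: "e > 0"
      obtain N where N: "\<And>m n. m \<ge> N \<Longrightarrow> n \<ge> N \<Longrightarrow> Hs.Q (Y m - Y n) < e / c"
        using Hs.cauchy_D[OF hc, of "e / c"] e c by auto
      have "F.Q (Y m - Y n) < e" if "m \<ge> N" "n \<ge> N" for m n
      proof -
        have "F.Q (Y m - Y n) \<le> c * Hs.Q (Y m - Y n)" using c(2) F.Vdiff Y(1) by auto
        also have "\<dots> < c * (e / c)" by (rule mult_strict_left_mono[OF N[OF that] c(1)])
        also have "\<dots> = e" using c by simp
        finally show ?thesis .
      qed
      then show "\<exists>N. \<forall>m\<ge>N. \<forall>n\<ge>N. F.Q (Y m - Y n) < e" by blast
    qed
    then obtain l where l: "F.conv Y l" using F.complete by blast
    have "l = y" using Hs.conv_unique[OF conv_H[OF l] Y(2)] .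
    then show ?thesis using l F.conv_in by auto
  qed
  then show ?thesis by auto
qed

lemma bnd_conv: assumes b: "bounded_form ip T" and h: "Hs.conv X l" shows "F.conv X l"
proof -
  obtain c where c: "c > 0" "\<And>v. v \<in> fst T \<Longrightarrow> F.Q v \<le> c * Hs.Q v" using bnd_FQ[OF b] by blast
  have U: "fst T = UNIV" by (rule bnd_univ[OF b])
  have "(\<lambda>n. c * Hs.Q (X n - l)) \<longlonglongrightarrow> c * 0" using h unfolding Hs.conv_def by (intro tendsto_intros) auto
  then have g: "(\<lambda>n. c * Hs.Q (X n - l)) \<longlonglongrightarrow> 0" by simp
  have "(\<lambda>n. F.Q (X n - l)) \<longlonglongrightarrow> 0"
    by (rule sandwich0[OF _ _ g]) (use c U F.Q_nonneg in auto)
  then show ?thesis unfolding F.conv_def using U by auto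
qed

end

locale pair = hsp +
  fixes T S
  assumes cT: "closed_pos_form sc ip T" and cS: "closed_pos_form sc ip S"
    and dsum: "dense_subspace sc ip (fst T \<inter> fst S)"

sublocale pair \<subseteq> A: cform sc ip T
proof unfold_locales
  show "dd_form sc ip T" using cT unfolding closed_pos_form_def by auto
  show "positive_form T" using cT unfolding closed_pos_form_def by auto
  show "closed_pos_form sc ip T" by (rule cT)
qed

sublocale pair \<subseteq> B: cform sc ip S
proof unfold_locales
  show "dd_form sc ip S" using cS unfolding closed_pos_form_def by auto
  show "positive_form S" using cS unfolding closed_pos_form_def by auto
  show "closed_pos_form sc ip S" by (rule cS)
qed

context pair begin

lemma fs_fst: "fst (form_sum T S) = fst T \<inter> fst S" unfolding form_sum_def by simp
lemma fs_snd: "x \<in> fst T \<inter> fst S \<Longrightarrow> y \<in> fst T \<inter> fst S \<Longrightarrow> snd (form_sum T S) x y = snd T x y + snd S x y"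
  unfolding form_sum_def by simp

lemma sum_dd: "dd_form sc ip (form_sum T S)"
proof -
  note dT = dd_D[OF A.dd] and dS = dd_D[OF B.dd]
  note s = ds_D[OF dsum]
  show ?thesis unfolding dd_form_def form_sum_def case_prod_conv fst_conv snd_conv
  proof (intro conjI ballI allI impI)
    show "dense_subspace sc ip (fst T \<inter> fst S)" by (rule dsum)
    fix x y z a
    show "(if x + y \<in> fst T \<inter> fst S \<and> z \<in> fst T \<inter> fst S then snd T (x + y) z + snd S (x + y) z else 0) =
      (if x \<in> fst T \<inter> fst S \<and> z \<in> fst T \<inter> fst S then snd T x z + snd S x z else 0) +
      (if y \<in> fst T \<inter> fst S \<and> z \<in> fst T \<inter> fst S then snd T y z + snd S y z else 0)"
      if "x \<in> fst T \<inter> fst S" "y \<in> fst T \<inter> fst S" "z \<in> fst T \<inter> fst S"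
      using that s dT(2) dS(2) by (simp add: algebra_simps)
    show "(if sc a x \<in> fst T \<inter> fst S \<and> y \<in> fst T \<inter> fst S then snd T (sc a x) y + snd S (sc a x) y else 0) =
      a * (if x \<in> fst T \<inter> fst S \<and> y \<in> fst T \<inter> fst S then snd T x y + snd S x y else 0)"
      if "x \<in> fst T \<inter> fst S" "y \<in> fst T \<inter> fst S"
      using that s dT(3) dS(3) by (simp add: algebra_simps)
    show "(if x \<in> fst T \<inter> fst S \<and> y + z \<in> fst T \<inter> fst S then snd T x (y + z) + snd S x (y + z) else 0) =
      (if x \<in> fst T \<inter> fst S \<and> y \<in> fst T \<inter> fst S then snd T x y + snd S x y else 0) +
      (if x \<in> fst T \<inter> fst S \<and> z \<in> fst T \<inter> fst S then snd T x z + snd S x z else 0)"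
      if "x \<in> fst T \<inter> fst S" "y \<in> fst T \<inter> fst S" "z \<in> fst T \<inter> fst S"
      using that s dT(4) dS(4) by (simp add: algebra_simps)
    show "(if x \<in> fst T \<inter> fst S \<and> sc a y \<in> fst T \<inter> fst S then snd T x (sc a y) + snd S x (sc a y) else 0) =
      cnj a * (if x \<in> fst T \<inter> fst S \<and> y \<in> fst T \<inter> fst S then snd T x y + snd S x y else 0)"
      if "x \<in> fst T \<inter> fst S" "y \<in> fst T \<inter> fst S"
      using that s dT(5) dS(5) by (simp add: algebra_simps)
    show "(if x \<in> fst T \<inter> fst S \<and> y \<in> fst T \<inter> fst S then snd T x y + snd S x y else 0) = 0"
      if "x \<notin> fst T \<inter> fst S \<or> y \<notin> fst T \<inter> fst S" using that by auto
  qed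
qed

lemma sum_pos: "positive_form (form_sum T S)"
  unfolding positive_form_def using fs_fst fs_snd A.pos B.pos unfolding positive_form_def by auto

end

sublocale pair \<subseteq> U: dform sc ip "form_sum T S"
  by unfold_locales (rule sum_dd, rule sum_pos)

context pair begin

lemma UQ: "v \<in> fst T \<inter> fst S \<Longrightarrow> U.F.Q v = Re (snd T v v) + Re (snd S v v) + kf (form_sum T S) * Hs.Q v"
  using U.FQ fs_snd by simp

lemma AQ_le: assumes v: "v \<in> fst T \<inter> fst S" shows "A.F.Q v \<le> kf T * U.F.Q v"
proof -
  have t: "Re (snd T v v) \<ge> 0" "Re (snd S v v) \<ge> 0" using A.tpos B.tpos v by auto
  have h: "Hs.Q v \<ge> 0" by (rule Hs.Q_nonneg) simp
  have k: "kf T \<ge> 1" "kf (form_sum T S) \<ge> 1" using A.k1 U.k1 by auto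
  have "A.F.Q v = Re (snd T v v) + kf T * Hs.Q v" using A.FQ .
  also have "\<dots> \<le> kf T * (Re (snd T v v) + Re (snd S v v)) + kf T * (kf (form_sum T S) * Hs.Q v)"
  proof (rule add_mono)
    show "Re (snd T v v) \<le> kf T * (Re (snd T v v) + Re (snd S v v))"
      using t k by (simp add: mult_le_cancel_right1 order_trans[OF _ mult_right_mono[of 1 "kf T"]])
    show "kf T * Hs.Q v \<le> kf T * (kf (form_sum T S) * Hs.Q v)"
      using k h by (intro mult_left_mono) (auto simp: mult_le_cancel_right1)
  qed
  also have "\<dots> = kf T * U.F.Q v" using UQ[OF v] by (simp add: algebra_simps)
  finally show ?thesis .
qed

lemma BQ_le: assumes v: "v \<in> fst T \<inter> fst S" shows "B.F.Q v \<le> kf S * U.F.Q v"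
proof -
  have t: "Re (snd T v v) \<ge> 0" "Re (snd S v v) \<ge> 0" using A.tpos B.tpos v by auto
  have h: "Hs.Q v \<ge> 0" by (rule Hs.Q_nonneg) simp
  have k: "kf S \<ge> 1" "kf (form_sum T S) \<ge> 1" using B.k1 U.k1 by auto
  have "B.F.Q v = Re (snd S v v) + kf S * Hs.Q v" using B.FQ .
  also have "\<dots> \<le> kf S * (Re (snd T v v) + Re (snd S v v)) + kf S * (kf (form_sum T S) * Hs.Q v)"
  proof (rule add_mono)
    show "Re (snd S v v) \<le> kf S * (Re (snd T v v) + Re (snd S v v))"
      using t k by (simp add: mult_le_cancel_right1 order_trans[OF _ mult_right_mono[of 1 "kf S"]])
    show "kf S * Hs.Q v \<le> kf S * (kf (form_sum T S) * Hs.Q v)"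
      using k h by (intro mult_left_mono) (auto simp: mult_le_cancel_right1)
  qed
  also have "\<dots> = kf S * U.F.Q v" using UQ[OF v] by (simp add: algebra_simps)
  finally show ?thesis .
qed

lemma UQ_le: assumes v: "v \<in> fst T \<inter> fst S" shows "U.F.Q v \<le> kf (form_sum T S) * (A.F.Q v + B.F.Q v)"
proof -
  have t: "Re (snd T v v) \<ge> 0" "Re (snd S v v) \<ge> 0" using A.tpos B.tpos v by auto
  have h: "Hs.Q v \<ge> 0" by (rule Hs.Q_nonneg) simp
  have k: "kf T \<ge> 1" "kf S \<ge> 1" "kf (form_sum T S) \<ge> 1" using A.k1 B.k1 U.k1 by auto
  have "U.F.Q v = Re (snd T v v) + Re (snd S v v) + kf (form_sum T S) * Hs.Q v" using UQ[OF v] .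
  also have "\<dots> \<le> kf (form_sum T S) * (Re (snd T v v) + Re (snd S v v)) + kf (form_sum T S) * (kf T * Hs.Q v)"
  proof (rule add_mono)
    show "Re (snd T v v) + Re (snd S v v) \<le> kf (form_sum T S) * (Re (snd T v v) + Re (snd S v v))"
      using t k by (simp add: mult_le_cancel_right1)
    show "kf (form_sum T S) * Hs.Q v \<le> kf (form_sum T S) * (kf T * Hs.Q v)"
      using k h by (intro mult_left_mono) (auto simp: mult_le_cancel_right1)
  qed
  also have "\<dots> \<le> kf (form_sum T S) * (A.F.Q v + B.F.Q v)"
  proof -
    have le0: "Re (snd T v v) + Re (snd S v v) + kf T * Hs.Q v \<le> A.F.Q v + B.F.Q v"
      using A.FQ[of v] B.FQ[of v] k h by (simp add: mult_nonneg_nonneg)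
    have "kf (form_sum T S) * (Re (snd T v v) + Re (snd S v v) + kf T * Hs.Q v) \<le> kf (form_sum T S) * (A.F.Q v + B.F.Q v)"
      using le0 k by (intro mult_left_mono) auto
    then show ?thesis by (simp add: algebra_simps)
  qed
  finally show ?thesis .
qed

end

context pair begin

lemma sum_closed: "closed_pos_form sc ip (form_sum T S)"
  unfolding U.closed_iff
proof (intro allI impI)
  fix X assume cX: "U.F.cauchy X"
  have XI: "X n \<in> fst T \<inter> fst S" for n using cX U.F.cauchy_in fs_fst by auto
  have dI: "X m - X n \<in> fst T \<inter> fst S" for m n using U.F.Vdiff cX U.F.cauchy_in fs_fst by auto
  have kA: "kf T > 0" using A.k1 by simp
  have kB: "kf S > 0" using B.k1 by simp
  have cA: "A.F.cauchy X" unfolding A.F.cauchy_def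
  proof (intro conjI allI impI)
    show "X n \<in> fst T" for n using XI by auto
    fix e :: real assume e: "e > 0"
    obtain N where N: "\<And>m n. m \<ge> N \<Longrightarrow> n \<ge> N \<Longrightarrow> U.F.Q (X m - X n) < e / kf T"
      using U.F.cauchy_D[OF cX, of "e / kf T"] e kA by auto
    have "A.F.Q (X m - X n) < e" if "m \<ge> N" "n \<ge> N" for m n
    proof -
      have "A.F.Q (X m - X n) \<le> kf T * U.F.Q (X m - X n)" by (rule AQ_le[OF dI])
      also have "\<dots> < kf T * (e / kf T)" by (rule mult_strict_left_mono[OF N[OF that] kA])
      finally show ?thesis using kA by simp
    qed
    then show "\<exists>N. \<forall>m\<ge>N. \<forall>n\<ge>N. A.F.Q (X m - X n) < e" by blast
  qed
  have cB: "B.F.cauchy X" unfolding B.F.cauchy_def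
  proof (intro conjI allI impI)
    show "X n \<in> fst S" for n using XI by auto
    fix e :: real assume e: "e > 0"
    obtain N where N: "\<And>m n. m \<ge> N \<Longrightarrow> n \<ge> N \<Longrightarrow> U.F.Q (X m - X n) < e / kf S"
      using U.F.cauchy_D[OF cX, of "e / kf S"] e kB by auto
    have "B.F.Q (X m - X n) < e" if "m \<ge> N" "n \<ge> N" for m n
    proof -
      have "B.F.Q (X m - X n) \<le> kf S * U.F.Q (X m - X n)" by (rule BQ_le[OF dI])
      also have "\<dots> < kf S * (e / kf S)" by (rule mult_strict_left_mono[OF N[OF that] kB])
      finally show ?thesis using kB by simp
    qed
    then show "\<exists>N. \<forall>m\<ge>N. \<forall>n\<ge>N. B.F.Q (X m - X n) < e" by blast
  qed
  obtain l1 where l1: "A.F.conv X l1" using A.F.complete[OF cA] by blast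
  obtain l2 where l2: "B.F.conv X l2" using B.F.complete[OF cB] by blast
  have "l1 = l2" using Hs.conv_unique[OF A.conv_H[OF l1] B.conv_H[OF l2]] .
  then have lI: "l1 \<in> fst T \<inter> fst S" using l1 l2 A.F.conv_in B.F.conv_in by auto
  have dl: "X n - l1 \<in> fst T \<inter> fst S" for n using U.F.Vdiff XI lI fs_fst by auto
  have "(\<lambda>n. kf (form_sum T S) * (A.F.Q (X n - l1) + B.F.Q (X n - l1))) \<longlonglongrightarrow> kf (form_sum T S) * (0 + 0)"
    using l1 l2 \<open>l1 = l2\<close> unfolding A.F.conv_def B.F.conv_def by (intro tendsto_intros) auto
  then have g: "(\<lambda>n. kf (form_sum T S) * (A.F.Q (X n - l1) + B.F.Q (X n - l1))) \<longlonglongrightarrow> 0" by simp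
  have "(\<lambda>n. U.F.Q (X n - l1)) \<longlonglongrightarrow> 0"
    by (rule sandwich0[OF _ _ g]) (use UQ_le dl U.F.Q_nonneg fs_fst in auto)
  then show "\<exists>l. U.F.conv X l" unfolding U.F.conv_def using XI lI fs_fst by auto
qed

end

context hsp begin

lemma cform_of: "closed_pos_form sc ip T \<Longrightarrow> cform sc ip T"
  by unfold_locales (auto simp: closed_pos_form_def)

lemma ao_psa: "closed_pos_form sc ip T \<Longrightarrow> pos_sa_op sc ip (assoc_op sc ip T)"
proof -
  assume c: "closed_pos_form sc ip T"
  interpret C: cform sc ip T by (rule cform_of[OF c])
  show ?thesis using C.assoc_op_prop unfolding assoc_prop_def by simp
qed

lemma fo_props: assumes "pos_sa_op sc ip A"
  shows "closed_pos_form sc ip (form_of sc ip A) \<and> assoc_op sc ip (form_of sc ip A) = A"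
proof -
  have "\<exists>!T. closed_pos_form sc ip T \<and> assoc_op sc ip T = A"
    using form_surj[OF assms] form_inj by blast
  then show ?thesis unfolding form_of_def by (rule theI')
qed

lemma fo_ao: assumes "closed_pos_form sc ip T" shows "form_of sc ip (assoc_op sc ip T) = T"
  unfolding form_of_def using assms form_inj by (intro the_equality) auto

lemma bnd_univ': "closed_pos_form sc ip T \<Longrightarrow> bounded_form ip T \<Longrightarrow> fst T = UNIV"
proof -
  assume c: "closed_pos_form sc ip T" and b: "bounded_form ip T"
  interpret C: cform sc ip T by (rule cform_of[OF c])
  show ?thesis by (rule C.bnd_univ[OF b])
qed

lemma def_dense: assumes cT: "closed_pos_form sc ip T" and cS: "closed_pos_form sc ip S"
  and d: "form_oplus_defined ip T S" shows "dense_subspace sc ip (fst T \<inter> fst S)"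
proof -
  have dT: "dense_subspace sc ip (fst T)" and dS: "dense_subspace sc ip (fst S)"
    using cT cS unfolding closed_pos_form_def dd_form_def by (auto simp: case_prod_beta)
  show ?thesis using d bnd_univ'[OF cT] bnd_univ'[OF cS] dT dS unfolding form_oplus_defined_def by auto
qed

lemma sum_closed': assumes cT: "closed_pos_form sc ip T" and cS: "closed_pos_form sc ip S"
  and d: "form_oplus_defined ip T S" shows "closed_pos_form sc ip (form_sum T S)"
proof -
  interpret pair sc ip T S by unfold_locales (rule cT, rule cS, rule def_dense[OF cT cS d])
  show ?thesis by (rule sum_closed)
qed

end

lemma fsum_comm: "form_sum T S = form_sum S T"
  unfolding form_sum_def by (auto simp: fun_eq_iff algebra_simps)

lemma fsum_assoc: "form_sum (form_sum T1 T2) T3 = form_sum T1 (form_sum T2 T3)"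
  unfolding form_sum_def by (auto simp: fun_eq_iff algebra_simps)

lemma def_comm: "form_oplus_defined ip T S = form_oplus_defined ip S T"
  unfolding form_oplus_defined_def by auto

lemma bnd_sum: "bounded_form ip T \<Longrightarrow> bounded_form ip S \<Longrightarrow> bounded_form ip (form_sum T S)"
proof -
  assume "bounded_form ip T" "bounded_form ip S"
  then obtain C1 C2 where C1: "\<And>x. x \<in> fst T \<Longrightarrow> nrm ip x = 1 \<Longrightarrow> Re (snd T x x) \<le> C1"
    and C2: "\<And>x. x \<in> fst S \<Longrightarrow> nrm ip x = 1 \<Longrightarrow> Re (snd S x x) \<le> C2"
    unfolding bounded_form_def by blast
  have "\<forall>x\<in>fst (form_sum T S). nrm ip x = 1 \<longrightarrow> Re (snd (form_sum T S) x x) \<le> C1 + C2"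
    unfolding form_sum_def using C1 C2 by (auto intro: add_mono)
  then show ?thesis unfolding bounded_form_def by blast
qed

lemma bnd_sub: assumes p: "positive_form S" and b: "bounded_form ip (form_sum T S)" and sub: "fst T \<subseteq> fst S"
  shows "bounded_form ip T"
proof -
  obtain C where C: "\<And>x. x \<in> fst (form_sum T S) \<Longrightarrow> nrm ip x = 1 \<Longrightarrow> Re (snd (form_sum T S) x x) \<le> C"
    using b unfolding bounded_form_def by blast
  have "Re (snd T x x) \<le> C" if "x \<in> fst T" "nrm ip x = 1" for x
  proof -
    have xi: "x \<in> fst T \<inter> fst S" using that sub by auto
    have "Re (snd (form_sum T S) x x) = Re (snd T x x) + Re (snd S x x)" unfolding form_sum_def using xi by simp
    moreover have "Re (snd S x x) \<ge> 0" using p xi unfolding positive_form_def by auto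
    ultimately show ?thesis using C[of x] xi that unfolding form_sum_def by auto
  qed
  then show ?thesis unfolding bounded_form_def by blast
qed

lemma bnd_transfer: assumes b: "bounded_form ip T" and sub: "fst S \<subseteq> fst T"
  and eq: "\<And>a. a \<in> fst S \<Longrightarrow> snd S a a = snd T a a" shows "bounded_form ip S"
  using b sub eq unfolding bounded_form_def by (metis subsetD)

context hsp begin

lemma def_assoc_dir:
  assumes c1: "closed_pos_form sc ip T1" and c2: "closed_pos_form sc ip T2" and c3: "closed_pos_form sc ip T3"
    and d12: "form_oplus_defined ip T1 T2" and d123: "form_oplus_defined ip (form_sum T1 T2) T3"
  shows "form_oplus_defined ip T2 T3 \<and> form_oplus_defined ip T1 (form_sum T2 T3)"
proof -
  have p1: "positive_form T1" and p2: "positive_form T2" using c1 c2 unfolding closed_pos_form_def by auto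
  have u1: "bounded_form ip T1 \<Longrightarrow> fst T1 = UNIV" using bnd_univ'[OF c1] by blast
  have u2: "bounded_form ip T2 \<Longrightarrow> fst T2 = UNIV" using bnd_univ'[OF c2] by blast
  have u3: "bounded_form ip T3 \<Longrightarrow> fst T3 = UNIV" using bnd_univ'[OF c3] by blast
  have f12: "fst (form_sum T1 T2) = fst T1 \<inter> fst T2" and f23: "fst (form_sum T2 T3) = fst T2 \<inter> fst T3"
    unfolding form_sum_def by auto
  have s1: "bounded_form ip (form_sum T1 T2) \<Longrightarrow> fst T1 \<subseteq> fst T2 \<Longrightarrow> bounded_form ip T1"
    using bnd_sub[OF p2] by blast
  have s2: "bounded_form ip (form_sum T1 T2) \<Longrightarrow> fst T2 \<subseteq> fst T1 \<Longrightarrow> bounded_form ip T2"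
    using bnd_sub[OF p1, where T=T2] fsum_comm[of T1 T2] by simp
  have b23: "bounded_form ip T2 \<Longrightarrow> bounded_form ip T3 \<Longrightarrow> bounded_form ip (form_sum T2 T3)"
    by (rule bnd_sum)
  have H1: "bounded_form ip T1 \<or> bounded_form ip T2 \<or> fst T1 = fst T2" using d12 unfolding form_oplus_defined_def .
  have H2: "bounded_form ip (form_sum T1 T2) \<or> bounded_form ip T3 \<or> fst T1 \<inter> fst T2 = fst T3"
    using d123 f12 unfolding form_oplus_defined_def by simp
  have G: "(bounded_form ip T2 \<or> bounded_form ip T3 \<or> fst T2 = fst T3) \<and>
      (bounded_form ip T1 \<or> bounded_form ip (form_sum T2 T3) \<or> fst T1 = fst T2 \<inter> fst T3)"
  proof (cases "bounded_form ip (form_sum T1 T2)")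
    case True
    consider (a) "bounded_form ip T1" | (b) "bounded_form ip T2" | (c) "fst T1 = fst T2" using H1 by blast
    then have bb: "bounded_form ip T1 \<and> bounded_form ip T2"
    proof cases
      case a
      then have "fst T2 \<subseteq> fst T1" using u1 by blast
      then show ?thesis using s2 True a by blast
    next
      case b
      then have "fst T1 \<subseteq> fst T2" using u2 by blast
      then show ?thesis using s1 True b by blast
    next
      case c
      then show ?thesis using s1 s2 True by blast
    qed
    then show ?thesis by blast
  next
    case nb: False
    show ?thesis
    proof (cases "bounded_form ip T3")
      case b3: True
      have f3: "fst T3 = UNIV" using u3 b3 by blast
      consider (a) "bounded_form ip T1" | (b) "bounded_form ip T2" | (c) "fst T1 = fst T2" using H1 by blast
      then show ?thesis
      proof cases
        case a then show ?thesis using b3 by blast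
      next
        case b then show ?thesis using b3 b23 by blast
      next
        case c then have "fst T1 = fst T2 \<inter> fst T3" using f3 by simp
        then show ?thesis using b3 by blast
      qed
    next
      case False
      then have e: "fst T1 \<inter> fst T2 = fst T3" using H2 nb by blast
      consider (a) "bounded_form ip T1" | (b) "bounded_form ip T2" | (c) "fst T1 = fst T2" using H1 by blast
      then show ?thesis
      proof cases
        case a
        then have "fst T1 = UNIV" using u1 by blast
        then have "fst T2 = fst T3" using e by simp
        then show ?thesis using a by blast
      next
        case b
        then have "fst T2 = UNIV" using u2 by blast
        then have "fst T1 = fst T2 \<inter> fst T3" using e by simp
        then show ?thesis using b by blast
      next
        case c
        then have "fst T2 = fst T3" "fst T1 = fst T2 \<inter> fst T3" using e by auto
        then show ?thesis by blast
      qed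
    qed
  qed
  then show ?thesis unfolding form_oplus_defined_def f23 by simp
qed

lemma def_assoc:
  assumes c1: "closed_pos_form sc ip T1" and c2: "closed_pos_form sc ip T2" and c3: "closed_pos_form sc ip T3"
  shows "(form_oplus_defined ip T1 T2 \<and> form_oplus_defined ip (form_sum T1 T2) T3) \<longleftrightarrow>
         (form_oplus_defined ip T2 T3 \<and> form_oplus_defined ip T1 (form_sum T2 T3))"
proof
  assume "form_oplus_defined ip T1 T2 \<and> form_oplus_defined ip (form_sum T1 T2) T3"
  then show "form_oplus_defined ip T2 T3 \<and> form_oplus_defined ip T1 (form_sum T2 T3)"
    using def_assoc_dir[OF c1 c2 c3] by blast
next
  assume a: "form_oplus_defined ip T2 T3 \<and> form_oplus_defined ip T1 (form_sum T2 T3)"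
  have "form_oplus_defined ip T3 T2 \<and> form_oplus_defined ip (form_sum T3 T2) T1"
    using a def_comm fsum_comm by metis
  then have "form_oplus_defined ip T2 T1 \<and> form_oplus_defined ip T3 (form_sum T2 T1)"
    using def_assoc_dir[OF c3 c2 c1] by blast
  then show "form_oplus_defined ip T1 T2 \<and> form_oplus_defined ip (form_sum T1 T2) T3"
    using def_comm fsum_comm by metis
qed

end

definition Zf :: "'h form" where "Zf = (UNIV, \<lambda>_ _. 0)"

lemma Z_bnd: "bounded_form ip Zf" unfolding bounded_form_def Zf_def by auto

lemma form_diag0: assumes dd: "dd_form sc ip T" and z: "\<And>z. z \<in> fst T \<Longrightarrow> snd T z z = 0"
  and hs: "hsp sc ip" and x: "x \<in> fst T" and y: "y \<in> fst T"
  shows "snd T x y = 0"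
proof -
  interpret hsp sc ip by (rule hs)
  let ?t = "snd T"
  note d = dd_D[OF dd]
  note s = ds_D[OF d(1)]
  have xy: "x + y \<in> fst T" using s x y by auto
  have iy: "sc \<i> y \<in> fst T" using s y by auto
  have xiy: "x + sc \<i> y \<in> fst T" using s x iy by auto
  have e1: "?t (x + y) (x + y) = ?t x x + ?t x y + ?t y x + ?t y y"
    using d(2)[OF x y xy] d(4)[OF x x y] d(4)[OF y x y] by simp
  have e2: "?t (x + sc \<i> y) (x + sc \<i> y) = ?t x x - \<i> * ?t x y + \<i> * ?t y x + ?t y y"
    using d(2)[OF x iy xiy] d(4)[OF x x iy] d(4)[OF iy x iy] d(5)[OF x y, of \<i>] d(3)[OF y x, of \<i>]
      d(3)[OF y iy, of \<i>] d(5)[OF y y, of \<i>] by (simp add: algebra_simps)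
  have a: "?t x y + ?t y x = 0" using e1 z[OF xy] z[OF x] z[OF y] by simp
  have b: "- \<i> * ?t x y + \<i> * ?t y x = 0" using e2 z[OF xiy] z[OF x] z[OF y] by simp
  have "?t y x = ?t x y"
  proof -
    have "\<i> * (?t y x - ?t x y) = 0" using b by (simp add: algebra_simps)
    then show ?thesis by simp
  qed
  then show ?thesis using a by simp
qed

context hsp begin

lemma ds_UNIV: "dense_subspace sc ip UNIV"
  unfolding dense_subspace_def
proof (intro conjI ballI allI impI)
  fix x and e :: real assume e: "e > 0"
  have "nrm ip (x - x) = 0" using nrm_Q Hs.Q_zero by simp
  then show "\<exists>y\<in>UNIV. nrm ip (x - y) < e" using e by (intro bexI[of _ x]) auto
qed auto

lemma zero_psa: "pos_sa_op sc ip zero_op"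
  unfolding pos_sa_op_def zero_op_def case_prod_conv
proof (intro conjI ballI allI impI)
  show "dense_subspace sc ip UNIV" by (rule ds_UNIV)
  show "{y. \<exists>z. \<forall>x\<in>UNIV. ip 0 y = ip x z} = UNIV" by (auto intro!: exI[of _ 0])
qed auto

lemma Z_closed: "closed_pos_form sc ip Zf"
proof -
  have dd: "dd_form sc ip Zf" unfolding dd_form_def Zf_def case_prod_conv
    using ds_UNIV by auto
  have pos: "positive_form Zf" unfolding positive_form_def Zf_def by simp
  interpret D: dform sc ip Zf by unfold_locales (rule dd, rule pos)
  show ?thesis unfolding D.closed_iff
  proof (intro allI impI)
    fix X assume c: "D.F.cauchy X"
    obtain l where l: "Hs.conv X l" using Hs.complete[OF D.cauchy_H[OF c]] by blast
    have "(\<lambda>n. kf Zf * Hs.Q (X n - l)) \<longlonglongrightarrow> kf Zf * 0" using l unfolding Hs.conv_def by (intro tendsto_intros) auto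
    moreover have "D.F.Q v = kf Zf * Hs.Q v" for v using D.FQ unfolding Zf_def by simp
    ultimately have lim: "(\<lambda>n. D.F.Q (X n - l)) \<longlonglongrightarrow> 0" by simp
    have "D.F.conv X l" unfolding D.F.conv_def using lim by (simp add: Zf_def)
    then show "\<exists>l. D.F.conv X l" by blast
  qed
qed

lemma Z_assoc: "assoc_op sc ip Zf = zero_op"
proof -
  interpret C: cform sc ip Zf by (rule cform_of[OF Z_closed])
  have "assoc_prop sc ip Zf zero_op" unfolding assoc_prop_def using zero_psa
    by (simp add: Zf_def zero_op_def Hs.q_zero_left)
  then show ?thesis using C.assoc_uniq[OF C.assoc_op_prop] by simp
qed

lemma fo_zero: "form_of sc ip zero_op = Zf"
  using fo_ao[OF Z_closed] Z_assoc by simp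

lemma fsum_Z: assumes c: "closed_pos_form sc ip T" shows "form_sum T Zf = T"
proof -
  have z: "\<And>x y. x \<notin> fst T \<or> y \<notin> fst T \<Longrightarrow> snd T x y = 0"
    using dd_D(6) c unfolding closed_pos_form_def by blast
  have "snd (form_sum T Zf) = snd T" unfolding form_sum_def Zf_def using z by (auto simp: fun_eq_iff)
  moreover have "fst (form_sum T Zf) = fst T" unfolding form_sum_def Zf_def by simp
  ultimately show ?thesis by (simp add: prod_eq_iff)
qed

lemma bnd_ext: assumes cT: "closed_pos_form sc ip T" and cS: "closed_pos_form sc ip S"
  and bT: "bounded_form ip T" and bS: "bounded_form ip S" and ds: "dense_subspace sc ip D1"
  and eq: "\<And>a b. a \<in> D1 \<Longrightarrow> b \<in> D1 \<Longrightarrow> snd T a b = snd S a b"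
  shows "T = S"
proof -
  interpret A: cform sc ip T by (rule cform_of[OF cT])
  interpret B: cform sc ip S by (rule cform_of[OF cS])
  have uT: "fst T = UNIV" and uS: "fst S = UNIV" using A.bnd_univ[OF bT] B.bnd_univ[OF bS] by auto
  have "snd T a b = snd S a b" for a b
  proof -
    obtain X where X: "\<And>n. X n \<in> D1" "Hs.conv X a" using dense_seq[OF ds] by blast
    obtain W where W: "\<And>n. W n \<in> D1" "Hs.conv W b" using dense_seq[OF ds] by blast
    have l1: "(\<lambda>n. snd T (X n) (W n)) \<longlonglongrightarrow> snd T a b"
      by (rule A.t_conv[OF A.bnd_conv[OF bT X(2)] A.bnd_conv[OF bT W(2)]])
    have l2: "(\<lambda>n. snd S (X n) (W n)) \<longlonglongrightarrow> snd S a b"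
      by (rule B.t_conv[OF B.bnd_conv[OF bS X(2)] B.bnd_conv[OF bS W(2)]])
    have "(\<lambda>n. snd T (X n) (W n)) = (\<lambda>n. snd S (X n) (W n))" using eq X(1) W(1) by auto
    then show ?thesis using l1 l2 LIMSEQ_unique by metis
  qed
  then have "snd T = snd S" by (intro ext)
  then show ?thesis using uT uS by (simp add: prod_eq_iff)
qed

end

context hsp begin

lemma closed_dd: "closed_pos_form sc ip T \<Longrightarrow> dd_form sc ip T" unfolding closed_pos_form_def by simp
lemma closed_pos: "closed_pos_form sc ip T \<Longrightarrow> positive_form T" unfolding closed_pos_form_def by simp

lemma cancel_forms:
  assumes c1: "closed_pos_form sc ip T1" and c2: "closed_pos_form sc ip T2" and c3: "closed_pos_form sc ip T3"
    and d12: "form_oplus_defined ip T1 T2" and d13: "form_oplus_defined ip T1 T3"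
    and eq: "form_sum T1 T2 = form_sum T1 T3"
  shows "T2 = T3"
proof -
  have E1: "fst T1 \<inter> fst T2 = fst T1 \<inter> fst T3" using arg_cong[OF eq, of fst] unfolding form_sum_def by simp
  have E2: "snd T2 a b = snd T3 a b" if ab: "a \<in> fst T1 \<inter> fst T2" "b \<in> fst T1 \<inter> fst T2" for a b
  proof -
    have "snd (form_sum T1 T2) a b = snd (form_sum T1 T3) a b" using eq by simp
    then show ?thesis unfolding form_sum_def using ab E1 by simp
  qed
  have z2: "\<And>a b. a \<notin> fst T2 \<or> b \<notin> fst T2 \<Longrightarrow> snd T2 a b = 0" using dd_D(6)[OF closed_dd[OF c2]] by blast
  have z3: "\<And>a b. a \<notin> fst T3 \<or> b \<notin> fst T3 \<Longrightarrow> snd T3 a b = 0" using dd_D(6)[OF closed_dd[OF c3]] by blast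
  have u1: "bounded_form ip T1 \<Longrightarrow> fst T1 = UNIV" using bnd_univ'[OF c1] by blast
  have u2: "bounded_form ip T2 \<Longrightarrow> fst T2 = UNIV" using bnd_univ'[OF c2] by blast
  have u3: "bounded_form ip T3 \<Longrightarrow> fst T3 = UNIV" using bnd_univ'[OF c3] by blast
  have fin: "T2 = T3" if f: "fst T2 = fst T3" "fst T2 \<subseteq> fst T1"
  proof -
    have "snd T2 a b = snd T3 a b" for a b
    proof (cases "a \<in> fst T2 \<and> b \<in> fst T2")
      case True then show ?thesis using E2 f by auto
    next
      case False then show ?thesis using z2 z3 f by auto
    qed
    then have "snd T2 = snd T3" by (intro ext)
    then show ?thesis using f by (simp add: prod_eq_iff)
  qed
  have bb: "T2 = T3" if b2: "bounded_form ip T2" and b3: "bounded_form ip T3"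
  proof (rule bnd_ext[OF c2 c3 b2 b3 dd_D(1)[OF closed_dd[OF c1]]])
    fix a b assume "a \<in> fst T1" "b \<in> fst T1"
    then show "snd T2 a b = snd T3 a b" using E2 u2[OF b2] by auto
  qed
  show ?thesis
  proof (cases "bounded_form ip T1")
    case True
    then have "fst T1 = UNIV" by (rule u1)
    then show ?thesis using E1 fin by auto
  next
    case nb1: False
    consider (a) "bounded_form ip T2" | (b) "fst T1 = fst T2" using d12 nb1 unfolding form_oplus_defined_def by blast
    then show ?thesis
    proof cases
      case a
      consider (a3) "bounded_form ip T3" | (b3) "fst T1 = fst T3" using d13 nb1 unfolding form_oplus_defined_def by blast
      then show ?thesis
      proof cases
        case a3 then show ?thesis using bb a by blast
      next
        case b3
        have U2: "fst T2 = UNIV" using u2 a by blast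
        have "bounded_form ip T3"
        proof (rule bnd_transfer[OF a])
          show "fst T3 \<subseteq> fst T2" using U2 by simp
          fix x assume "x \<in> fst T3"
          then have "x \<in> fst T1 \<inter> fst T2" using b3 U2 by simp
          then show "snd T3 x x = snd T2 x x" using E2 by simp
        qed
        then show ?thesis using bb a by blast
      qed
    next
      case b
      consider (a3) "bounded_form ip T3" | (b3) "fst T1 = fst T3" using d13 nb1 unfolding form_oplus_defined_def by blast
      then show ?thesis
      proof cases
        case a3
        have U3: "fst T3 = UNIV" using u3 a3 by blast
        have "bounded_form ip T2"
        proof (rule bnd_transfer[OF a3])
          show "fst T2 \<subseteq> fst T3" using U3 by simp
          fix x assume "x \<in> fst T2"
          then have "x \<in> fst T1 \<inter> fst T2" using b by simp
          then show "snd T2 x x = snd T3 x x" using E2 by simp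
        qed
        then show ?thesis using bb a3 by blast
      next
        case b3
        then show ?thesis using fin b by simp
      qed
    qed
  qed
qed

lemma zero_forms:
  assumes c1: "closed_pos_form sc ip T1" and c2: "closed_pos_form sc ip T2"
    and eq: "form_sum T1 T2 = Zf"
  shows "T1 = Zf \<and> T2 = Zf"
proof -
  have U: "fst T1 \<inter> fst T2 = UNIV" using arg_cong[OF eq, of fst] unfolding form_sum_def Zf_def by simp
  then have U1: "fst T1 = UNIV" and U2: "fst T2 = UNIV" by auto
  have s: "snd T1 a b + snd T2 a b = 0" for a b
  proof -
    have "snd (form_sum T1 T2) a b = snd Zf a b" using eq by simp
    then show ?thesis unfolding form_sum_def Zf_def using U by simp
  qed
  have p1: "Im (snd T1 a a) = 0 \<and> Re (snd T1 a a) \<ge> 0" for a using closed_pos[OF c1] U1 unfolding positive_form_def by auto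
  have p2: "Im (snd T2 a a) = 0 \<and> Re (snd T2 a a) \<ge> 0" for a using closed_pos[OF c2] U2 unfolding positive_form_def by auto
  have d1: "snd T1 a a = 0" for a
  proof -
    have "Re (snd T1 a a) + Re (snd T2 a a) = 0" using s[of a a] by (metis plus_complex.sel(1) zero_complex.sel(1))
    then have "Re (snd T1 a a) = 0" using p1[of a] p2[of a] by simp
    then show ?thesis using p1[of a] by (simp add: complex_eq_iff)
  qed
  have d2: "snd T2 a a = 0" for a using s[of a a] d1[of a] by simp
  have hs: "hsp sc ip" by unfold_locales
  have t1: "snd T1 a b = 0" for a b by (rule form_diag0[OF closed_dd[OF c1] d1 hs]) (use U1 in auto)
  have t2: "snd T2 a b = 0" for a b by (rule form_diag0[OF closed_dd[OF c2] d2 hs]) (use U2 in auto)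
  have "snd T1 = (\<lambda>_ _. 0)" "snd T2 = (\<lambda>_ _. 0)" using t1 t2 by (auto simp: fun_eq_iff)
  then show ?thesis using U1 U2 unfolding Zf_def by (simp add: prod_eq_iff)
qed

lemma fo_closed: "x \<in> SA sc ip \<Longrightarrow> closed_pos_form sc ip (form_of sc ip x)"
  unfolding SA_def using fo_props by blast
lemma fo_inv: "x \<in> SA sc ip \<Longrightarrow> assoc_op sc ip (form_of sc ip x) = x"
  unfolding SA_def using fo_props by blast

lemma opl_bind: assumes x: "x \<in> SA sc ip" and y: "y \<in> SA sc ip" and u: "u \<in> SA sc ip"
  shows "Option.bind (sa_oplus sc ip x y) (\<lambda>v. sa_oplus sc ip v u) =
    (if form_oplus_defined ip (form_of sc ip x) (form_of sc ip y) \<and>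
        form_oplus_defined ip (form_sum (form_of sc ip x) (form_of sc ip y)) (form_of sc ip u)
     then Some (assoc_op sc ip (form_sum (form_sum (form_of sc ip x) (form_of sc ip y)) (form_of sc ip u)))
     else None)"
proof (cases "form_oplus_defined ip (form_of sc ip x) (form_of sc ip y)")
  case True
  have c: "closed_pos_form sc ip (form_sum (form_of sc ip x) (form_of sc ip y))"
    by (rule sum_closed'[OF fo_closed[OF x] fo_closed[OF y] True])
  show ?thesis using True fo_ao[OF c] unfolding sa_oplus_def by simp
next
  case False
  then show ?thesis unfolding sa_oplus_def by simp
qed

lemma zero_case: assumes x: "x \<in> SA sc ip" and y: "y \<in> SA sc ip" and h: "sa_oplus sc ip x y = Some zero_op"
  shows "x = zero_op \<and> y = zero_op"
proof -
  let ?T1 = "form_of sc ip x" and ?T2 = "form_of sc ip y"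
  have d12: "form_oplus_defined ip ?T1 ?T2" using h unfolding sa_oplus_def by (auto split: if_splits)
  have e: "assoc_op sc ip (form_sum ?T1 ?T2) = assoc_op sc ip Zf"
    using h d12 Z_assoc unfolding sa_oplus_def by simp
  have "form_sum ?T1 ?T2 = Zf"
    by (rule form_inj[OF sum_closed'[OF fo_closed[OF x] fo_closed[OF y] d12] Z_closed e])
  then have "?T1 = Zf \<and> ?T2 = Zf" by (rule zero_forms[OF fo_closed[OF x] fo_closed[OF y]])
  then show ?thesis using fo_inv[OF x] fo_inv[OF y] Z_assoc by metis
qed

lemma main: "gen_effect_algebra (SA sc ip) (sa_oplus sc ip) zero_op"
  unfolding gen_effect_algebra_def
proof (intro conjI ballI allI impI)
  show "zero_op \<in> SA sc ip" unfolding SA_def using zero_psa by simp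
next
  fix x y w assume x: "x \<in> SA sc ip" and y: "y \<in> SA sc ip" and s: "sa_oplus sc ip x y = Some w"
  then have d: "form_oplus_defined ip (form_of sc ip x) (form_of sc ip y)"
    and w: "w = assoc_op sc ip (form_sum (form_of sc ip x) (form_of sc ip y))"
    unfolding sa_oplus_def by (auto split: if_splits)
  show "w \<in> SA sc ip" unfolding SA_def w
    using ao_psa[OF sum_closed'[OF fo_closed[OF x] fo_closed[OF y] d]] by simp
next
  fix x y assume "x \<in> SA sc ip" "y \<in> SA sc ip"
  show "sa_oplus sc ip x y = sa_oplus sc ip y x"
    unfolding sa_oplus_def using def_comm fsum_comm by metis
next
  fix x y u assume x: "x \<in> SA sc ip" and y: "y \<in> SA sc ip" and u: "u \<in> SA sc ip"
  have l: "Option.bind (sa_oplus sc ip x y) (\<lambda>v. sa_oplus sc ip v u) =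
    (if form_oplus_defined ip (form_of sc ip x) (form_of sc ip y) \<and>
        form_oplus_defined ip (form_sum (form_of sc ip x) (form_of sc ip y)) (form_of sc ip u)
     then Some (assoc_op sc ip (form_sum (form_sum (form_of sc ip x) (form_of sc ip y)) (form_of sc ip u)))
     else None)" by (rule opl_bind[OF x y u])
  have r0: "Option.bind (sa_oplus sc ip y u) (\<lambda>v. sa_oplus sc ip v x) =
    (if form_oplus_defined ip (form_of sc ip y) (form_of sc ip u) \<and>
        form_oplus_defined ip (form_sum (form_of sc ip y) (form_of sc ip u)) (form_of sc ip x)
     then Some (assoc_op sc ip (form_sum (form_sum (form_of sc ip y) (form_of sc ip u)) (form_of sc ip x)))
     else None)" by (rule opl_bind[OF y u x])
  have cm: "sa_oplus sc ip v x = sa_oplus sc ip x v" for v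
    unfolding sa_oplus_def using def_comm fsum_comm by metis
  have r: "Option.bind (sa_oplus sc ip y u) (\<lambda>v. sa_oplus sc ip x v) =
    (if form_oplus_defined ip (form_of sc ip y) (form_of sc ip u) \<and>
        form_oplus_defined ip (form_of sc ip x) (form_sum (form_of sc ip y) (form_of sc ip u))
     then Some (assoc_op sc ip (form_sum (form_of sc ip x) (form_sum (form_of sc ip y) (form_of sc ip u))))
     else None)"
  proof -
    have rr: "(\<lambda>v. sa_oplus sc ip x v) = (\<lambda>v. sa_oplus sc ip v x)" using cm by (intro ext) simp
    show ?thesis unfolding rr r0
      by (simp add: def_comm[of ip "form_sum (form_of sc ip y) (form_of sc ip u)" "form_of sc ip x"]
          fsum_comm[of "form_sum (form_of sc ip y) (form_of sc ip u)" "form_of sc ip x"])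
  qed
  have da: "(form_oplus_defined ip (form_of sc ip x) (form_of sc ip y) \<and>
        form_oplus_defined ip (form_sum (form_of sc ip x) (form_of sc ip y)) (form_of sc ip u)) =
      (form_oplus_defined ip (form_of sc ip y) (form_of sc ip u) \<and>
        form_oplus_defined ip (form_of sc ip x) (form_sum (form_of sc ip y) (form_of sc ip u)))"
    by (rule def_assoc[OF fo_closed[OF x] fo_closed[OF y] fo_closed[OF u]])
  show "Option.bind (sa_oplus sc ip x y) (\<lambda>v. sa_oplus sc ip v u) =
        Option.bind (sa_oplus sc ip y u) (\<lambda>v. sa_oplus sc ip x v)"
    unfolding l r da fsum_assoc by simp
next
  fix x assume x: "x \<in> SA sc ip"
  have d: "form_oplus_defined ip (form_of sc ip x) Zf" unfolding form_oplus_defined_def using Z_bnd[of ip] by blast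
  show "sa_oplus sc ip x zero_op = Some x"
    unfolding sa_oplus_def fo_zero using d fsum_Z[OF fo_closed[OF x]] fo_inv[OF x] by simp
next
  fix x y w assume x: "x \<in> SA sc ip" and y: "y \<in> SA sc ip" and w: "w \<in> SA sc ip"
    and h: "sa_oplus sc ip x y \<noteq> None \<and> sa_oplus sc ip x y = sa_oplus sc ip x w"
  let ?T1 = "form_of sc ip x" and ?T2 = "form_of sc ip y" and ?T3 = "form_of sc ip w"
  have d12: "form_oplus_defined ip ?T1 ?T2" using h unfolding sa_oplus_def by (auto split: if_splits)
  have d13: "form_oplus_defined ip ?T1 ?T3" using h d12 unfolding sa_oplus_def by (auto split: if_splits)
  have e: "assoc_op sc ip (form_sum ?T1 ?T2) = assoc_op sc ip (form_sum ?T1 ?T3)"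
    using h d12 d13 unfolding sa_oplus_def by simp
  have "form_sum ?T1 ?T2 = form_sum ?T1 ?T3"
    by (rule form_inj[OF sum_closed'[OF fo_closed[OF x] fo_closed[OF y] d12]
          sum_closed'[OF fo_closed[OF x] fo_closed[OF w] d13] e])
  then have "?T2 = ?T3" by (rule cancel_forms[OF fo_closed[OF x] fo_closed[OF y] fo_closed[OF w] d12 d13])
  then show "y = w" using fo_inv[OF y] fo_inv[OF w] by metis
next
  fix x y assume x: "x \<in> SA sc ip" and y: "y \<in> SA sc ip" and h: "sa_oplus sc ip x y = Some zero_op"
  show "x = zero_op" using zero_case[OF x y h] by simp
next
  fix x y assume x: "x \<in> SA sc ip" and y: "y \<in> SA sc ip" and h: "sa_oplus sc ip x y = Some zero_op"
  show "y = zero_op" using zero_case[OF x y h] by simp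
qed

end

theorem proposition4p17:
  fixes sc :: "complex \<Rightarrow> 'h::ab_group_add \<Rightarrow> 'h"
    and ip :: "'h \<Rightarrow> 'h \<Rightarrow> complex"
  assumes "complex_hilbert_space sc ip"
    and "infinite_dimensional sc"
  shows "gen_effect_algebra (SA sc ip) (sa_oplus sc ip) zero_op"
proof -
  have "\<exists>x. \<forall>c. x \<noteq> (\<Sum>v\<in>({}::'h set). sc (c v) v)"
    using assms(2) unfolding infinite_dimensional_def by blast
  then have nt: "\<exists>x::'h. x \<noteq> 0" by simp
  interpret hsp sc ip by unfold_locales (rule assms(1), rule nt)
  show ?thesis by (rule main)
qed

end
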